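(* Let $J$ be a non-infinitesimal interval of ${}^\bullet\mathbb{R}$ and let $f:J\to{}^\bullet\mathbb{R}$ be a smooth function such that $f'(x)=0$ for every $x\in\mathrm{int}(J)$. Then $f$ is constant on $J$.
   Context: Fermat reals: let $\mathbb{R}_o[t]$ be the set of maps $x:\mathbb{R}_{\ge0}\to\mathbb{R}$, $t\mapsto x_t$, of the form $x_t=r+\sum_{i=1}^k\alpha_i t^{a_i}+o(t)$ as $t\to0^+$, with $k\in\mathbb{N}$, $r,\alpha_i\in\mathbb{R}$, $a_i\in\mathbb{R}_{\ge0}$. Write $x\sim y$ iff $x_t=y_t+o(t)$ as $t\to0^+$. The ring of Fermat reals is ${}^\bullet\mathbb{R}:=\mathbb{R}_o[t]/\sim$ with pointwise operations; $\mathbb{R}\subseteq{}^\bullet\mathbb{R}$ via constants. The standard part of $x=[x_t]$ is ${}^\circ x:=x_0$ (componentwise on ${}^\bullet\mathbb{R}^n$). ${}^\bullet\mathbb{R}$ is totally ordered by: $x\le y$ iff for representatives there is $z\in\mathbb{R}_o[t]$ with $z\sim0$ and $x_t\le y_t+z_t$ for all small $t\ge0$. Let $\overline{{}^\bullet\mathbb{R}}:={}^\bullet\mathbb{R}\cup\{\pm\infty\}$, ${}^\circ(\pm\infty):=\pm\infty$. An interval is a set $[a,b],(a,b),[a,b),(a,b]$ of points of ${}^\bullet\mathbb{R}$ with $a\le b$ in $\overline{{}^\bullet\mathbb{R}}$; it is non-infinitesimal if ${}^\circ a<{}^\circ b$. The Fermat topology on ${}^\bullet\mathbb{R}^n$ has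 open sets ${}^\bullet V:=\{x:{}^\circ x\in V\}$, $V\subseteq\mathbb{R}^n$ open; $\mathrm{int}(J)=\{x:{}^\circ a<{}^\circ x<{}^\circ b\}$ is the interior in this topology. For $\alpha\in C^\infty(W,\mathbb{R}^m)$, $W\subseteq\mathbb{R}^d$ open, ${}^\bullet\alpha:{}^\bullet W\to{}^\bullet\mathbb{R}^m$, ${}^\bullet\alpha([x_t]):=[\alpha(x_t)]$. A map $f:S\to{}^\bullet\mathbb{R}^m$, $S\subseteq{}^\bullet\mathbb{R}^n$, is smooth (quasi-standard smooth) if for every $x\in S$ there exist open $V\subseteq\mathbb{R}^n$ with $x\in{}^\bullet V$, open $P\subseteq\mathbb{R}^{\mathsf p}$, $p\in{}^\bullet P$ and $\alpha\in C^\infty(P\times V,\mathbb{R}^m)$ with $f(y)={}^\bullet\alpha(p,y)$ for all $y\in{}^\bullet V\cap S$. For $f:J\to{}^\bullet\mathbb{R}$ smooth on a non-infinitesimal interval and $x\in J$, the derivative is $f'(x):={}^\bullet(\partial_2\alpha)(p,x)$ for any such local representation of $f$ around $x$ (this does not depend on the representation; equivalently $f'(x)=r(x,0)$ where $r$ is the unique smooth function with $f(x+h)=f(x)+h\,r(x,h)$ for all sufficiently small $h$ with $x+h\in J$). *)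

theory Defs
  imports "HOL-Analysis.Analysis"
begin

text \<open>t^a with the convention t^0 = 1 (also at t = 0).\<close>
definition tpow :: "real \<Rightarrow> real \<Rightarrow> real" where
  "tpow t a = (if a = 0 then 1 else t powr a)"

definition little_o_t :: "(real \<Rightarrow> real) \<Rightarrow> bool" where
  "little_o_t h \<longleftrightarrow> ((\<lambda>t. h t / t) \<longlongrightarrow> 0) (at_right 0)"

definition Rot :: "(real \<Rightarrow> real) set" where
  "Rot = {x. \<exists>(k::nat) (r::real) (\<alpha>::nat \<Rightarrow> real) (a::nat \<Rightarrow> real) (h::real \<Rightarrow> real).
              (\<forall>i<k. 0 \<le> a i) \<and> h 0 = 0 \<and> little_o_t h \<and>
              (\<forall>t\<ge>0. x t = r + (\<Sum>i<k. \<alpha> i * tpow t (a i)) + h t)}"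

definition fermat_rel :: "(real \<Rightarrow> real) \<Rightarrow> (real \<Rightarrow> real) \<Rightarrow> bool" where
  "fermat_rel x y \<longleftrightarrow> x \<in> Rot \<and> y \<in> Rot \<and> little_o_t (\<lambda>t. x t - y t)"

lemma zero_in_Rot: "(\<lambda>t. 0) \<in> Rot"
  unfolding Rot_def little_o_t_def
  by (rule CollectI, rule exI[of _ 0], rule exI[of _ 0], rule exI, rule exI, rule exI[of _ "\<lambda>t. 0"]) simp

lemma fermat_rel_part_equivp: "part_equivp fermat_rel"
proof (rule part_equivpI)
  show "\<exists>x. fermat_rel x x"
    using zero_in_Rot by (auto simp: fermat_rel_def little_o_t_def)
  show "symp fermat_rel"
  proof (rule sympI)
    fix x y assume "fermat_rel x y"
    then show "fermat_rel y x"
      unfolding fermat_rel_def little_o_t_def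
      using tendsto_minus[of "\<lambda>t. (x t - y t) / t" 0 "at_right 0"]
      by (auto simp: minus_divide_left)
  qed
  show "transp fermat_rel"
  proof (rule transpI)
    fix x y z assume "fermat_rel x y" "fermat_rel y z"
    then show "fermat_rel x z"
      unfolding fermat_rel_def little_o_t_def
      using tendsto_add[of "\<lambda>t. (x t - y t) / t" 0 "at_right 0" "\<lambda>t. (y t - z t) / t" 0]
      by (auto simp: add_divide_distrib[symmetric])
  qed
qed

quotient_type fermat = "real \<Rightarrow> real" / partial: fermat_rel
  by (rule fermat_rel_part_equivp)

definition fzero :: fermat where "fzero = abs_fermat (\<lambda>t. 0)"

definition fstd :: "fermat \<Rightarrow> real" where "fstd x = rep_fermat x 0"

definition fle :: "fermat \<Rightarrow> fermat \<Rightarrow> bool" where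
  "fle x y \<longleftrightarrow> (\<exists>z. fermat_rel z (\<lambda>t. 0) \<and>
      (\<exists>\<delta>>0. \<forall>t. 0 \<le> t \<and> t < \<delta> \<longrightarrow> rep_fermat x t \<le> rep_fermat y t + z t))"

definition flt :: "fermat \<Rightarrow> fermat \<Rightarrow> bool" where
  "flt x y \<longleftrightarrow> fle x y \<and> x \<noteq> y"

datatype fext = NInf | Fin fermat | PInf

fun fext_le :: "fext \<Rightarrow> fext \<Rightarrow> bool" where
  "fext_le NInf _ = True"
| "fext_le (Fin x) NInf = False"
| "fext_le (Fin x) (Fin y) = fle x y"
| "fext_le (Fin x) PInf = True"
| "fext_le PInf y = (y = PInf)"

definition fext_lt :: "fext \<Rightarrow> fext \<Rightarrow> bool" where
  "fext_lt a b \<longleftrightarrow> fext_le a b \<and> a \<noteq> b"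

fun fext_std :: "fext \<Rightarrow> ereal" where
  "fext_std NInf = -\<infinity>"
| "fext_std (Fin x) = ereal (fstd x)"
| "fext_std PInf = \<infinity>"

definition finterval :: "bool \<Rightarrow> fext \<Rightarrow> fext \<Rightarrow> bool \<Rightarrow> fermat set" where
  "finterval lc a b rc = {x. (if lc then fext_le a (Fin x) else fext_lt a (Fin x)) \<and>
                             (if rc then fext_le (Fin x) b else fext_lt (Fin x) b)}"

text \<open>Interior of the interval in the Fermat topology.\<close>
definition finterval_int :: "fext \<Rightarrow> fext \<Rightarrow> fermat set" where
  "finterval_int a b = {x. fext_std a < ereal (fstd x) \<and> ereal (fstd x) < fext_std b}"

text \<open>R^N is modelled as the functions nat \<Rightarrow> real vanishing from index N on.\<close>
definition RN :: "nat \<Rightarrow> (nat \<Rightarrow> real) set" where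
  "RN N = {q. \<forall>i\<ge>N. q i = 0}"

definition distN :: "nat \<Rightarrow> (nat \<Rightarrow> real) \<Rightarrow> (nat \<Rightarrow> real) \<Rightarrow> real" where
  "distN N q q' = sqrt (\<Sum>i<N. (q i - q' i)\<^sup>2)"

definition openN :: "nat \<Rightarrow> (nat \<Rightarrow> real) set \<Rightarrow> bool" where
  "openN N U \<longleftrightarrow> U \<subseteq> RN N \<and>
     (\<forall>q\<in>U. \<exists>e>0. \<forall>q'\<in>RN N. distN N q q' < e \<longrightarrow> q' \<in> U)"

definition continuousN :: "nat \<Rightarrow> (nat \<Rightarrow> real) set \<Rightarrow> ((nat \<Rightarrow> real) \<Rightarrow> real) \<Rightarrow> bool" where
  "continuousN N U g \<longleftrightarrow>
     (\<forall>q\<in>U. \<forall>e>0. \<exists>d>0. \<forall>q'\<in>U. distN N q q' < d \<longrightarrow> \<bar>g q' - g q\<bar> < e)"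

definition has_partial :: "nat \<Rightarrow> ((nat \<Rightarrow> real) \<Rightarrow> real) \<Rightarrow> (nat \<Rightarrow> real) \<Rightarrow> real \<Rightarrow> bool" where
  "has_partial i g q d \<longleftrightarrow> ((\<lambda>h. g (q(i := q i + h))) has_real_derivative d) (at 0)"

definition partial :: "nat \<Rightarrow> ((nat \<Rightarrow> real) \<Rightarrow> real) \<Rightarrow> (nat \<Rightarrow> real) \<Rightarrow> real" where
  "partial i g q = deriv (\<lambda>h. g (q(i := q i + h))) 0"

fun CkN :: "nat \<Rightarrow> nat \<Rightarrow> (nat \<Rightarrow> real) set \<Rightarrow> ((nat \<Rightarrow> real) \<Rightarrow> real) \<Rightarrow> bool" where
  "CkN 0 N U g = continuousN N U g"
| "CkN (Suc k) N U g = (continuousN N U g \<and>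
      (\<forall>i<N. \<forall>q\<in>U. \<exists>d. has_partial i g q d) \<and>
      (\<forall>i<N. CkN k N U (partial i g)))"

definition smoothN :: "nat \<Rightarrow> (nat \<Rightarrow> real) set \<Rightarrow> ((nat \<Rightarrow> real) \<Rightarrow> real) \<Rightarrow> bool" where
  "smoothN N U g \<longleftrightarrow> openN N U \<and> (\<forall>k. CkN k N U g)"

text \<open>Parameters p \<in> Fermat-R^N: functions nat \<Rightarrow> fermat with p i = 0 for i \<ge> N.
  The point (q, y) \<in> R^N \<times> R is encoded as the element of R^(N+1) with coordinate N equal to y.\<close>
definition pair_pt :: "nat \<Rightarrow> (nat \<Rightarrow> real) \<Rightarrow> real \<Rightarrow> (nat \<Rightarrow> real)" where
  "pair_pt N q y = (\<lambda>i. if i < N then q i else if i = N then y else 0)"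

definition prod_dom :: "nat \<Rightarrow> (nat \<Rightarrow> real) set \<Rightarrow> real set \<Rightarrow> (nat \<Rightarrow> real) set" where
  "prod_dom N P V = {pair_pt N q y | q y. q \<in> P \<and> y \<in> V}"

definition fext_fun :: "nat \<Rightarrow> ((nat \<Rightarrow> real) \<Rightarrow> real) \<Rightarrow> (nat \<Rightarrow> fermat) \<Rightarrow> fermat \<Rightarrow> fermat" where
  "fext_fun N g p y = abs_fermat (\<lambda>t. g (pair_pt N (\<lambda>i. rep_fermat (p i) t) (rep_fermat y t)))"

definition fstd_vec :: "nat \<Rightarrow> (nat \<Rightarrow> fermat) \<Rightarrow> (nat \<Rightarrow> real)" where
  "fstd_vec N p = (\<lambda>i. if i < N then fstd (p i) else 0)"

definition local_repr ::
  "fermat set \<Rightarrow> (fermat \<Rightarrow> fermat) \<Rightarrow> fermat \<Rightarrow> real set \<Rightarrow> nat \<Rightarrow> (nat \<Rightarrow> real) set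
     \<Rightarrow> (nat \<Rightarrow> fermat) \<Rightarrow> ((nat \<Rightarrow> real) \<Rightarrow> real) \<Rightarrow> bool" where
  "local_repr S f x V N P p g \<longleftrightarrow>
     open V \<and> fstd x \<in> V \<and> openN N P \<and> (\<forall>i\<ge>N. p i = fzero) \<and> fstd_vec N p \<in> P \<and>
     smoothN (Suc N) (prod_dom N P V) g \<and>
     (\<forall>y\<in>S. fstd y \<in> V \<longrightarrow> f y = fext_fun N g p y)"

definition fsmooth :: "fermat set \<Rightarrow> (fermat \<Rightarrow> fermat) \<Rightarrow> bool" where
  "fsmooth S f \<longleftrightarrow> (\<forall>x\<in>S. \<exists>V N P p g. local_repr S f x V N P p g)"

definition fderiv :: "fermat set \<Rightarrow> (fermat \<Rightarrow> fermat) \<Rightarrow> fermat \<Rightarrow> fermat" where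
  "fderiv S f x = (SOME d. \<exists>V N P p g. local_repr S f x V N P p g \<and>
                                     d = fext_fun N (partial N g) p x)"

end

theory Submission
  imports Defs
begin


definition lo :: "(real \<Rightarrow> real) \<Rightarrow> bool" where
  "lo h \<longleftrightarrow> (\<forall>e>0. eventually (\<lambda>t. \<bar>h t\<bar> \<le> e * t) (at_right 0))"

lemma little_o_t_iff_lo: "little_o_t h \<longleftrightarrow> lo h"
proof
  assume a: "little_o_t h"
  show "lo h" unfolding lo_def
  proof (intro allI impI)
    fix e :: real assume "e > 0"
    from a[unfolded little_o_t_def, THEN tendstoD, OF this]
    have "eventually (\<lambda>t. dist (h t / t) 0 < e) (at_right 0)" .
    moreover have "eventually (\<lambda>t. t > 0) (at_right (0::real))" by (simp add: eventually_at_right_less)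
    ultimately show "eventually (\<lambda>t. \<bar>h t\<bar> \<le> e * t) (at_right 0)"
      by eventually_elim (auto simp: abs_divide field_simps)
  qed
next
  assume a: "lo h"
  show "little_o_t h" unfolding little_o_t_def
  proof (rule tendstoI)
    fix e :: real assume "e > 0"
    hence "e/2 > 0" by simp
    from a[unfolded lo_def, rule_format, OF this]
    have "eventually (\<lambda>t. \<bar>h t\<bar> \<le> e/2 * t) (at_right 0)" .
    moreover have "eventually (\<lambda>t. t > 0) (at_right (0::real))" by (simp add: eventually_at_right_less)
    ultimately show "eventually (\<lambda>t. dist (h t / t) 0 < e) (at_right 0)"
    proof eventually_elim
      case (elim t)
      hence "\<bar>h t\<bar> / t \<le> e/2" by (simp add: divide_le_eq mult.commute)
      moreover have "dist (h t / t) 0 = \<bar>h t\<bar> / t" using elim by (simp add: abs_divide)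
      ultimately show ?case using \<open>e>0\<close> by linarith
    qed
  qed
qed

lemma loD: "lo f \<Longrightarrow> e > 0 \<Longrightarrow> eventually (\<lambda>t. \<bar>f t\<bar> \<le> e * t) (at_right 0)"
  unfolding lo_def by blast

lemma ev_pos: "eventually (\<lambda>t. t > 0) (at_right (0::real))"
  by (simp add: eventually_at_right_less)

lemma ev_le1: "eventually (\<lambda>t. t \<le> c) (at_right (0::real))" if "c > 0"
  using that eventually_at_right_field by (metis (mono_tags, lifting) eventually_at_right less_eq_real_def)

lemma lo_zero[simp]: "lo (\<lambda>t. 0)"
  unfolding lo_def by (auto intro: eventually_mono[OF ev_pos])

lemma lo_add: "lo f \<Longrightarrow> lo g \<Longrightarrow> lo (\<lambda>t. f t + g t)"
  unfolding lo_def
proof (intro allI impI)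
  fix e :: real assume f: "\<forall>e>0. eventually (\<lambda>t. \<bar>f t\<bar> \<le> e * t) (at_right 0)"
     and g: "\<forall>e>0. eventually (\<lambda>t. \<bar>g t\<bar> \<le> e * t) (at_right 0)" and e: "e > 0"
  have "eventually (\<lambda>t. \<bar>f t\<bar> \<le> e/2 * t) (at_right 0)" "eventually (\<lambda>t. \<bar>g t\<bar> \<le> e/2 * t) (at_right 0)"
    using f g e by (simp_all only: lo_def[symmetric] loD half_gt_zero)
  thus "eventually (\<lambda>t. \<bar>f t + g t\<bar> \<le> e * t) (at_right 0)"
  proof eventually_elim
    case (elim t) thus ?case using abs_triangle_ineq[of "f t" "g t"] by linarith
  qed
qed

lemma lo_cmult: "lo f \<Longrightarrow> lo (\<lambda>t. c * f t)"
  unfolding lo_def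
proof (intro allI impI)
  fix e :: real assume f: "\<forall>e>0. eventually (\<lambda>t. \<bar>f t\<bar> \<le> e * t) (at_right 0)" and e: "e > 0"
  have "e/(\<bar>c\<bar>+1) > 0" using e by (simp add: add_pos_nonneg)
  from f[rule_format, OF this]
  have "eventually (\<lambda>t. \<bar>f t\<bar> \<le> e/(\<bar>c\<bar>+1) * t) (at_right 0)" .
  thus "eventually (\<lambda>t. \<bar>c * f t\<bar> \<le> e * t) (at_right 0)"
  proof (rule eventually_mono)
    fix t assume h: "\<bar>f t\<bar> \<le> e / (\<bar>c\<bar> + 1) * t"
    have "\<bar>c * f t\<bar> \<le> (\<bar>c\<bar>+1) * \<bar>f t\<bar>" by (simp add: abs_mult mult_right_mono)
    also have "\<dots> \<le> (\<bar>c\<bar>+1) * (e / (\<bar>c\<bar> + 1) * t)" using h by (intro mult_left_mono) auto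
    also have "\<dots> = e * t" by simp
    finally show "\<bar>c * f t\<bar> \<le> e * t" .
  qed
qed

lemma lo_uminus: "lo f \<Longrightarrow> lo (\<lambda>t. - f t)"
  using lo_cmult[of f "-1"] by simp

lemma lo_diff: "lo f \<Longrightarrow> lo g \<Longrightarrow> lo (\<lambda>t. f t - g t)"
  using lo_add[of f "\<lambda>t. - g t"] lo_uminus by simp

lemma lo_cong_ev: "lo f \<Longrightarrow> eventually (\<lambda>t. \<bar>g t\<bar> \<le> \<bar>f t\<bar>) (at_right 0) \<Longrightarrow> lo g"
  unfolding lo_def
proof (intro allI impI)
  fix e :: real assume f: "\<forall>e>0. eventually (\<lambda>t. \<bar>f t\<bar> \<le> e * t) (at_right 0)" and e: "e>0"
    and g: "eventually (\<lambda>t. \<bar>g t\<bar> \<le> \<bar>f t\<bar>) (at_right 0)"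
  from f e have "eventually (\<lambda>t. \<bar>f t\<bar> \<le> e * t) (at_right 0)" by auto
  with g show "eventually (\<lambda>t. \<bar>g t\<bar> \<le> e * t) (at_right 0)" by eventually_elim auto
qed

lemma lo_mult_bounded:
  assumes "lo f" "eventually (\<lambda>t. \<bar>g t\<bar> \<le> M) (at_right 0)"
  shows "lo (\<lambda>t. g t * f t)"
proof -
  have "lo (\<lambda>t. (\<bar>M\<bar>+1) * f t)" by (rule lo_cmult[OF assms(1)])
  moreover have "eventually (\<lambda>t. \<bar>g t * f t\<bar> \<le> \<bar>(\<bar>M\<bar>+1) * f t\<bar>) (at_right 0)"
    using assms(2) by eventually_elim (auto simp: abs_mult intro!: mult_right_mono)
  ultimately show ?thesis by (rule lo_cong_ev)
qed

lemma lo_tendsto: "lo f \<Longrightarrow> (f \<longlongrightarrow> 0) (at_right 0)"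
proof -
  assume "lo f"
  hence "((\<lambda>t. f t / t) \<longlongrightarrow> 0) (at_right 0)" using little_o_t_iff_lo little_o_t_def by blast
  hence "((\<lambda>t. f t / t * t) \<longlongrightarrow> 0 * 0) (at_right 0)"
    by (intro tendsto_mult) (auto intro: tendsto_ident_at)
  moreover have "eventually (\<lambda>t. f t / t * t = f t) (at_right 0)"
    using ev_pos by eventually_elim auto
  ultimately show ?thesis by (simp add: tendsto_cong)
qed

lemma powr_tendsto0: "b > 0 \<Longrightarrow> ((\<lambda>t. t powr b) \<longlongrightarrow> 0) (at_right (0::real))"
proof -
  assume b: "b > 0"
  have "eventually (\<lambda>t. 0 \<le> t) (at_right (0::real))" using ev_pos by (rule eventually_mono) simp
  from tendsto_powr2[of "\<lambda>t. t" 0 "at_right 0" "\<lambda>_. b" b, OF tendsto_ident_at tendsto_const this b]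
  show ?thesis by simp
qed

lemma lo_powr: "b > 1 \<Longrightarrow> lo (\<lambda>t. c * t powr b)"
proof -
  assume b: "b > 1"
  have "lo (\<lambda>t. t powr b)" unfolding lo_def
  proof (intro allI impI)
    fix e :: real assume e: "e > 0"
    have "eventually (\<lambda>t. dist (t powr (b-1)) 0 < e) (at_right 0)"
      using powr_tendsto0[of "b-1"] b e tendstoD by fastforce
    thus "eventually (\<lambda>t. \<bar>t powr b\<bar> \<le> e * t) (at_right 0)"
      using ev_pos
    proof eventually_elim
      case (elim t)
      have "t powr b = t powr (b-1) * t" using elim by (simp add: powr_diff)
      thus ?case using elim by (simp add: mult_right_mono)
    qed
  qed
  thus ?thesis by (rule lo_cmult)
qed

definition pl :: "(real \<times> real) list \<Rightarrow> real \<Rightarrow> real" where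
  "pl L t = (\<Sum>p\<leftarrow>L. fst p * t powr snd p)"

definition nonneg :: "(real \<times> real) list \<Rightarrow> bool" where
  "nonneg L \<longleftrightarrow> (\<forall>p\<in>set L. snd p \<ge> 0)"

definition prodL :: "(real \<times> real) list \<Rightarrow> (real \<times> real) list \<Rightarrow> (real \<times> real) list" where
  "prodL L1 L2 = concat (map (\<lambda>p. map (\<lambda>q. (fst p * fst q, snd p + snd q)) L2) L1)"

lemma pl_Nil[simp]: "pl [] t = 0" by (simp add: pl_def)
lemma pl_Cons[simp]: "pl (p # L) t = fst p * t powr snd p + pl L t" by (simp add: pl_def)
lemma pl_append[simp]: "pl (L1 @ L2) t = pl L1 t + pl L2 t" by (simp add: pl_def)

lemma pl_prodL: "t > 0 \<Longrightarrow> pl (prodL L1 L2) t = pl L1 t * pl L2 t"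
proof (induction L1)
  case Nil thus ?case by (simp add: prodL_def)
next
  case (Cons p L1)
  have "pl (map (\<lambda>q. (fst p * fst q, snd p + snd q)) L2) t = fst p * t powr snd p * pl L2 t"
    by (induction L2) (auto simp: powr_add algebra_simps)
  thus ?case using Cons by (simp add: prodL_def algebra_simps)
qed

lemma nonneg_prodL: "nonneg L1 \<Longrightarrow> nonneg L2 \<Longrightarrow> nonneg (prodL L1 L2)"
  by (auto simp: nonneg_def prodL_def)

lemma pl_bounded: "nonneg L \<Longrightarrow> eventually (\<lambda>t. \<bar>pl L t\<bar> \<le> (\<Sum>p\<leftarrow>L. \<bar>fst p\<bar>)) (at_right 0)"
proof -
  assume nn: "nonneg L"
  have "eventually (\<lambda>t. t \<le> 1) (at_right (0::real))" by (rule ev_le1) simp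
  thus ?thesis using ev_pos
  proof eventually_elim
    case (elim t)
    have "\<bar>pl L t\<bar> \<le> (\<Sum>p\<leftarrow>L. \<bar>fst p\<bar>)" using nn
    proof (induction L)
      case Nil thus ?case by simp
    next
      case (Cons p L)
      have "t powr snd p \<le> t powr 0" using elim Cons.prems by (intro powr_mono') (auto simp: nonneg_def)
      hence "t powr snd p \<le> 1" using elim by simp
      hence "\<bar>fst p * t powr snd p\<bar> \<le> \<bar>fst p\<bar>" using elim
        by (simp add: abs_mult mult_left_le)
      moreover have "\<bar>pl L t\<bar> \<le> (\<Sum>p\<leftarrow>L. \<bar>fst p\<bar>)" using Cons by (auto simp: nonneg_def)
      ultimately show ?case by (simp add: abs_triangle_ineq order_trans[OF abs_triangle_ineq] add_mono)
    qed
    thus ?case .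
  qed
qed

definition RF :: "(real \<Rightarrow> real) \<Rightarrow> bool" where
  "RF x \<longleftrightarrow> (\<exists>L. nonneg L \<and> lo (\<lambda>t. x t - pl L t))"

lemma RF_bounded: "RF x \<Longrightarrow> \<exists>M. eventually (\<lambda>t. \<bar>x t\<bar> \<le> M) (at_right 0)"
proof -
  assume "RF x"
  then obtain L where L: "nonneg L" "lo (\<lambda>t. x t - pl L t)" by (auto simp: RF_def)
  have "eventually (\<lambda>t. \<bar>x t - pl L t\<bar> \<le> 1 * t) (at_right 0)" using L(2) by (rule loD) simp
  moreover note pl_bounded[OF L(1)]
  moreover have "eventually (\<lambda>t. t \<le> 1) (at_right (0::real))" by (rule ev_le1) simp
  ultimately have "eventually (\<lambda>t. \<bar>x t\<bar> \<le> (\<Sum>p\<leftarrow>L. \<bar>fst p\<bar>) + 1) (at_right 0)"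
    by eventually_elim linarith
  thus ?thesis by blast
qed

lemma RF_mult: "RF x \<Longrightarrow> RF y \<Longrightarrow> RF (\<lambda>t. x t * y t)"
proof -
  assume x: "RF x" and y: "RF y"
  obtain L1 where L1: "nonneg L1" "lo (\<lambda>t. x t - pl L1 t)" using x by (auto simp: RF_def)
  obtain L2 where L2: "nonneg L2" "lo (\<lambda>t. y t - pl L2 t)" using y by (auto simp: RF_def)
  obtain M where M: "eventually (\<lambda>t. \<bar>y t\<bar> \<le> M) (at_right 0)" using RF_bounded[OF y] by blast
  have "lo (\<lambda>t. y t * (x t - pl L1 t))" by (rule lo_mult_bounded[OF L1(2) M])
  moreover have "lo (\<lambda>t. pl L1 t * (y t - pl L2 t))" by (rule lo_mult_bounded[OF L2(2) pl_bounded[OF L1(1)]])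
  ultimately have "lo (\<lambda>t. y t * (x t - pl L1 t) + pl L1 t * (y t - pl L2 t))" by (rule lo_add)
  hence "lo (\<lambda>t. x t * y t - pl (prodL L1 L2) t)"
    by (rule lo_cong_ev) (auto intro!: eventually_mono[OF ev_pos] simp: pl_prodL algebra_simps)
  thus ?thesis using nonneg_prodL[OF L1(1) L2(1)] by (auto simp: RF_def)
qed

lemma RF_const: "RF (\<lambda>t. c)"
proof -
  have "lo (\<lambda>t. c - pl [(c,0)] t)" by (rule lo_cong_ev[OF lo_zero]) (auto intro: eventually_mono[OF ev_pos])
  thus ?thesis unfolding RF_def nonneg_def by (intro exI[of _ "[(c,0)]"]) auto
qed

lemma RF_add: "RF x \<Longrightarrow> RF y \<Longrightarrow> RF (\<lambda>t. x t + y t)"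
proof -
  assume x: "RF x" and y: "RF y"
  obtain L1 where L1: "nonneg L1" "lo (\<lambda>t. x t - pl L1 t)" using x by (auto simp: RF_def)
  obtain L2 where L2: "nonneg L2" "lo (\<lambda>t. y t - pl L2 t)" using y by (auto simp: RF_def)
  have "lo (\<lambda>t. x t + y t - pl (L1 @ L2) t)" using lo_add[OF L1(2) L2(2)] by (simp add: algebra_simps)
  moreover have "nonneg (L1@L2)" using L1(1) L2(1) unfolding nonneg_def by (metis Un_iff set_append)
  ultimately show ?thesis by (auto simp: RF_def)
qed

lemma RF_diff: "RF x \<Longrightarrow> RF y \<Longrightarrow> RF (\<lambda>t. x t - y t)"
  using RF_add[of x "\<lambda>t. (-1) * y t"] RF_mult[OF RF_const[of "-1"]] by simp

lemma RF_pow: "RF x \<Longrightarrow> RF (\<lambda>t. x t ^ k)"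
  by (induction k) (auto intro: RF_mult RF_const)


lemma tpow_pos: "t > 0 \<Longrightarrow> tpow t a = t powr a"
  by (simp add: tpow_def)

lemma tpow_tendsto: "a \<ge> 0 \<Longrightarrow> ((\<lambda>t. tpow t a) \<longlongrightarrow> tpow 0 a) (at_right 0)"
proof (cases "a = 0")
  case True thus ?thesis by (simp add: tpow_def)
next
  case False
  assume "a \<ge> 0" hence "a > 0" using False by simp
  have "((\<lambda>t. t powr a) \<longlongrightarrow> 0) (at_right 0)" by (rule powr_tendsto0) fact
  thus ?thesis using False by (simp add: tpow_def)
qed

lemma RotE:
  assumes "x \<in> Rot"
  obtains k r \<alpha> a h where "\<forall>i<(k::nat). 0 \<le> a i" "h 0 = 0" "lo h"
    "\<forall>t\<ge>0. x t = r + (\<Sum>i<k. \<alpha> i * tpow t (a i)) + h t"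
  using assms unfolding Rot_def little_o_t_iff_lo mem_Collect_eq
  by (elim exE conjE) (rule that; assumption)

lemma RotI:
  assumes "\<forall>i<(k::nat). 0 \<le> a i" "h 0 = 0" "lo h" "\<forall>t\<ge>0. x t = r + (\<Sum>i<k. \<alpha> i * tpow t (a i)) + h t"
  shows "x \<in> Rot"
  unfolding Rot_def little_o_t_iff_lo mem_Collect_eq
  by (rule exI[of _ k], rule exI[of _ r], rule exI[of _ \<alpha>], rule exI[of _ a], rule exI[of _ h]) (use assms in simp)

lemma Rot_tendsto: "x \<in> Rot \<Longrightarrow> (x \<longlongrightarrow> x 0) (at_right 0)"
proof -
  assume "x \<in> Rot"
  then obtain k r \<alpha> a h where R: "\<forall>i<(k::nat). 0 \<le> a i" "h 0 = 0" "lo h"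
    "\<forall>t\<ge>0. x t = r + (\<Sum>i<k. \<alpha> i * tpow t (a i)) + h t" by (rule RotE)
  have "((\<lambda>t. r + (\<Sum>i<k. \<alpha> i * tpow t (a i)) + h t) \<longlongrightarrow> r + (\<Sum>i<k. \<alpha> i * tpow 0 (a i)) + 0) (at_right 0)"
    using R(1) by (intro tendsto_intros tpow_tendsto lo_tendsto R(3)) auto
  moreover have "x 0 = r + (\<Sum>i<k. \<alpha> i * tpow 0 (a i)) + 0" using R by simp
  moreover have "eventually (\<lambda>t. r + (\<Sum>i<k. \<alpha> i * tpow t (a i)) + h t = x t) (at_right 0)"
    using ev_pos by eventually_elim (use R(4) in auto)
  ultimately show ?thesis by (simp add: tendsto_cong)
qed

lemma lim_unique_right: "(f \<longlongrightarrow> a) (at_right (0::real)) \<Longrightarrow> (f \<longlongrightarrow> b) (at_right 0) \<Longrightarrow> a = (b::real)"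
  using tendsto_unique[of "at_right (0::real)" f a b] by simp

lemma Rot_eq0: "x \<in> Rot \<Longrightarrow> y \<in> Rot \<Longrightarrow> lo (\<lambda>t. x t - y t) \<Longrightarrow> x 0 = y 0"
proof -
  assume x: "x \<in> Rot" and y: "y \<in> Rot" and l: "lo (\<lambda>t. x t - y t)"
  have "((\<lambda>t. x t - y t) \<longlongrightarrow> x 0 - y 0) (at_right 0)"
    by (rule tendsto_diff[OF Rot_tendsto[OF x] Rot_tendsto[OF y]])
  from lim_unique_right[OF this lo_tendsto[OF l]] have "x 0 - y 0 = 0" .
  thus ?thesis by simp
qed

lemma Rot_perturb: "y \<in> Rot \<Longrightarrow> x 0 = y 0 \<Longrightarrow> lo (\<lambda>t. x t - y t) \<Longrightarrow> x \<in> Rot"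
proof -
  assume y: "y \<in> Rot" and e: "x 0 = y 0" and l: "lo (\<lambda>t. x t - y t)"
  obtain k r \<alpha> a h where R: "\<forall>i<(k::nat). 0 \<le> a i" "h 0 = 0" "lo h"
    "\<forall>t\<ge>0. y t = r + (\<Sum>i<k. \<alpha> i * tpow t (a i)) + h t" using y by (rule RotE)
  show "x \<in> Rot"
  proof (rule RotI[where h="\<lambda>t. h t + (x t - y t)"])
    show "\<forall>i<k. 0 \<le> a i" by fact
    show "h 0 + (x 0 - y 0) = 0" using R e by simp
    show "lo (\<lambda>t. h t + (x t - y t))" by (rule lo_add[OF R(3) l])
    show "\<forall>t\<ge>0. x t = r + (\<Sum>i<k. \<alpha> i * tpow t (a i)) + (h t + (x t - y t))" using R(4) by auto
  qed
qed

lemma pl_upt: "pl (map (\<lambda>i. (\<alpha> i, a i)) [0..<(k::nat)]) t = (\<Sum>i<k. \<alpha> i * t powr a i)"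
  by (simp add: pl_def comp_def sum_set_upt_conv_sum_list_nat[symmetric] lessThan_atLeast0)

lemma Rot_RF: "x \<in> Rot \<Longrightarrow> RF x"
proof -
  assume "x \<in> Rot"
  then obtain k r \<alpha> a h where R: "\<forall>i<(k::nat). 0 \<le> a i" "h 0 = 0" "lo h"
    "\<forall>t\<ge>0. x t = r + (\<Sum>i<k. \<alpha> i * tpow t (a i)) + h t" by (rule RotE)
  define L where "L = (r,0) # map (\<lambda>i. (\<alpha> i, a i)) [0..<k]"
  have "nonneg L" using R(1) by (auto simp: L_def nonneg_def)
  moreover have "lo (\<lambda>t. x t - pl L t)"
  proof (rule lo_cong_ev[OF R(3)])
    show "eventually (\<lambda>t. \<bar>x t - pl L t\<bar> \<le> \<bar>h t\<bar>) (at_right 0)"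
      using ev_pos
    proof eventually_elim
      case (elim t)
      have "x t - pl L t = h t" using R(4) elim by (simp add: L_def pl_upt tpow_pos)
      thus ?case by simp
    qed
  qed
  ultimately show ?thesis by (auto simp: RF_def)
qed

lemma Rot_poly: "nonneg L \<Longrightarrow> (\<lambda>t. \<Sum>i<length L. fst (L!i) * tpow t (snd (L!i))) \<in> Rot"
proof -
  assume nn: "nonneg L"
  have "\<forall>i<length L. 0 \<le> snd (L!i)" using nn by (metis nonneg_def nth_mem)
  thus ?thesis
    by (intro RotI[where h="\<lambda>t. 0" and r=0 and k="length L" and \<alpha>="\<lambda>i. fst (L!i)" and a="\<lambda>i. snd (L!i)"]) simp_all
qed

lemma Rot_from:
  assumes "nonneg L" "lo (\<lambda>t. x t - pl L t)" "(x \<longlongrightarrow> x 0) (at_right 0)"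
  shows "x \<in> Rot"
proof -
  define y where "y = (\<lambda>t. \<Sum>i<length L. fst (L!i) * tpow t (snd (L!i)))"
  have y: "y \<in> Rot" unfolding y_def by (rule Rot_poly[OF assms(1)])
  have pl_eq: "pl L t = y t" if "t > 0" for t
  proof -
    have "pl L t = (\<Sum>i<length L. fst (L!i) * t powr (snd (L!i)))"
      by (simp add: pl_def sum_list_sum_nth lessThan_atLeast0)
    thus ?thesis using that by (simp add: y_def tpow_pos)
  qed
  have l: "lo (\<lambda>t. x t - y t)"
    by (rule lo_cong_ev[OF assms(2)]) (rule eventually_mono[OF ev_pos], simp add: pl_eq)
  have "((\<lambda>t. x t - y t) \<longlongrightarrow> x 0 - y 0) (at_right 0)"
    by (rule tendsto_diff[OF assms(3) Rot_tendsto[OF y]])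
  from lim_unique_right[OF this lo_tendsto[OF l]] have "x 0 = y 0" by simp
  from Rot_perturb[OF y this l] show ?thesis .
qed

lemma rep_Rot: "rep_fermat x \<in> Rot"
  using Quotient3_rep_reflp[OF Quotient3_fermat] by (auto simp: fermat_rel_def)

lemma Rot_refl: "x \<in> Rot \<Longrightarrow> fermat_rel x x"
  by (simp add: fermat_rel_def little_o_t_iff_lo)

lemma abs_eqI: "x \<in> Rot \<Longrightarrow> y \<in> Rot \<Longrightarrow> lo (\<lambda>t. x t - y t) \<Longrightarrow> abs_fermat x = abs_fermat y"
  using Quotient3_rel_abs[OF Quotient3_fermat] by (auto simp: fermat_rel_def little_o_t_iff_lo)

lemma abs_eqD: "x \<in> Rot \<Longrightarrow> y \<in> Rot \<Longrightarrow> abs_fermat x = abs_fermat y \<Longrightarrow> lo (\<lambda>t. x t - y t)"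
  using Quotient3_rel[OF Quotient3_fermat, of x y] Rot_refl by (auto simp: fermat_rel_def little_o_t_iff_lo)

lemma rep_abs_lo: "x \<in> Rot \<Longrightarrow> lo (\<lambda>t. rep_fermat (abs_fermat x) t - x t)"
  using Quotient3_rep_abs[OF Quotient3_fermat, of x] Rot_refl by (auto simp: fermat_rel_def little_o_t_iff_lo)

lemma rep_abs_0: "x \<in> Rot \<Longrightarrow> rep_fermat (abs_fermat x) 0 = x 0"
  by (rule Rot_eq0[OF rep_Rot _ rep_abs_lo])

lemma fstd_abs: "x \<in> Rot \<Longrightarrow> fstd (abs_fermat x) = x 0"
  by (simp add: fstd_def rep_abs_0)

lemma const_Rot: "(\<lambda>t. c) \<in> Rot"
  by (rule RotI[where k=0 and h="\<lambda>t. 0" and r=c and \<alpha>="\<lambda>i. 0" and a="\<lambda>i. 0"]) auto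

definition cst :: "real \<Rightarrow> fermat" where "cst c = abs_fermat (\<lambda>t. c)"

lemma fstd_cst[simp]: "fstd (cst c) = c"
  by (simp add: cst_def fstd_abs const_Rot)

lemma rep_cst_lo: "lo (\<lambda>t. rep_fermat (cst c) t - c)"
  using rep_abs_lo[OF const_Rot] by (simp add: cst_def)

lemma rep_tendsto: "(rep_fermat x \<longlongrightarrow> fstd x) (at_right 0)"
  using Rot_tendsto[OF rep_Rot] by (simp add: fstd_def)

lemma fzero_eq: "fzero = abs_fermat (\<lambda>t. 0)" by (simp add: fzero_def)


lemma Rot_bound:
  assumes "x \<in> Rot"
  shows "\<exists>K a. a > 0 \<and> eventually (\<lambda>t. \<bar>x t - x 0\<bar> \<le> K * t powr a) (at_right 0)"
proof -
  obtain k r \<alpha> a h where R: "\<forall>i<(k::nat). 0 \<le> a i" "h 0 = 0" "lo h"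
    "\<forall>t\<ge>0. x t = r + (\<Sum>i<k. \<alpha> i * tpow t (a i)) + h t" using assms by (rule RotE)
  define S where "S = insert 1 {a i |i. i<k \<and> a i > 0}"
  have finS: "finite S" unfolding S_def by auto
  define b where "b = Min S"
  have b1: "b \<le> 1" unfolding b_def S_def using finS S_def by (intro Min_le) auto
  have bpos: "b > 0" unfolding b_def using finS by (subst Min_gr_iff) (auto simp: S_def)
  have bai: "b \<le> a i" if "i < k" "a i > 0" for i
    unfolding b_def using finS that S_def by (intro Min_le) auto
  define K where "K = (\<Sum>i<k. \<bar>\<alpha> i\<bar>) + 1"
  have ev1: "eventually (\<lambda>t. t \<le> 1) (at_right (0::real))" by (rule ev_le1) simp
  have evh: "eventually (\<lambda>t. \<bar>h t\<bar> \<le> 1 * t) (at_right 0)" by (rule loD[OF R(3)]) simp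
  have "eventually (\<lambda>t. \<bar>x t - x 0\<bar> \<le> K * t powr b) (at_right 0)"
    using ev1 evh ev_pos
  proof eventually_elim
    case (elim t)
    have tb: "t \<le> t powr b" using powr_mono'[of b 1 t] elim b1 by simp
    have d: "\<bar>tpow t (a i) - tpow 0 (a i)\<bar> \<le> t powr b" if "i<k" for i
    proof (cases "a i = 0")
      case True thus ?thesis using elim by (simp add: tpow_def)
    next
      case False
      hence "a i > 0" using R(1) that by force
      hence "t powr a i \<le> t powr b" using bai[OF that] elim by (intro powr_mono') auto
      thus ?thesis using False elim by (simp add: tpow_def)
    qed
    have x0: "x 0 = r + (\<Sum>i<k. \<alpha> i * tpow 0 (a i))" using R(4)[rule_format, of 0] R(2) by simp
    have xt: "x t = r + (\<Sum>i<k. \<alpha> i * tpow t (a i)) + h t" using R(4) elim by simp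
    have "x t - x 0 = (\<Sum>i<k. \<alpha> i * (tpow t (a i) - tpow 0 (a i))) + h t"
      unfolding xt x0 by (simp add: sum_subtractf right_diff_distrib)
    also have "\<bar>\<dots>\<bar> \<le> (\<Sum>i<k. \<bar>\<alpha> i\<bar> * t powr b) + t powr b"
    proof -
      have "\<bar>\<Sum>i<k. \<alpha> i * (tpow t (a i) - tpow 0 (a i))\<bar> \<le> (\<Sum>i<k. \<bar>\<alpha> i * (tpow t (a i) - tpow 0 (a i))\<bar>)"
        by (rule sum_abs)
      also have "\<dots> \<le> (\<Sum>i<k. \<bar>\<alpha> i\<bar> * t powr b)"
        by (rule sum_mono) (auto simp: abs_mult intro!: mult_left_mono d)
      finally show ?thesis using elim tb by (smt (verit))
    qed
    also have "\<dots> = K * t powr b" by (simp add: K_def sum_distrib_right[symmetric] algebra_simps)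
    finally show ?case .
  qed
  thus ?thesis using bpos by blast
qed


lemma fle_std: "fle x y \<Longrightarrow> fstd x \<le> fstd y"
proof -
  assume "fle x y"
  then obtain z \<delta> where z: "fermat_rel z (\<lambda>t. 0)" "\<delta> > 0"
    "\<forall>t. 0 \<le> t \<and> t < \<delta> \<longrightarrow> rep_fermat x t \<le> rep_fermat y t + z t" unfolding fle_def by blast
  have zR: "z \<in> Rot" "lo (\<lambda>t. z t - 0)" using z(1) by (simp_all add: fermat_rel_def little_o_t_iff_lo)
  have "z 0 = 0" using Rot_eq0[of z "\<lambda>t. 0", OF zR(1) const_Rot zR(2)] by simp
  moreover have "rep_fermat x 0 \<le> rep_fermat y 0 + z 0" using z(3) z(2) by simp
  ultimately show ?thesis by (simp add: fstd_def)
qed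

lemma std_lt_fle: "fstd x < fstd y \<Longrightarrow> fle x y"
proof -
  assume lt: "fstd x < fstd y"
  have "((\<lambda>t. rep_fermat y t - rep_fermat x t) \<longlongrightarrow> fstd y - fstd x) (at_right 0)"
    by (rule tendsto_diff[OF rep_tendsto rep_tendsto])
  from order_tendstoD(1)[OF this, of 0] lt
  have "eventually (\<lambda>t. 0 < rep_fermat y t - rep_fermat x t) (at_right 0)" by simp
  then obtain b where b: "b > 0" "\<forall>t>0. t < b \<longrightarrow> 0 < rep_fermat y t - rep_fermat x t"
    unfolding eventually_at_right_field by auto
  have "\<forall>t. 0 \<le> t \<and> t < b \<longrightarrow> rep_fermat x t \<le> rep_fermat y t + 0"
  proof (intro allI impI)
    fix t assume t: "0 \<le> t \<and> t < b"
    show "rep_fermat x t \<le> rep_fermat y t + 0"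
    proof (cases "t = 0")
      case True thus ?thesis using lt by (simp add: fstd_def)
    next
      case False
      have "0 < rep_fermat y t - rep_fermat x t" using b(2) t False by simp
      thus ?thesis by simp
    qed
  qed
  moreover have "fermat_rel (\<lambda>t. 0) (\<lambda>t. 0)" by (rule Rot_refl[OF const_Rot])
  ultimately show ?thesis using b(1) unfolding fle_def
    by (intro exI[of _ "\<lambda>t. 0"] conjI exI[of _ b]) simp_all
qed

lemma fext_le_Fin_std: "fext_le a (Fin x) \<Longrightarrow> fext_std a \<le> ereal (fstd x)"
  by (cases a) (auto dest: fle_std)

lemma fext_le_Fin_std2: "fext_le (Fin x) b \<Longrightarrow> ereal (fstd x) \<le> fext_std b"
  by (cases b) (auto dest: fle_std)

lemma J_std:
  "x \<in> finterval lc a b rc \<Longrightarrow> fext_std a \<le> ereal (fstd x) \<and> ereal (fstd x) \<le> fext_std b"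
  unfolding finterval_def fext_lt_def
  by (auto split: if_splits intro: fext_le_Fin_std fext_le_Fin_std2)

lemma cst_in_J:
  assumes "fext_std a < ereal s" "ereal s < fext_std b"
  shows "cst s \<in> finterval lc a b rc"
proof -
  have 1: "fext_le a (Fin (cst s)) \<and> a \<noteq> Fin (cst s)"
  proof (cases a)
    case (Fin \<alpha>)
    hence "fstd \<alpha> < fstd (cst s)" using assms(1) by simp
    hence "fle \<alpha> (cst s) \<and> \<alpha> \<noteq> cst s" using std_lt_fle by blast
    thus ?thesis using Fin by simp
  qed (use assms(1) in simp_all)
  have 2: "fext_le (Fin (cst s)) b \<and> Fin (cst s) \<noteq> b"
  proof (cases b)
    case (Fin \<beta>)
    hence "fstd (cst s) < fstd \<beta>" using assms(2) by simp
    hence "fle (cst s) \<beta> \<and> cst s \<noteq> \<beta>" using std_lt_fle by blast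
    thus ?thesis using Fin by simp
  qed (use assms(2) in simp_all)
  show ?thesis using 1 2 unfolding finterval_def fext_lt_def by simp
qed


definition smooth :: "nat \<Rightarrow> (nat \<Rightarrow> real) set \<Rightarrow> ((nat \<Rightarrow> real) \<Rightarrow> real) \<Rightarrow> bool" where
  "smooth M U h \<longleftrightarrow> (\<forall>k. CkN k M U h)"

lemma smooth_partial: "smooth M U h \<Longrightarrow> i < M \<Longrightarrow> smooth M U (partial i h)"
  unfolding smooth_def by (metis CkN.simps(2))

lemma smooth_partial_pow: "smooth M U h \<Longrightarrow> i < M \<Longrightarrow> smooth M U ((partial i ^^ m) h)"
  by (induction m) (auto intro: smooth_partial)

lemma smooth_cont: "smooth M U h \<Longrightarrow> continuousN M U h"
  unfolding smooth_def by (metis CkN.simps(1))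

lemma smooth_has_partial: "smooth M U h \<Longrightarrow> i < M \<Longrightarrow> q \<in> U \<Longrightarrow> \<exists>d. has_partial i h q d"
  unfolding smooth_def by (metis CkN.simps(2))

lemma deriv_line:
  assumes "smooth M U h" "i < M" "Y(i := x) \<in> U"
  shows "((\<lambda>y. h (Y(i := y))) has_real_derivative partial i h (Y(i := x))) (at x)"
proof -
  define q where "q = Y(i := x)"
  obtain d where d: "has_partial i h q d" using smooth_has_partial[OF assms(1,2)] assms(3) q_def by blast
  have eq: "(\<lambda>e. h (q(i := q i + e))) = (\<lambda>e. h (Y(i := e + x)))"
    by (rule ext) (simp add: q_def add.commute)
  have D: "((\<lambda>e. h (Y(i := e + x))) has_real_derivative d) (at 0)"
    using d unfolding has_partial_def eq .
  have "partial i h q = d" unfolding partial_def eq using D by (rule DERIV_imp_deriv)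
  moreover have "((\<lambda>y. h (Y(i := y))) has_real_derivative d) (at (0 + x))"
    using D DERIV_shift[of "\<lambda>y. h (Y(i := y))" d 0 x] by simp
  ultimately show ?thesis by (simp add: q_def)
qed

lemma distN_le: "distN M q q' \<le> (\<Sum>i<M. \<bar>q i - q' i\<bar>)"
proof -
  have "distN M q q' = L2_set (\<lambda>i. q i - q' i) {..<M}" by (simp add: distN_def L2_set_def)
  also have "\<dots> \<le> (\<Sum>i<M. \<bar>q i - q' i\<bar>)" by (rule L2_set_le_sum_abs)
  finally show ?thesis .
qed

lemma sum_lt_eta:
  assumes "\<forall>i<M. \<bar>q i - c i\<bar> < e / (real M + 1)" "e > 0"
  shows "(\<Sum>i<M. \<bar>c i - q i\<bar>) < e"
proof -
  have "(\<Sum>i<M. \<bar>c i - q i\<bar>) \<le> (\<Sum>i<M. e / (real M + 1))"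
    using assms(1) by (intro sum_mono) (simp add: abs_minus_commute less_imp_le)
  also have "\<dots> = real M * e / (real M + 1)" by simp
  also have "\<dots> < e" using assms(2) by (simp add: field_simps)
  finally show ?thesis .
qed

lemma near_open:
  assumes "openN M U" "c \<in> U"
  shows "\<exists>\<eta>>0. \<forall>q\<in>RN M. (\<forall>i<M. \<bar>q i - c i\<bar> < \<eta>) \<longrightarrow> q \<in> U"
proof -
  obtain e where e: "e > 0" "\<forall>q'\<in>RN M. distN M c q' < e \<longrightarrow> q' \<in> U"
    using assms unfolding openN_def by blast
  show ?thesis
  proof (intro exI[of _ "e / (real M + 1)"] conjI ballI impI)
    show "e / (real M + 1) > 0" using e by simp
    fix q assume q: "q \<in> RN M" "\<forall>i<M. \<bar>q i - c i\<bar> < e / (real M + 1)"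
    have "distN M c q < e" using distN_le[of M c q] sum_lt_eta[OF q(2) e(1)] by linarith
    thus "q \<in> U" using e q by blast
  qed
qed

lemma near_cont:
  assumes "continuousN M U h" "c \<in> U" "\<epsilon> > 0"
  shows "\<exists>\<eta>>0. \<forall>q\<in>U. (\<forall>i<M. \<bar>q i - c i\<bar> < \<eta>) \<longrightarrow> \<bar>h q - h c\<bar> < \<epsilon>"
proof -
  obtain e where e: "e > 0" "\<forall>q'\<in>U. distN M c q' < e \<longrightarrow> \<bar>h q' - h c\<bar> < \<epsilon>"
    using assms unfolding continuousN_def by blast
  show ?thesis
  proof (intro exI[of _ "e / (real M + 1)"] conjI ballI impI)
    show "e / (real M + 1) > 0" using e by simp
    fix q assume q: "q \<in> U" "\<forall>i<M. \<bar>q i - c i\<bar> < e / (real M + 1)"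
    have "distN M c q < e" using distN_le[of M c q] sum_lt_eta[OF q(2) e(1)] by linarith
    thus "\<bar>h q - h c\<bar> < \<epsilon>" using e q by blast
  qed
qed

lemma distN_pair: "distN (Suc N) (pair_pt N q x) (pair_pt N q y) = \<bar>x - y\<bar>"
proof -
  have "(\<Sum>i<Suc N. (pair_pt N q x i - pair_pt N q y i)\<^sup>2) = (x - y)\<^sup>2"
    by (simp add: pair_pt_def)
  thus ?thesis by (simp add: distN_def)
qed

lemma pair_pt_RN: "pair_pt N q x \<in> RN (Suc N)"
  by (simp add: RN_def pair_pt_def)

lemma pair_pt_cong: "(\<forall>i<N. q i = q' i) \<Longrightarrow> pair_pt N q x = pair_pt N q' x"
  by (auto simp: pair_pt_def)

lemma pair_pt_upd_N: "(pair_pt N q x)(N := y) = pair_pt N q y"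
  by (auto simp: pair_pt_def)

lemma pair_pt_upd: "i < N \<Longrightarrow> (pair_pt N q x)(i := y) = pair_pt N (q(i := y)) x"
  by (auto simp: pair_pt_def)

lemma cont_line:
  assumes "continuousN (Suc N) U h" "\<forall>\<sigma>\<in>S. pair_pt N q \<sigma> \<in> U"
  shows "continuous_on S (\<lambda>\<sigma>. h (pair_pt N q \<sigma>))"
  unfolding continuous_on_iff
proof (intro ballI allI impI)
  fix x e assume x: "x \<in> S" and e: "(0::real) < e"
  obtain d where d: "d > 0" "\<forall>q'\<in>U. distN (Suc N) (pair_pt N q x) q' < d \<longrightarrow> \<bar>h q' - h (pair_pt N q x)\<bar> < e"
    using assms(1) assms(2) x e unfolding continuousN_def by blast
  show "\<exists>d>0. \<forall>x'\<in>S. dist x' x < d \<longrightarrow> dist (h (pair_pt N q x')) (h (pair_pt N q x)) < e"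
  proof (intro exI[of _ d] conjI ballI impI)
    fix x' assume "x' \<in> S" "dist x' x < d"
    thus "dist (h (pair_pt N q x')) (h (pair_pt N q x)) < e"
      using d assms(2) distN_pair[of N q x x'] by (auto simp: dist_real_def abs_minus_commute)
  qed (fact d)
qed


definition UO :: "(real \<Rightarrow> real \<Rightarrow> real) \<Rightarrow> real set \<Rightarrow> bool" where
  "UO D S \<longleftrightarrow> (\<forall>e>0. eventually (\<lambda>t. \<forall>\<sigma>\<in>S. \<bar>D t \<sigma>\<bar> \<le> e * t) (at_right 0))"

lemma UOD: "UO D S \<Longrightarrow> e > 0 \<Longrightarrow> eventually (\<lambda>t. \<forall>\<sigma>\<in>S. \<bar>D t \<sigma>\<bar> \<le> e * t) (at_right 0)"
  unfolding UO_def by blast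

lemma UO_add: "UO D1 S \<Longrightarrow> UO D2 S \<Longrightarrow> UO (\<lambda>t \<sigma>. D1 t \<sigma> + D2 t \<sigma>) S"
  unfolding UO_def
proof (intro allI impI)
  fix e :: real assume f: "\<forall>e>0. eventually (\<lambda>t. \<forall>\<sigma>\<in>S. \<bar>D1 t \<sigma>\<bar> \<le> e * t) (at_right 0)"
     and g: "\<forall>e>0. eventually (\<lambda>t. \<forall>\<sigma>\<in>S. \<bar>D2 t \<sigma>\<bar> \<le> e * t) (at_right 0)" and e: "e > 0"
  have "e/2 > 0" using e by simp
  from f[rule_format, OF this] g[rule_format, OF this]
  show "eventually (\<lambda>t. \<forall>\<sigma>\<in>S. \<bar>D1 t \<sigma> + D2 t \<sigma>\<bar> \<le> e * t) (at_right 0)"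
  proof eventually_elim
    case (elim t)
    show ?case
    proof
      fix \<sigma> assume "\<sigma> \<in> S"
      thus "\<bar>D1 t \<sigma> + D2 t \<sigma>\<bar> \<le> e * t" using elim abs_triangle_ineq[of "D1 t \<sigma>" "D2 t \<sigma>"] by fastforce
    qed
  qed
qed

lemma UO_le:
  assumes "UO D S" "eventually (\<lambda>t. \<forall>\<sigma>\<in>S. \<bar>D' t \<sigma>\<bar> \<le> \<bar>D t \<sigma>\<bar>) (at_right 0)"
  shows "UO D' S"
  unfolding UO_def
proof (intro allI impI)
  fix e :: real assume "e > 0"
  from UOD[OF assms(1) this] assms(2)
  show "eventually (\<lambda>t. \<forall>\<sigma>\<in>S. \<bar>D' t \<sigma>\<bar> \<le> e * t) (at_right 0)"
    by eventually_elim (meson order_trans)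
qed

lemma UO_cmult: "UO D S \<Longrightarrow> UO (\<lambda>t \<sigma>. c * D t \<sigma>) S"
  unfolding UO_def
proof (intro allI impI)
  fix e :: real assume f: "\<forall>e>0. eventually (\<lambda>t. \<forall>\<sigma>\<in>S. \<bar>D t \<sigma>\<bar> \<le> e * t) (at_right 0)" and e: "e > 0"
  have "e/(\<bar>c\<bar>+1) > 0" using e by (simp add: add_pos_nonneg)
  from f[rule_format, OF this]
  show "eventually (\<lambda>t. \<forall>\<sigma>\<in>S. \<bar>c * D t \<sigma>\<bar> \<le> e * t) (at_right 0)"
  proof (rule eventually_mono)
    fix t assume h: "\<forall>\<sigma>\<in>S. \<bar>D t \<sigma>\<bar> \<le> e / (\<bar>c\<bar> + 1) * t"
    show "\<forall>\<sigma>\<in>S. \<bar>c * D t \<sigma>\<bar> \<le> e * t"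
    proof
      fix \<sigma> assume s: "\<sigma> \<in> S"
      have "\<bar>c * D t \<sigma>\<bar> \<le> (\<bar>c\<bar>+1) * \<bar>D t \<sigma>\<bar>" by (simp add: abs_mult mult_right_mono)
      also have "\<dots> \<le> (\<bar>c\<bar>+1) * (e / (\<bar>c\<bar> + 1) * t)" using h s by (intro mult_left_mono) auto
      also have "\<dots> = e * t" by simp
      finally show "\<bar>c * D t \<sigma>\<bar> \<le> e * t" .
    qed
  qed
qed

lemma UO_diff: "UO D1 S \<Longrightarrow> UO D2 S \<Longrightarrow> UO (\<lambda>t \<sigma>. D1 t \<sigma> - D2 t \<sigma>) S"
  using UO_add[of D1 S "\<lambda>t \<sigma>. (-1) * D2 t \<sigma>"] UO_cmult[of D2 S "-1"] by simp

lemma UO_subset: "UO D S \<Longrightarrow> S' \<subseteq> S \<Longrightarrow> UO D S'"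
  unfolding UO_def
proof (intro allI impI)
  fix e :: real assume a: "\<forall>e>0. eventually (\<lambda>t. \<forall>\<sigma>\<in>S. \<bar>D t \<sigma>\<bar> \<le> e * t) (at_right 0)" "S' \<subseteq> S" "e > 0"
  from a(1)[rule_format, OF a(3)]
  show "eventually (\<lambda>t. \<forall>\<sigma>\<in>S'. \<bar>D t \<sigma>\<bar> \<le> e * t) (at_right 0)"
    by (rule eventually_mono) (use a(2) in blast)
qed

lemma UO_zero: "UO (\<lambda>t \<sigma>. 0) S"
  unfolding UO_def by (auto intro: eventually_mono[OF ev_pos])

lemma UO_sum: "finite I \<Longrightarrow> (\<forall>m\<in>I. UO (D m) S) \<Longrightarrow> UO (\<lambda>t \<sigma>. \<Sum>m\<in>I. D m t \<sigma>) S"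
proof (induction I rule: finite_induct)
  case empty thus ?case by (simp add: UO_zero)
next
  case (insert m I)
  thus ?case using UO_add[of "D m" S "\<lambda>t \<sigma>. \<Sum>m\<in>I. D m t \<sigma>"] by simp
qed

lemma UO_mult_bounded:
  assumes "UO D S" "eventually (\<lambda>t. \<forall>\<sigma>\<in>S. \<bar>g t \<sigma>\<bar> \<le> M) (at_right 0)"
  shows "UO (\<lambda>t \<sigma>. g t \<sigma> * D t \<sigma>) S"
proof -
  have "UO (\<lambda>t \<sigma>. (\<bar>M\<bar>+1) * D t \<sigma>) S" by (rule UO_cmult[OF assms(1)])
  moreover have "eventually (\<lambda>t. \<forall>\<sigma>\<in>S. \<bar>g t \<sigma> * D t \<sigma>\<bar> \<le> \<bar>(\<bar>M\<bar>+1) * D t \<sigma>\<bar>) (at_right 0)"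
    using assms(2) by eventually_elim (auto simp: abs_mult intro!: mult_right_mono)
  ultimately show ?thesis by (rule UO_le)
qed

lemma lo_UO_mult:
  assumes "lo f" "eventually (\<lambda>t. \<forall>\<sigma>\<in>S. \<bar>g t \<sigma>\<bar> \<le> M) (at_right 0)"
  shows "UO (\<lambda>t \<sigma>. f t * g t \<sigma>) S"
proof -
  have "UO (\<lambda>t \<sigma>. f t) S" unfolding UO_def
  proof (intro allI impI)
    fix e :: real assume "e > 0"
    from loD[OF assms(1) this] show "eventually (\<lambda>t. \<forall>\<sigma>\<in>S. \<bar>f t\<bar> \<le> e * t) (at_right 0)"
      by (rule eventually_mono) simp
  qed
  from UO_mult_bounded[OF this assms(2)] show ?thesis by (simp add: mult.commute)
qed

lemma UO_lo: "UO D S \<Longrightarrow> \<sigma> \<in> S \<Longrightarrow> lo (\<lambda>t. D t \<sigma>)"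
proof -
  assume a: "UO D S" "\<sigma> \<in> S"
  show ?thesis unfolding lo_def
  proof (intro allI impI)
    fix e :: real assume "e > 0"
    from UOD[OF a(1) this] show "eventually (\<lambda>t. \<bar>D t \<sigma>\<bar> \<le> e * t) (at_right 0)"
      by (rule eventually_mono) (use a(2) in blast)
  qed
qed

lemma lo_UO: "lo (\<lambda>t. D t \<sigma>) \<Longrightarrow> UO D {\<sigma>}"
  unfolding UO_def lo_def by simp

lemma UO_powr:
  assumes "c > 1" "eventually (\<lambda>t. \<forall>\<sigma>\<in>S. \<bar>R t \<sigma>\<bar> \<le> C * t powr c) (at_right 0)"
  shows "UO R S"
  unfolding UO_def
proof (intro allI impI)
  fix e :: real assume e: "e > 0"
  have "eventually (\<lambda>t. \<bar>C * t powr c\<bar> \<le> e * t) (at_right 0)" by (rule loD[OF lo_powr[OF assms(1)] e])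
  with assms(2) show "eventually (\<lambda>t. \<forall>\<sigma>\<in>S. \<bar>R t \<sigma>\<bar> \<le> e * t) (at_right 0)"
    by eventually_elim force
qed

definition pev :: "((real \<Rightarrow> real) \<times> real) list \<Rightarrow> real \<Rightarrow> real \<Rightarrow> real" where
  "pev L t \<sigma> = (\<Sum>p\<leftarrow>L. fst p \<sigma> * t powr snd p)"

lemma pev_Nil[simp]: "pev [] t \<sigma> = 0" by (simp add: pev_def)
lemma pev_Cons[simp]: "pev (p # L) t \<sigma> = fst p \<sigma> * t powr snd p + pev L t \<sigma>" by (simp add: pev_def)
lemma pev_append[simp]: "pev (L1 @ L2) t \<sigma> = pev L1 t \<sigma> + pev L2 t \<sigma>" by (simp add: pev_def)

definition EXP :: "(real \<Rightarrow> real \<Rightarrow> real) \<Rightarrow> real set \<Rightarrow> ((real \<Rightarrow> real) \<times> real) list \<Rightarrow> bool" where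
  "EXP D S L \<longleftrightarrow> (\<forall>p\<in>set L. continuous_on S (fst p) \<and> snd p \<ge> 0) \<and> UO (\<lambda>t \<sigma>. D t \<sigma> - pev L t \<sigma>) S"

definition prodLF :: "(real \<times> real) list \<Rightarrow> ((real \<Rightarrow> real) \<times> real) list \<Rightarrow> ((real \<Rightarrow> real) \<times> real) list" where
  "prodLF P L = concat (map (\<lambda>p. map (\<lambda>q. (\<lambda>\<sigma>. fst p * fst q \<sigma>, snd p + snd q)) L) P)"

lemma pev_prodLF: "t > 0 \<Longrightarrow> pev (prodLF P L) t \<sigma> = pl P t * pev L t \<sigma>"
proof (induction P)
  case Nil thus ?case by (simp add: prodLF_def)
next
  case (Cons p P)
  have "pev (map (\<lambda>q. (\<lambda>\<sigma>. fst p * fst q \<sigma>, snd p + snd q)) L) t \<sigma> = fst p * t powr snd p * pev L t \<sigma>"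
    by (induction L) (auto simp: powr_add algebra_simps)
  thus ?case using Cons by (simp add: prodLF_def algebra_simps)
qed

lemma prodLF_props:
  assumes "nonneg P" "\<forall>q\<in>set L. continuous_on S (fst q) \<and> snd q \<ge> 0"
  shows "\<forall>q\<in>set (prodLF P L). continuous_on S (fst q) \<and> snd q \<ge> 0"
  using assms unfolding prodLF_def nonneg_def by (auto intro!: continuous_on_mult_left)

lemma pev_bounded:
  assumes "\<forall>p\<in>set L. snd p \<ge> 0 \<and> (\<forall>\<sigma>\<in>S. \<bar>fst p \<sigma>\<bar> \<le> B)"
  shows "eventually (\<lambda>t. \<forall>\<sigma>\<in>S. \<bar>pev L t \<sigma>\<bar> \<le> real (length L) * B) (at_right 0)"
proof -
  have "eventually (\<lambda>t. t \<le> 1) (at_right (0::real))" by (rule ev_le1) simp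
  thus ?thesis using ev_pos
  proof eventually_elim
    case (elim t)
    show ?case
    proof
      fix \<sigma> assume s: "\<sigma> \<in> S"
      show "\<bar>pev L t \<sigma>\<bar> \<le> real (length L) * B" using assms
      proof (induction L)
        case Nil thus ?case by simp
      next
        case (Cons p L)
        have "t powr snd p \<le> t powr 0" using elim Cons.prems by (intro powr_mono') auto
        hence tp: "t powr snd p \<le> 1" "t powr snd p \<ge> 0" using elim by simp_all
        have "\<bar>fst p \<sigma>\<bar> \<le> B" using Cons.prems s by auto
        hence "\<bar>fst p \<sigma> * t powr snd p\<bar> \<le> B" using tp
          by (simp add: abs_mult) (meson abs_ge_zero mult_left_le order_trans)
        moreover have "\<bar>pev L t \<sigma>\<bar> \<le> real (length L) * B" using Cons by auto
        ultimately show ?case using abs_triangle_ineq[of "fst p \<sigma> * t powr snd p" "pev L t \<sigma>"]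
          by (simp add: algebra_simps)
      qed
    qed
  qed
qed

lemma cont_bounded_compact:
  assumes "continuous_on S f" "compact K" "K \<subseteq> S"
  shows "\<exists>B. \<forall>\<sigma>\<in>K. \<bar>f \<sigma>\<bar> \<le> (B::real)"
proof -
  have "compact (f ` K)" using assms by (intro compact_continuous_image continuous_on_subset[OF assms(1)])
  hence "bounded (f ` K)" by (rule compact_imp_bounded)
  then obtain B where "\<forall>x\<in>f ` K. norm x \<le> B" unfolding bounded_iff by blast
  thus ?thesis by auto
qed

lemma list_bounded_compact:
  assumes "\<forall>p\<in>set L. continuous_on S (fst p)" "compact K" "K \<subseteq> S"
  shows "\<exists>B. \<forall>p\<in>set L. \<forall>\<sigma>\<in>K. \<bar>fst p \<sigma>\<bar> \<le> (B::real)"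
  using assms(1)
proof (induction L)
  case Nil thus ?case by simp
next
  case (Cons p L)
  obtain B1 where B1: "\<forall>\<sigma>\<in>K. \<bar>fst p \<sigma>\<bar> \<le> B1"
    using cont_bounded_compact[OF _ assms(2,3), of "fst p"] Cons.prems by auto
  obtain B2 where B2: "\<forall>p\<in>set L. \<forall>\<sigma>\<in>K. \<bar>fst p \<sigma>\<bar> \<le> B2" using Cons by auto
  show ?case by (rule exI[of _ "max B1 B2"]) (use B1 B2 in force)
qed

lemma EXP_subset: "EXP D S L \<Longrightarrow> S' \<subseteq> S \<Longrightarrow> EXP D S' L"
  unfolding EXP_def by (auto intro: continuous_on_subset UO_subset)

definition negL :: "((real \<Rightarrow> real) \<times> real) list \<Rightarrow> ((real \<Rightarrow> real) \<times> real) list" where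
  "negL L = map (\<lambda>p. (\<lambda>\<sigma>. - fst p \<sigma>, snd p)) L"

lemma pev_negL[simp]: "pev (negL L) t \<sigma> = - pev L t \<sigma>"
  by (induction L) (auto simp: negL_def)

lemma EXP_diff:
  assumes "EXP D1 S L1" "EXP D2 S L2"
  shows "EXP (\<lambda>t \<sigma>. D1 t \<sigma> - D2 t \<sigma>) S (L1 @ negL L2)"
proof -
  have "UO (\<lambda>t \<sigma>. (D1 t \<sigma> - pev L1 t \<sigma>) - (D2 t \<sigma> - pev L2 t \<sigma>)) S"
    using assms unfolding EXP_def by (intro UO_diff[of "\<lambda>t \<sigma>. D1 t \<sigma> - pev L1 t \<sigma>" S "\<lambda>t \<sigma>. D2 t \<sigma> - pev L2 t \<sigma>"]) auto
  hence "UO (\<lambda>t \<sigma>. D1 t \<sigma> - D2 t \<sigma> - pev (L1 @ negL L2) t \<sigma>) S"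
    by (simp add: algebra_simps)
  moreover have "\<forall>p\<in>set (L1 @ negL L2). continuous_on S (fst p) \<and> snd p \<ge> 0"
  proof
    fix p assume p: "p \<in> set (L1 @ negL L2)"
    show "continuous_on S (fst p) \<and> snd p \<ge> 0"
    proof (cases "p \<in> set L1")
      case True thus ?thesis using assms(1) unfolding EXP_def by blast
    next
      case False
      then obtain q where q: "q \<in> set L2" "p = (\<lambda>\<sigma>. - fst q \<sigma>, snd q)" using p by (auto simp: negL_def)
      have "continuous_on S (fst q)" "snd q \<ge> 0" using q(1) assms(2) unfolding EXP_def by auto
      thus ?thesis using q(2) continuous_on_minus by fastforce
    qed
  qed
  ultimately show ?thesis unfolding EXP_def by blast
qed


definition gsum :: "(real \<times> real) list \<Rightarrow> real \<Rightarrow> real" where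
  "gsum L e = (\<Sum>p\<leftarrow>filter (\<lambda>p. snd p = e) L. fst p)"

definition gsumF :: "((real \<Rightarrow> real) \<times> real) list \<Rightarrow> real \<Rightarrow> real \<Rightarrow> real" where
  "gsumF L e \<sigma> = (\<Sum>p\<leftarrow>filter (\<lambda>p. snd p = e) L. fst p \<sigma>)"

definition mapS :: "((real \<Rightarrow> real) \<times> real) list \<Rightarrow> real \<Rightarrow> (real \<times> real) list" where
  "mapS L \<sigma> = map (\<lambda>p. (fst p \<sigma>, snd p)) L"

lemma pev_mapS: "pev L t \<sigma> = pl (mapS L \<sigma>) t"
  by (induction L) (auto simp: mapS_def)

lemma gsum_mapS: "gsum (mapS L \<sigma>) e = gsumF L e \<sigma>"
  by (induction L) (auto simp: mapS_def gsum_def gsumF_def)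

lemma set_mapS: "set (map snd (mapS L \<sigma>)) = set (map snd L)"
  by (auto simp: mapS_def)

lemma gsum_Cons: "gsum (p # L) e = (if snd p = e then fst p else 0) + gsum L e"
  by (simp add: gsum_def)

lemma gsum_notin: "e \<notin> set (map snd L) \<Longrightarrow> gsum L e = 0"
proof -
  assume "e \<notin> set (map snd L)"
  hence "filter (\<lambda>p. snd p = e) L = []" by (induction L) auto
  thus ?thesis by (simp add: gsum_def)
qed

lemma regroup: "finite F \<Longrightarrow> set (map snd L) \<subseteq> F \<Longrightarrow> pl L t = (\<Sum>e\<in>F. gsum L e * t powr e)"
proof (induction L)
  case Nil thus ?case by (simp add: gsum_def)
next
  case (Cons p L)
  have bF: "snd p \<in> F" using Cons.prems by auto
  have "(\<Sum>e\<in>F. gsum (p # L) e * t powr e) = (\<Sum>e\<in>F. (if snd p = e then fst p * t powr e else 0) + gsum L e * t powr e)"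
    by (intro sum.cong) (auto simp: gsum_Cons algebra_simps)
  also have "\<dots> = fst p * t powr snd p + (\<Sum>e\<in>F. gsum L e * t powr e)"
    using bF Cons.prems(1) by (simp add: sum.distrib sum.delta)
  also have "(\<Sum>e\<in>F. gsum L e * t powr e) = pl L t" using Cons by auto
  finally show ?case by simp
qed

lemma grouping:
  assumes lo: "lo (\<lambda>t. pl L t)" and e1: "e \<le> 1"
  shows "gsum L e = 0"
proof (rule ccontr)
  assume ne: "gsum L e \<noteq> 0"
  define F where "F = set (map snd L)"
  define S where "S = {e\<in>F. gsum L e \<noteq> 0}"
  have finF: "finite F" by (simp add: F_def)
  have finS: "finite S" using finF by (simp add: S_def)
  have eS: "e \<in> S" using ne gsum_notin[of e L] by (auto simp: S_def F_def)
  define m where "m = Min S"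
  have mS: "m \<in> S" unfolding m_def using finS eS by (intro Min_in) auto
  have me: "m \<le> e" unfolding m_def using finS eS by (intro Min_le) auto
  have gt: "e' > m" if "e' \<in> S - {m}" for e'
  proof -
    have "m \<le> e'" unfolding m_def using finS that by (intro Min_le) auto
    thus ?thesis using that by auto
  qed
  have reg: "pl L t = (\<Sum>e\<in>S. gsum L e * t powr e)" for t
  proof -
    have "pl L t = (\<Sum>e\<in>F. gsum L e * t powr e)" by (rule regroup[OF finF]) (simp add: F_def)
    also have "\<dots> = (\<Sum>e\<in>S. gsum L e * t powr e)"
      by (rule sum.mono_neutral_right[OF finF]) (auto simp: S_def)
    finally show ?thesis .
  qed
  have eq: "pl L t / t powr m = gsum L m + (\<Sum>e\<in>S - {m}. gsum L e * t powr (e - m))" if "t > 0" for t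
  proof -
    have "pl L t / t powr m = (\<Sum>e\<in>S. gsum L e * t powr (e - m))"
      unfolding reg sum_divide_distrib using that by (intro sum.cong) (auto simp: powr_diff)
    also have "\<dots> = gsum L m * t powr (m - m) + (\<Sum>e\<in>S - {m}. gsum L e * t powr (e - m))"
      using finS mS by (subst sum.remove) auto
    finally show ?thesis using that by simp
  qed
  have "((\<lambda>t. gsum L m + (\<Sum>e\<in>S - {m}. gsum L e * t powr (e - m))) \<longlongrightarrow> gsum L m + 0) (at_right 0)"
  proof (intro tendsto_add tendsto_const tendsto_null_sum)
    fix e' assume "e' \<in> S - {m}"
    hence "e' - m > 0" using gt by simp
    from tendsto_mult_right_zero[OF powr_tendsto0[OF this]]
    show "((\<lambda>t. gsum L e' * t powr (e' - m)) \<longlongrightarrow> 0) (at_right 0)" .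
  qed
  moreover have ev: "eventually (\<lambda>t. gsum L m + (\<Sum>e\<in>S - {m}. gsum L e * t powr (e - m)) = pl L t / t powr m) (at_right 0)"
    by (rule eventually_mono[OF ev_pos]) (simp add: eq)
  ultimately have L1: "((\<lambda>t. pl L t / t powr m) \<longlongrightarrow> gsum L m) (at_right 0)"
    using tendsto_cong[OF ev] by simp
  have L0: "((\<lambda>t. pl L t / t) \<longlongrightarrow> 0) (at_right 0)"
    using lo unfolding little_o_t_iff_lo[symmetric] little_o_t_def .
  have "((\<lambda>t. pl L t / t powr m) \<longlongrightarrow> 0) (at_right 0)"
  proof (rule Lim_null_comparison)
    show "((\<lambda>t. \<bar>pl L t / t\<bar>) \<longlongrightarrow> 0) (at_right 0)" using tendsto_rabs_zero[OF L0] .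
    have "eventually (\<lambda>t. t \<le> 1) (at_right (0::real))" by (rule ev_le1) simp
    thus "eventually (\<lambda>t. norm (pl L t / t powr m) \<le> \<bar>pl L t / t\<bar>) (at_right 0)" using ev_pos
    proof eventually_elim
      case (elim t)
      have "t powr 1 \<le> t powr m" using elim me e1 by (intro powr_mono') auto
      hence tm: "t \<le> t powr m" using elim by simp
      have "\<bar>pl L t\<bar> / t powr m \<le> \<bar>pl L t\<bar> / t"
        using tm elim by (intro divide_left_mono) auto
      thus ?case using elim by (simp add: abs_divide)
    qed
  qed
  with L1 have "gsum L m = 0" using lim_unique_right by blast
  thus False using mS by (simp add: S_def)
qed

lemma gsumF_bound:
  assumes "\<forall>p\<in>set L. \<bar>fst p \<sigma>\<bar> \<le> B"
  shows "\<bar>gsumF L e \<sigma>\<bar> \<le> real (length L) * B"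
  using assms
proof (induction L)
  case Nil thus ?case by (simp add: gsumF_def)
next
  case (Cons p L)
  have ih: "\<bar>gsumF L e \<sigma>\<bar> \<le> real (length L) * B" using Cons by auto
  have b: "\<bar>fst p \<sigma>\<bar> \<le> B" using Cons.prems by auto
  have "gsumF (p # L) e \<sigma> = (if snd p = e then fst p \<sigma> else 0) + gsumF L e \<sigma>"
    by (simp add: gsumF_def)
  moreover have "\<bar>(if snd p = e then fst p \<sigma> else 0)\<bar> \<le> B" using b by (cases "snd p = e") auto
  ultimately show ?case using ih abs_triangle_ineq[of "(if snd p = e then fst p \<sigma> else 0)" "gsumF L e \<sigma>"]
    by (simp add: algebra_simps)
qed

lemma EXP_point_zero:
  assumes "EXP D S L" "\<sigma> \<in> S" "lo (\<lambda>t. D t \<sigma>)" "e \<le> 1"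
  shows "gsumF L e \<sigma> = 0"
proof -
  have "lo (\<lambda>t. D t \<sigma> - pev L t \<sigma>)" using assms(1,2) unfolding EXP_def using UO_lo by blast
  from lo_diff[OF assms(3) this] have "lo (\<lambda>t. pev L t \<sigma>)" by simp
  hence "lo (\<lambda>t. pl (mapS L \<sigma>) t)" by (simp add: pev_mapS)
  from grouping[OF this assms(4)] show ?thesis by (simp add: gsum_mapS)
qed

lemma UO_grouped:
  assumes exp: "EXP D S L" and K: "compact K" "K \<subseteq> S"
    and z: "\<forall>\<sigma>\<in>K. \<forall>e\<le>1. gsumF L e \<sigma> = 0"
  shows "UO D K"
proof -
  obtain B where B: "\<forall>p\<in>set L. \<forall>\<sigma>\<in>K. \<bar>fst p \<sigma>\<bar> \<le> B"
    using list_bounded_compact[OF _ K] exp unfolding EXP_def by blast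
  define F where "F = set (map snd L)"
  define F1 where "F1 = {e\<in>F. e > 1}"
  have finF: "finite F" by (simp add: F_def)
  have finF1: "finite F1" using finF by (simp add: F1_def)
  have red: "pev L t \<sigma> = (\<Sum>e\<in>F1. gsumF L e \<sigma> * t powr e)" if "\<sigma> \<in> K" for t \<sigma>
  proof -
    have "pev L t \<sigma> = (\<Sum>e\<in>F. gsum (mapS L \<sigma>) e * t powr e)"
      unfolding pev_mapS by (rule regroup[OF finF]) (use set_mapS[of L \<sigma>] in \<open>simp add: F_def\<close>)
    also have "\<dots> = (\<Sum>e\<in>F. gsumF L e \<sigma> * t powr e)" by (simp add: gsum_mapS)
    also have "\<dots> = (\<Sum>e\<in>F1. gsumF L e \<sigma> * t powr e)"
    proof (intro sum.mono_neutral_right[OF finF])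
      show "F1 \<subseteq> F" by (auto simp: F1_def)
      show "\<forall>i\<in>F - F1. gsumF L i \<sigma> * t powr i = 0"
      proof
        fix i assume "i \<in> F - F1"
        hence "i \<le> 1" by (auto simp: F1_def)
        thus "gsumF L i \<sigma> * t powr i = 0" using z that by simp
      qed
    qed
    finally show ?thesis .
  qed
  have "UO (\<lambda>t \<sigma>. pev L t \<sigma>) K"
  proof (cases "F1 = {}")
    case True
    have "UO (\<lambda>t \<sigma>. 0) K" by (rule UO_zero)
    thus ?thesis by (rule UO_le) (rule eventually_mono[OF ev_pos], simp add: red True)
  next
    case False
    define c where "c = Min F1"
    have c1: "c > 1" unfolding c_def using finF1 False by (subst Min_gr_iff) (auto simp: F1_def)
    have cle: "c \<le> e" if "e \<in> F1" for e unfolding c_def using finF1 that by (intro Min_le) auto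
    define C where "C = real (card F1) * (real (length L) * B)"
    show ?thesis
    proof (rule UO_powr[OF c1])
      have "eventually (\<lambda>t. t \<le> 1) (at_right (0::real))" by (rule ev_le1) simp
      thus "eventually (\<lambda>t. \<forall>\<sigma>\<in>K. \<bar>pev L t \<sigma>\<bar> \<le> C * t powr c) (at_right 0)" using ev_pos
      proof eventually_elim
        case (elim t)
        show ?case
        proof
          fix \<sigma> assume s: "\<sigma> \<in> K"
          have "\<bar>pev L t \<sigma>\<bar> \<le> (\<Sum>e\<in>F1. \<bar>gsumF L e \<sigma> * t powr e\<bar>)"
            unfolding red[OF s] by (rule sum_abs)
          also have "\<dots> \<le> (\<Sum>e\<in>F1. (real (length L) * B) * t powr c)"
          proof (rule sum_mono)
            fix e assume e: "e \<in> F1"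
            have g: "\<bar>gsumF L e \<sigma>\<bar> \<le> real (length L) * B" using B s by (intro gsumF_bound) auto
            have "t powr e \<le> t powr c" using cle[OF e] elim by (intro powr_mono') auto
            hence "\<bar>gsumF L e \<sigma> * t powr e\<bar> \<le> \<bar>gsumF L e \<sigma>\<bar> * t powr c"
              by (simp add: abs_mult mult_left_mono)
            also have "\<dots> \<le> (real (length L) * B) * t powr c" using g by (intro mult_right_mono) auto
            finally show "\<bar>gsumF L e \<sigma> * t powr e\<bar> \<le> (real (length L) * B) * t powr c" .
          qed
          also have "\<dots> = C * t powr c" by (simp add: C_def)
          finally show "\<bar>pev L t \<sigma>\<bar> \<le> C * t powr c" .
        qed
      qed
    qed
  qed
  moreover have "UO (\<lambda>t \<sigma>. D t \<sigma> - pev L t \<sigma>) K" using exp K(2) unfolding EXP_def by (blast intro: UO_subset)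
  ultimately have "UO (\<lambda>t \<sigma>. (D t \<sigma> - pev L t \<sigma>) + pev L t \<sigma>) K" by (intro UO_add)
  thus ?thesis by simp
qed


lemma sum_zero_pow: "n > 0 \<Longrightarrow> (\<Sum>m<n. f m * (0::real) ^ m) = f 0"
proof -
  assume "n > 0"
  have "(\<Sum>m<n. f m * (0::real) ^ m) = (\<Sum>m<n. if m = 0 then f 0 else 0)"
    by (intro sum.cong) auto
  also have "\<dots> = f 0" using \<open>n > 0\<close> by (simp add: sum.delta)
  finally show ?thesis .
qed

lemma taylor1:
  fixes diff :: "nat \<Rightarrow> real \<Rightarrow> real"
  assumes n: "n > 0"
    and D: "\<forall>m<n. \<forall>x. min c x0 \<le> x \<and> x \<le> max c x0 \<longrightarrow> (diff m has_real_derivative diff (Suc m) x) (at x)"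
  shows "\<exists>\<xi>. \<bar>\<xi> - c\<bar> \<le> \<bar>x0 - c\<bar> \<and>
           diff 0 x0 = (\<Sum>m<n. diff m c / fact m * (x0 - c)^m) + diff n \<xi> / fact n * (x0 - c)^n"
proof (cases "x0 = c")
  case True
  have "(\<Sum>m<n. diff m c / fact m * (x0 - c)^m) = diff 0 c / fact 0"
    using sum_zero_pow[OF n, of "\<lambda>m. diff m c / fact m"] True by simp
  thus ?thesis using True n by (intro exI[of _ c]) simp
next
  case False
  have "\<exists>t. (if x0 < c then x0 < t \<and> t < c else c < t \<and> t < x0) \<and>
    diff 0 x0 = (\<Sum>m<n. (diff m c / fact m) * (x0 - c)^m) + (diff n t / fact n) * (x0 - c)^n"
  proof (rule Taylor[of n diff "diff 0" "min c x0" "max c x0" c x0])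
    show "0 < n" by fact
    show "diff 0 = diff 0" ..
    show "\<forall>m t. m < n \<and> min c x0 \<le> t \<and> t \<le> max c x0 \<longrightarrow> DERIV (diff m) t :> diff (Suc m) t"
      using D by blast
  qed (use False in auto)
  then obtain \<xi> where \<xi>: "(if x0 < c then x0 < \<xi> \<and> \<xi> < c else c < \<xi> \<and> \<xi> < x0)"
    "diff 0 x0 = (\<Sum>m<n. (diff m c / fact m) * (x0 - c)^m) + (diff n \<xi> / fact n) * (x0 - c)^n" by blast
  have "\<bar>\<xi> - c\<bar> \<le> \<bar>x0 - c\<bar>" using \<xi>(1) by (cases "x0 < c") auto
  thus ?thesis using \<xi>(2) by blast
qed

definition mix :: "(nat \<Rightarrow> real \<Rightarrow> real) \<Rightarrow> (nat \<Rightarrow> real) \<Rightarrow> nat set \<Rightarrow> real \<Rightarrow> nat \<Rightarrow> real" where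
  "mix pr r Q t = (\<lambda>i. if i \<in> Q then pr i t else r i)"

lemma mix_empty[simp]: "mix pr r {} t = r" by (simp add: mix_def)

lemma mix_insert: "mix pr r (insert q Q) t = (mix pr r Q t)(q := pr q t)"
  by (rule ext) (simp add: mix_def)

lemma mix_notin: "q \<notin> Q \<Longrightarrow> (mix pr r Q t)(q := r q) = mix pr r Q t"
  by (rule ext) (simp add: mix_def)

lemma powr_pow_le:
  assumes "\<bar>u\<bar> \<le> K * t powr a" "t > 0"
  shows "\<bar>u\<bar> ^ n \<le> K ^ n * t powr (a * real n)"
proof -
  have "K * t powr a \<ge> 0" using assms(1) by linarith
  have "\<bar>u\<bar> ^ n \<le> (K * t powr a) ^ n" using assms(1) by (intro power_mono) auto
  also have "\<dots> = K ^ n * (t powr a) ^ n" by (simp add: power_mult_distrib)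
  also have "(t powr a) ^ n = t powr (a * real n)" using assms(2) by (simp add: powr_realpow[symmetric] powr_powr)
  finally show ?thesis .
qed


lemma pev_concat: "pev (concat (map F xs)) t \<sigma> = (\<Sum>x\<leftarrow>xs. pev (F x) t \<sigma>)"
  by (induction xs) auto

lemma ev_all_lt:
  assumes "\<forall>i<(N::nat). eventually (P i) F"
  shows "eventually (\<lambda>t. \<forall>i<N. P i t) F"
proof -
  have "eventually (\<lambda>t. \<forall>i\<in>{..<N}. P i t) F"
    by (rule eventually_ball_finite) (use assms in auto)
  thus ?thesis by (rule eventually_mono) auto
qed

lemma Exp_main:
  assumes U: "openN (Suc N) U" and c0: "pair_pt N r s0 \<in> U"
    and pr: "\<forall>i<N. pr i \<in> Rot \<and> pr i 0 = r i"
    and fin: "finite Q"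
  shows "Q \<subseteq> {..<N} \<Longrightarrow> smooth (Suc N) U h \<Longrightarrow>
         \<exists>\<delta>>0. \<exists>L. EXP (\<lambda>t \<sigma>. h (pair_pt N (mix pr r Q t) \<sigma>)) (ball s0 \<delta>) L"
  using fin
proof (induction Q arbitrary: h rule: finite_induct)
  case empty
  obtain \<eta> where \<eta>: "\<eta> > 0" "\<forall>q\<in>RN (Suc N). (\<forall>i<Suc N. \<bar>q i - pair_pt N r s0 i\<bar> < \<eta>) \<longrightarrow> q \<in> U"
    using near_open[OF U c0] by blast
  have inU: "pair_pt N r \<sigma> \<in> U" if "\<sigma> \<in> ball s0 \<eta>" for \<sigma>
  proof -
    have "\<forall>i<Suc N. \<bar>pair_pt N r \<sigma> i - pair_pt N r s0 i\<bar> < \<eta>"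
      using that \<eta>(1) by (auto simp: pair_pt_def dist_real_def abs_minus_commute)
    thus ?thesis using \<eta>(2) pair_pt_RN by blast
  qed
  have cont: "continuous_on (ball s0 \<eta>) (\<lambda>\<sigma>. h (pair_pt N r \<sigma>))"
    by (rule cont_line[OF smooth_cont[OF empty.prems(2)]]) (use inU in blast)
  show ?case
  proof (intro exI[of _ \<eta>] conjI exI[of _ "[(\<lambda>\<sigma>. h (pair_pt N r \<sigma>), 0)]"])
    show "\<eta> > 0" by fact
    show "EXP (\<lambda>t \<sigma>. h (pair_pt N (mix pr r {} t) \<sigma>)) (ball s0 \<eta>) [(\<lambda>\<sigma>. h (pair_pt N r \<sigma>), 0)]"
      unfolding EXP_def
    proof
      show "\<forall>p\<in>set [(\<lambda>\<sigma>. h (pair_pt N r \<sigma>), 0::real)]. continuous_on (ball s0 \<eta>) (fst p) \<and> snd p \<ge> 0"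
        using cont by simp
      show "UO (\<lambda>t \<sigma>. h (pair_pt N (mix pr r {} t) \<sigma>) - pev [(\<lambda>\<sigma>. h (pair_pt N r \<sigma>), 0)] t \<sigma>) (ball s0 \<eta>)"
        by (rule UO_le[OF UO_zero]) (rule eventually_mono[OF ev_pos], simp)
    qed
  qed
next
  case (insert q Q')
  have qN: "q < N" and Q'N: "Q' \<subseteq> {..<N}" using insert.prems(1) by auto
  have hs: "smooth (Suc N) U h" by (rule insert.prems(2))
  have qM: "q < Suc N" using qN by simp
  define c0p where "c0p = pair_pt N r s0"
  define hh where "hh m = (partial q ^^ m) h" for m
  have hhs: "smooth (Suc N) U (hh m)" for m unfolding hh_def by (rule smooth_partial_pow[OF hs qM])
  have hh_Suc: "hh (Suc m) = partial q (hh m)" for m by (simp add: hh_def)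
  have hh0: "hh 0 = h" by (simp add: hh_def)
  define u where "u t = pr q t - r q" for t
  have prq: "pr q \<in> Rot" "pr q 0 = r q" using pr qN by auto
  obtain K a where Ka: "a > 0" "eventually (\<lambda>t. \<bar>pr q t - pr q 0\<bar> \<le> K * t powr a) (at_right 0)"
    using Rot_bound[OF prq(1)] by blast
  have uK: "eventually (\<lambda>t. \<bar>u t\<bar> \<le> K * t powr a) (at_right 0)" using Ka(2) prq(2) by (simp add: u_def)
  have RFu: "RF u" unfolding u_def by (rule RF_diff[OF Rot_RF[OF prq(1)] RF_const])
  define n where "n = nat \<lceil>1/a\<rceil> + 1"
  have n0: "n > 0" by (simp add: n_def)
  have na: "a * real n > 1"
  proof -
    have "real (nat \<lceil>1/a\<rceil>) \<ge> 1/a" by linarith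
    hence "real n > 1/a" by (simp add: n_def)
    hence "a * real n > a * (1/a)" using Ka(1) by (intro mult_strict_left_mono) auto
    thus ?thesis using Ka(1) by simp
  qed
  have "\<forall>m. \<exists>DL. m < n \<longrightarrow> fst DL > 0 \<and> EXP (\<lambda>t \<sigma>. hh m (pair_pt N (mix pr r Q' t) \<sigma>)) (ball s0 (fst DL)) (snd DL)"
  proof
    fix m
    obtain \<delta> L where "\<delta> > 0" "EXP (\<lambda>t \<sigma>. hh m (pair_pt N (mix pr r Q' t) \<sigma>)) (ball s0 \<delta>) L"
      using insert.IH[OF Q'N hhs[of m]] by blast
    thus "\<exists>DL. m < n \<longrightarrow> fst DL > 0 \<and> EXP (\<lambda>t \<sigma>. hh m (pair_pt N (mix pr r Q' t) \<sigma>)) (ball s0 (fst DL)) (snd DL)"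
      by (intro exI[of _ "(\<delta>, L)"]) simp
  qed
  then obtain DL where DL: "\<forall>m. m < n \<longrightarrow> fst (DL m) > 0 \<and> EXP (\<lambda>t \<sigma>. hh m (pair_pt N (mix pr r Q' t) \<sigma>)) (ball s0 (fst (DL m))) (snd (DL m))"
    by (rule choice[THEN exE]) blast
  define \<delta>f where "\<delta>f m = fst (DL m)" for m
  define Lf where "Lf m = snd (DL m)" for m
  have \<delta>fpos: "\<delta>f m > 0" if "m < n" for m using DL that by (simp add: \<delta>f_def)
  have Lf: "EXP (\<lambda>t \<sigma>. hh m (pair_pt N (mix pr r Q' t) \<sigma>)) (ball s0 (\<delta>f m)) (Lf m)" if "m < n" for m
    using DL that by (simp add: \<delta>f_def Lf_def)
  have "\<forall>m. \<exists>P. nonneg P \<and> lo (\<lambda>t. u t ^ m / fact m - pl P t)"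
  proof
    fix m
    have "RF (\<lambda>t. u t ^ m * (1 / fact m))" by (rule RF_mult[OF RF_pow[OF RFu] RF_const])
    thus "\<exists>P. nonneg P \<and> lo (\<lambda>t. u t ^ m / fact m - pl P t)" by (simp add: RF_def)
  qed
  then obtain PF where PF: "\<forall>m. nonneg (PF m) \<and> lo (\<lambda>t. u t ^ m / fact m - pl (PF m) t)"
    by (rule choice[THEN exE]) blast
  have "\<forall>m. \<exists>B. m < n \<longrightarrow> (\<forall>p\<in>set (Lf m). \<forall>\<sigma>\<in>cball s0 (\<delta>f m / 2). \<bar>fst p \<sigma>\<bar> \<le> B)"
  proof
    fix m
    show "\<exists>B. m < n \<longrightarrow> (\<forall>p\<in>set (Lf m). \<forall>\<sigma>\<in>cball s0 (\<delta>f m / 2). \<bar>fst p \<sigma>\<bar> \<le> B)"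
    proof (cases "m < n")
      case True
      have "\<forall>p\<in>set (Lf m). continuous_on (ball s0 (\<delta>f m)) (fst p)" using Lf[OF True] by (simp add: EXP_def)
      moreover have "cball s0 (\<delta>f m / 2) \<subseteq> ball s0 (\<delta>f m)"
      proof
        fix x assume "x \<in> cball s0 (\<delta>f m / 2)"
        thus "x \<in> ball s0 (\<delta>f m)" using \<delta>fpos[OF True] by simp
      qed
      ultimately show ?thesis using list_bounded_compact[of "Lf m" "ball s0 (\<delta>f m)" "cball s0 (\<delta>f m / 2)"] by auto
    qed simp
  qed
  then obtain Bf where Bf: "\<forall>m. m < n \<longrightarrow> (\<forall>p\<in>set (Lf m). \<forall>\<sigma>\<in>cball s0 (\<delta>f m / 2). \<bar>fst p \<sigma>\<bar> \<le> Bf m)"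
    by (rule choice[THEN exE]) blast
  obtain \<eta>0 where \<eta>0: "\<eta>0 > 0" "\<forall>y\<in>RN (Suc N). (\<forall>i<Suc N. \<bar>y i - c0p i\<bar> < \<eta>0) \<longrightarrow> y \<in> U"
    using near_open[OF U c0] unfolding c0p_def by blast
  obtain \<eta>1 where \<eta>1: "\<eta>1 > 0" "\<forall>y\<in>U. (\<forall>i<Suc N. \<bar>y i - c0p i\<bar> < \<eta>1) \<longrightarrow> \<bar>hh n y - hh n c0p\<bar> < 1"
    using near_cont[OF smooth_cont[OF hhs[of n]] c0[folded c0p_def], of 1] by auto
  define \<eta> where "\<eta> = min 1 (min \<eta>0 \<eta>1)"
  have \<eta>pos: "\<eta> > 0" using \<eta>0(1) \<eta>1(1) by (simp add: \<eta>_def)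
  define \<delta>' where "\<delta>' = Min (insert \<eta> ((\<lambda>m. \<delta>f m / 2) ` {..<n}))"
  have \<delta>'pos: "\<delta>' > 0" unfolding \<delta>'_def using \<eta>pos \<delta>fpos by (subst Min_gr_iff) auto
  have \<delta>'\<eta>: "\<delta>' \<le> \<eta>" unfolding \<delta>'_def by (intro Min_le) auto
  have \<delta>'m: "\<delta>' \<le> \<delta>f m / 2" if "m < n" for m unfolding \<delta>'_def using that by (intro Min_le) auto
  have ball_sub: "ball s0 \<delta>' \<subseteq> cball s0 (\<delta>f m / 2)" if "m < n" for m
    using \<delta>'m[OF that] by (auto simp: dist_real_def)
  have ball_sub2: "ball s0 \<delta>' \<subseteq> ball s0 (\<delta>f m)" if "m < n" for m
    using \<delta>'m[OF that] \<delta>fpos[OF that] by (auto simp: dist_real_def)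
  have E2: "eventually (\<lambda>t. \<forall>i<N. \<bar>pr i t - r i\<bar> < \<eta>) (at_right 0)"
  proof (rule ev_all_lt, intro allI impI)
    fix i assume i: "i < N"
    have "(pr i \<longlongrightarrow> r i) (at_right 0)" using Rot_tendsto[of "pr i"] pr i by auto
    from tendstoD[OF this \<eta>pos] show "eventually (\<lambda>t. \<bar>pr i t - r i\<bar> < \<eta>) (at_right 0)"
      by (simp add: dist_real_def)
  qed
  define Y where "Y t \<sigma> = pair_pt N (mix pr r Q' t) \<sigma>" for t \<sigma>
  have pts: "(Y t \<sigma>)(q := x) \<in> U \<and> \<bar>hh n ((Y t \<sigma>)(q := x)) - hh n c0p\<bar> < 1"
    if t: "\<forall>i<N. \<bar>pr i t - r i\<bar> < \<eta>" and s: "\<sigma> \<in> ball s0 \<delta>'" and x: "\<bar>x - r q\<bar> \<le> \<bar>u t\<bar>" for t \<sigma> x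
  proof -
    have ut: "\<bar>u t\<bar> < \<eta>" using t qN by (simp add: u_def)
    have near: "\<forall>i<Suc N. \<bar>((Y t \<sigma>)(q := x)) i - c0p i\<bar> < \<eta>"
    proof (intro allI impI)
      fix i assume i: "i < Suc N"
      show "\<bar>((Y t \<sigma>)(q := x)) i - c0p i\<bar> < \<eta>"
      proof (cases "i = q")
        case True thus ?thesis using x ut qN by (simp add: c0p_def pair_pt_def)
      next
        case False
        show ?thesis
        proof (cases "i = N")
          case True
          have "\<bar>\<sigma> - s0\<bar> < \<eta>" using s \<delta>'\<eta> by (simp add: dist_real_def abs_minus_commute)
          thus ?thesis using True False qN by (simp add: Y_def c0p_def pair_pt_def)
        next
          case False2: False
          hence "i < N" using i by simp
          thus ?thesis using False t \<eta>pos by (simp add: Y_def c0p_def pair_pt_def mix_def)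
        qed
      qed
    qed
    have RN: "(Y t \<sigma>)(q := x) \<in> RN (Suc N)" using qN by (simp add: Y_def RN_def pair_pt_def)
    have inU: "(Y t \<sigma>)(q := x) \<in> U" using \<eta>0(2) RN near by (simp add: \<eta>_def)
    moreover have "\<bar>hh n ((Y t \<sigma>)(q := x)) - hh n c0p\<bar> < 1" using \<eta>1(2) inU near by (simp add: \<eta>_def)
    ultimately show ?thesis by blast
  qed
  have Yq_r: "(Y t \<sigma>)(q := r q) = Y t \<sigma>" for t \<sigma>
    using insert.hyps(2) qN by (auto simp: Y_def pair_pt_def mix_def)
  have Yq_p: "(Y t \<sigma>)(q := pr q t) = pair_pt N (mix pr r (insert q Q') t) \<sigma>" for t \<sigma>
    using qN by (simp add: Y_def pair_pt_upd mix_insert)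
  define R where "R t \<sigma> = h (pair_pt N (mix pr r (insert q Q') t) \<sigma>) - (\<Sum>m<n. hh m (Y t \<sigma>) / fact m * u t ^ m)" for t \<sigma>
  define C where "C = (\<bar>hh n c0p\<bar> + 1) / fact n * K ^ n"
  have Rbound: "eventually (\<lambda>t. \<forall>\<sigma>\<in>ball s0 \<delta>'. \<bar>R t \<sigma>\<bar> \<le> C * t powr (a * real n)) (at_right 0)"
    using E2 uK ev_pos
  proof eventually_elim
    case (elim t)
    show ?case
    proof
      fix \<sigma> assume s: "\<sigma> \<in> ball s0 \<delta>'"
      define diff where "diff m x = hh m ((Y t \<sigma>)(q := x))" for m x
      have D: "\<forall>m<n. \<forall>x. min (r q) (pr q t) \<le> x \<and> x \<le> max (r q) (pr q t) \<longrightarrow>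
                 (diff m has_real_derivative diff (Suc m) x) (at x)"
      proof (intro allI impI)
        fix m x assume "m < n" and x: "min (r q) (pr q t) \<le> x \<and> x \<le> max (r q) (pr q t)"
        have "\<bar>x - r q\<bar> \<le> \<bar>u t\<bar>" using x by (auto simp: u_def)
        hence inU: "(Y t \<sigma>)(q := x) \<in> U" using pts[OF elim(1) s] by blast
        from deriv_line[OF hhs[of m] qM inU]
        show "(diff m has_real_derivative diff (Suc m) x) (at x)"
          unfolding diff_def hh_Suc by simp
      qed
      obtain \<xi> where \<xi>: "\<bar>\<xi> - r q\<bar> \<le> \<bar>pr q t - r q\<bar>"
        "diff 0 (pr q t) = (\<Sum>m<n. diff m (r q) / fact m * (pr q t - r q)^m) + diff n \<xi> / fact n * (pr q t - r q)^n"
        using taylor1[OF n0 D] by blast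
      have "R t \<sigma> = diff n \<xi> / fact n * u t ^ n"
        using \<xi>(2) unfolding R_def diff_def u_def hh0 Yq_r Yq_p by simp
      also have "\<bar>\<dots>\<bar> = \<bar>diff n \<xi>\<bar> / fact n * \<bar>u t\<bar> ^ n" by (simp add: abs_mult power_abs)
      also have "\<dots> \<le> (\<bar>hh n c0p\<bar> + 1) / fact n * (K ^ n * t powr (a * real n))"
      proof (intro mult_mono divide_right_mono)
        have "\<bar>diff n \<xi> - hh n c0p\<bar> < 1" using pts[OF elim(1) s, of \<xi>] \<xi>(1) by (simp add: diff_def u_def)
        thus "\<bar>diff n \<xi>\<bar> \<le> \<bar>hh n c0p\<bar> + 1" by linarith
        show "\<bar>u t\<bar> ^ n \<le> K ^ n * t powr (a * real n)" by (rule powr_pow_le[OF elim(2) elim(3)])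
      qed auto
      also have "\<dots> = C * t powr (a * real n)" by (simp add: C_def)
      finally show "\<bar>R t \<sigma>\<bar> \<le> C * t powr (a * real n)" .
    qed
  qed
  have UOR: "UO R (ball s0 \<delta>')" by (rule UO_powr[OF na Rbound])
  define Lnew where "Lnew = concat (map (\<lambda>m. prodLF (PF m) (Lf m)) [0..<n])"
  have pev_new: "pev Lnew t \<sigma> = (\<Sum>m<n. pl (PF m) t * pev (Lf m) t \<sigma>)" if "t > 0" for t \<sigma>
  proof -
    have "pev Lnew t \<sigma> = (\<Sum>m\<leftarrow>[0..<n]. pev (prodLF (PF m) (Lf m)) t \<sigma>)" by (simp add: Lnew_def pev_concat)
    also have "\<dots> = (\<Sum>m\<leftarrow>[0..<n]. pl (PF m) t * pev (Lf m) t \<sigma>)" using that by (simp add: pev_prodLF)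
    also have "\<dots> = (\<Sum>m<n. pl (PF m) t * pev (Lf m) t \<sigma>)"
      by (simp add: sum_set_upt_conv_sum_list_nat[symmetric] lessThan_atLeast0)
    finally show ?thesis .
  qed
  define A where "A m t \<sigma> = (u t ^ m / fact m) * (hh m (Y t \<sigma>) - pev (Lf m) t \<sigma>)" for m t \<sigma>
  define B where "B m t \<sigma> = (u t ^ m / fact m - pl (PF m) t) * pev (Lf m) t \<sigma>" for m t \<sigma>
  have ubound: "eventually (\<lambda>t. \<forall>\<sigma>\<in>ball s0 \<delta>'. \<bar>u t ^ m / fact m\<bar> \<le> 1) (at_right 0)" for m
    using E2
  proof eventually_elim
    case (elim t)
    have "\<bar>u t\<bar> < \<eta>" using elim qN by (simp add: u_def)
    moreover have "\<eta> \<le> 1" by (simp add: \<eta>_def)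
    ultimately have "\<bar>u t\<bar> \<le> 1" by linarith
    hence p1: "\<bar>u t\<bar> ^ m \<le> 1" by (simp add: power_le_one)
    have "\<bar>u t ^ m / fact m\<bar> = \<bar>u t\<bar> ^ m / fact m" by (simp add: abs_divide power_abs)
    also have "\<dots> \<le> \<bar>u t\<bar> ^ m / 1" by (rule divide_left_mono) auto
    also have "\<dots> = \<bar>u t\<bar> ^ m" by simp
    finally have "\<bar>u t ^ m / fact m\<bar> \<le> \<bar>u t\<bar> ^ m" .
    hence "\<bar>u t ^ m / fact m\<bar> \<le> 1" using p1 by linarith
    thus ?case by blast
  qed
  have UOA: "UO (A m) (ball s0 \<delta>')" if "m < n" for m
  proof -
    have "UO (\<lambda>t \<sigma>. hh m (Y t \<sigma>) - pev (Lf m) t \<sigma>) (ball s0 (\<delta>f m))" using Lf[OF that] by (simp add: EXP_def Y_def)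
    hence "UO (\<lambda>t \<sigma>. hh m (Y t \<sigma>) - pev (Lf m) t \<sigma>) (ball s0 \<delta>')" by (rule UO_subset) (rule ball_sub2[OF that])
    from UO_mult_bounded[OF this ubound[of m]] show ?thesis by (simp add: A_def[abs_def])
  qed
  have UOB: "UO (B m) (ball s0 \<delta>')" if "m < n" for m
  proof -
    have "eventually (\<lambda>t. \<forall>\<sigma>\<in>ball s0 \<delta>'. \<bar>pev (Lf m) t \<sigma>\<bar> \<le> real (length (Lf m)) * Bf m) (at_right 0)"
    proof (rule pev_bounded)
      show "\<forall>p\<in>set (Lf m). 0 \<le> snd p \<and> (\<forall>\<sigma>\<in>ball s0 \<delta>'. \<bar>fst p \<sigma>\<bar> \<le> Bf m)"
        using Lf[OF that] Bf that ball_sub[OF that] unfolding EXP_def by blast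
    qed
    from lo_UO_mult[OF _ this, of "\<lambda>t. u t ^ m / fact m - pl (PF m) t"] PF
    show ?thesis by (simp add: B_def[abs_def])
  qed
  have UOsum: "UO (\<lambda>t \<sigma>. \<Sum>m\<in>{..<n}. A m t \<sigma> + B m t \<sigma>) (ball s0 \<delta>')"
    by (rule UO_sum) (auto intro: UO_add UOA UOB)
  have UOall: "UO (\<lambda>t \<sigma>. R t \<sigma> + (\<Sum>m\<in>{..<n}. A m t \<sigma> + B m t \<sigma>)) (ball s0 \<delta>')"
    by (rule UO_add[OF UOR UOsum])
  have ident: "h (pair_pt N (mix pr r (insert q Q') t) \<sigma>) - pev Lnew t \<sigma> = R t \<sigma> + (\<Sum>m\<in>{..<n}. A m t \<sigma> + B m t \<sigma>)"
    if "t > 0" for t \<sigma>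
  proof -
    have "(\<Sum>m\<in>{..<n}. A m t \<sigma> + B m t \<sigma>) = (\<Sum>m<n. hh m (Y t \<sigma>) / fact m * u t ^ m - pl (PF m) t * pev (Lf m) t \<sigma>)"
      by (intro sum.cong) (auto simp: A_def B_def algebra_simps)
    also have "\<dots> = (\<Sum>m<n. hh m (Y t \<sigma>) / fact m * u t ^ m) - pev Lnew t \<sigma>"
      using that by (simp add: pev_new sum_subtractf)
    finally show ?thesis by (simp add: R_def)
  qed
  have UOfinal: "UO (\<lambda>t \<sigma>. h (pair_pt N (mix pr r (insert q Q') t) \<sigma>) - pev Lnew t \<sigma>) (ball s0 \<delta>')"
    by (rule UO_le[OF UOall]) (rule eventually_mono[OF ev_pos], simp add: ident)
  have props: "\<forall>p\<in>set Lnew. continuous_on (ball s0 \<delta>') (fst p) \<and> snd p \<ge> 0"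
  proof
    fix p assume "p \<in> set Lnew"
    then obtain m where m: "m < n" "p \<in> set (prodLF (PF m) (Lf m))" by (auto simp: Lnew_def)
    have "\<forall>q\<in>set (prodLF (PF m) (Lf m)). continuous_on (ball s0 (\<delta>f m)) (fst q) \<and> snd q \<ge> 0"
      using PF Lf[OF m(1)] unfolding EXP_def by (intro prodLF_props) auto
    thus "continuous_on (ball s0 \<delta>') (fst p) \<and> snd p \<ge> 0"
      using m(2) ball_sub2[OF m(1)] continuous_on_subset by blast
  qed
  show ?case using \<delta>'pos props UOfinal unfolding EXP_def by blast
qed


definition Phi :: "nat \<Rightarrow> (nat \<Rightarrow> fermat) \<Rightarrow> ((nat \<Rightarrow> real) \<Rightarrow> real) \<Rightarrow> real \<Rightarrow> real \<Rightarrow> real" where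
  "Phi N p h t \<sigma> = h (pair_pt N (\<lambda>i. rep_fermat (p i) t) \<sigma>)"

lemma mvt_bound:
  assumes "\<forall>z. min x y \<le> z \<and> z \<le> max x y \<longrightarrow> (f has_real_derivative f' z) (at z) \<and> \<bar>f' z\<bar> \<le> M"
  shows "\<bar>f x - f y\<bar> \<le> M * \<bar>x - y\<bar>"
proof -
  have gen: "\<bar>f b - f a\<bar> \<le> M * (b - a)" if ab: "a < b" and D: "\<forall>z. a \<le> z \<and> z \<le> b \<longrightarrow> (f has_real_derivative f' z) (at z) \<and> \<bar>f' z\<bar> \<le> M" for a b
  proof -
    obtain z where z: "a < z" "z < b" "f b - f a = (b - a) * f' z"
      using MVT2[OF ab, of f f'] D by force
    have "\<bar>f b - f a\<bar> = (b - a) * \<bar>f' z\<bar>" using z ab by (simp add: abs_mult)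
    also have "\<dots> \<le> (b - a) * M" using D z ab by (intro mult_left_mono) auto
    finally show ?thesis by (simp add: mult.commute)
  qed
  show ?thesis
  proof (cases x y rule: linorder_cases)
    case less
    from gen[OF less] assms have "\<bar>f y - f x\<bar> \<le> M * (y - x)" by (simp add: min_def max_def)
    thus ?thesis using less by (simp add: abs_minus_commute)
  next
    case equal thus ?thesis by simp
  next
    case greater
    from gen[OF greater] assms show ?thesis using greater by (simp add: min_def max_def)
  qed
qed

lemma fstd_vec_lt: "i < N \<Longrightarrow> fstd_vec N p i = fstd (p i)"
  by (simp add: fstd_vec_def)

lemma pair_pt_rep0: "pair_pt N (\<lambda>i. rep_fermat (p i) 0) \<sigma> = pair_pt N (fstd_vec N p) \<sigma>"
  by (rule pair_pt_cong) (simp add: fstd_vec_def fstd_def)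

lemma near_rep:
  assumes U: "openN (Suc N) U" and hc: "continuousN (Suc N) U h"
    and c: "pair_pt N (fstd_vec N p) \<sigma>0 \<in> U" and e: "\<epsilon> > 0"
  shows "\<exists>\<eta>>0. eventually (\<lambda>t. \<forall>\<sigma>. \<bar>\<sigma> - \<sigma>0\<bar> < \<eta> \<longrightarrow> pair_pt N (\<lambda>i. rep_fermat (p i) t) \<sigma> \<in> U \<and>
     \<bar>Phi N p h t \<sigma> - h (pair_pt N (fstd_vec N p) \<sigma>0)\<bar> < \<epsilon>) (at_right 0)"
proof -
  define c0 where "c0 = pair_pt N (fstd_vec N p) \<sigma>0"
  obtain \<eta>0 where \<eta>0: "\<eta>0 > 0" "\<forall>y\<in>RN (Suc N). (\<forall>i<Suc N. \<bar>y i - c0 i\<bar> < \<eta>0) \<longrightarrow> y \<in> U"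
    using near_open[OF U c] unfolding c0_def by blast
  obtain \<eta>1 where \<eta>1: "\<eta>1 > 0" "\<forall>y\<in>U. (\<forall>i<Suc N. \<bar>y i - c0 i\<bar> < \<eta>1) \<longrightarrow> \<bar>h y - h c0\<bar> < \<epsilon>"
    using near_cont[OF hc c e] unfolding c0_def by blast
  define \<eta> where "\<eta> = min \<eta>0 \<eta>1"
  have \<eta>pos: "\<eta> > 0" using \<eta>0 \<eta>1 by (simp add: \<eta>_def)
  have ev: "eventually (\<lambda>t. \<forall>i<N. \<bar>rep_fermat (p i) t - fstd (p i)\<bar> < \<eta>) (at_right 0)"
  proof (rule ev_all_lt, intro allI impI)
    fix i assume "i < N"
    from tendstoD[OF rep_tendsto[of "p i"] \<eta>pos]
    show "eventually (\<lambda>t. \<bar>rep_fermat (p i) t - fstd (p i)\<bar> < \<eta>) (at_right 0)" by (simp add: dist_real_def)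
  qed
  show ?thesis
  proof (intro exI[of _ \<eta>] conjI \<eta>pos)
    show "eventually (\<lambda>t. \<forall>\<sigma>. \<bar>\<sigma> - \<sigma>0\<bar> < \<eta> \<longrightarrow> pair_pt N (\<lambda>i. rep_fermat (p i) t) \<sigma> \<in> U \<and>
     \<bar>Phi N p h t \<sigma> - h (pair_pt N (fstd_vec N p) \<sigma>0)\<bar> < \<epsilon>) (at_right 0)"
      using ev
    proof eventually_elim
      case (elim t)
      show ?case
      proof (intro allI impI)
        fix \<sigma> assume s: "\<bar>\<sigma> - \<sigma>0\<bar> < \<eta>"
        have near: "\<forall>i<Suc N. \<bar>pair_pt N (\<lambda>i. rep_fermat (p i) t) \<sigma> i - c0 i\<bar> < \<eta>"
        proof (intro allI impI)
          fix i assume i: "i < Suc N"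
          show "\<bar>pair_pt N (\<lambda>i. rep_fermat (p i) t) \<sigma> i - c0 i\<bar> < \<eta>"
          proof (cases "i < N")
            case True thus ?thesis using elim by (simp add: c0_def pair_pt_def fstd_vec_def)
          next
            case False hence "i = N" using i by simp
            thus ?thesis using s by (simp add: c0_def pair_pt_def)
          qed
        qed
        have inU: "pair_pt N (\<lambda>i. rep_fermat (p i) t) \<sigma> \<in> U"
          using \<eta>0(2) pair_pt_RN near by (simp add: \<eta>_def)
        moreover have "\<bar>Phi N p h t \<sigma> - h c0\<bar> < \<epsilon>"
          using \<eta>1(2) inU near by (simp add: \<eta>_def Phi_def)
        ultimately show "pair_pt N (\<lambda>i. rep_fermat (p i) t) \<sigma> \<in> U \<and>
          \<bar>Phi N p h t \<sigma> - h (pair_pt N (fstd_vec N p) \<sigma>0)\<bar> < \<epsilon>" by (simp add: c0_def)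
      qed
    qed
  qed
qed

lemma deriv_rep:
  assumes U: "openN (Suc N) U" and hs: "smooth (Suc N) U h" and c: "pair_pt N (fstd_vec N p) \<sigma>0 \<in> U"
  shows "\<exists>\<eta>>0. eventually (\<lambda>t. \<forall>\<sigma>. \<bar>\<sigma> - \<sigma>0\<bar> < \<eta> \<longrightarrow>
            (Phi N p h t has_real_derivative Phi N p (partial N h) t \<sigma>) (at \<sigma>)) (at_right 0)"
proof -
  obtain \<eta> where \<eta>: "\<eta> > 0" "eventually (\<lambda>t. \<forall>\<sigma>. \<bar>\<sigma> - \<sigma>0\<bar> < \<eta> \<longrightarrow> pair_pt N (\<lambda>i. rep_fermat (p i) t) \<sigma> \<in> U \<and>
     \<bar>Phi N p h t \<sigma> - h (pair_pt N (fstd_vec N p) \<sigma>0)\<bar> < 1) (at_right 0)"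
    using near_rep[OF U smooth_cont[OF hs] c, of 1] by auto
  show ?thesis
  proof (intro exI[of _ \<eta>] conjI \<eta>(1))
    show "eventually (\<lambda>t. \<forall>\<sigma>. \<bar>\<sigma> - \<sigma>0\<bar> < \<eta> \<longrightarrow>
            (Phi N p h t has_real_derivative Phi N p (partial N h) t \<sigma>) (at \<sigma>)) (at_right 0)"
      using \<eta>(2)
    proof eventually_elim
      case (elim t)
      show ?case
      proof (intro allI impI)
        fix \<sigma> assume s: "\<bar>\<sigma> - \<sigma>0\<bar> < \<eta>"
        define Y where "Y = pair_pt N (\<lambda>i. rep_fermat (p i) t) \<sigma>"
        have inU: "Y(N := \<sigma>) \<in> U" using elim s by (simp add: Y_def pair_pt_upd_N)
        have eq: "Phi N p h t = (\<lambda>y. h (Y(N := y)))" by (rule ext) (simp add: Phi_def Y_def pair_pt_upd_N)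
        from deriv_line[OF hs _ inU]
        show "(Phi N p h t has_real_derivative Phi N p (partial N h) t \<sigma>) (at \<sigma>)"
          by (simp add: eq Phi_def Y_def pair_pt_upd_N)
      qed
    qed
  qed
qed

lemma tendsto_rep:
  assumes U: "openN (Suc N) U" and hc: "continuousN (Suc N) U h"
    and c: "pair_pt N (fstd_vec N p) \<sigma>0 \<in> U" and x: "(x \<longlongrightarrow> \<sigma>0) (at_right 0)"
  shows "((\<lambda>t. Phi N p h t (x t)) \<longlongrightarrow> h (pair_pt N (fstd_vec N p) \<sigma>0)) (at_right 0)"
proof (rule tendstoI)
  fix e :: real assume e: "e > 0"
  obtain \<eta> where \<eta>: "\<eta> > 0" "eventually (\<lambda>t. \<forall>\<sigma>. \<bar>\<sigma> - \<sigma>0\<bar> < \<eta> \<longrightarrow> pair_pt N (\<lambda>i. rep_fermat (p i) t) \<sigma> \<in> U \<and>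
     \<bar>Phi N p h t \<sigma> - h (pair_pt N (fstd_vec N p) \<sigma>0)\<bar> < e) (at_right 0)"
    using near_rep[OF U hc c e] by auto
  have "eventually (\<lambda>t. dist (x t) \<sigma>0 < \<eta>) (at_right 0)" by (rule tendstoD[OF x \<eta>(1)])
  with \<eta>(2) show "eventually (\<lambda>t. dist (Phi N p h t (x t)) (h (pair_pt N (fstd_vec N p) \<sigma>0)) < e) (at_right 0)"
    by eventually_elim (simp add: dist_real_def)
qed

lemma Phi_0: "Phi N p h 0 \<sigma> = h (pair_pt N (fstd_vec N p) \<sigma>)"
  by (simp add: Phi_def pair_pt_rep0)

lemma lip_rep:
  assumes U: "openN (Suc N) U" and hs: "smooth (Suc N) U h" and c: "pair_pt N (fstd_vec N p) \<sigma>0 \<in> U"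
  shows "\<exists>\<eta>>0. \<exists>M. eventually (\<lambda>t. \<forall>\<sigma> \<sigma>'. \<bar>\<sigma> - \<sigma>0\<bar> < \<eta> \<and> \<bar>\<sigma>' - \<sigma>0\<bar> < \<eta> \<longrightarrow>
     \<bar>Phi N p h t \<sigma> - Phi N p h t \<sigma>'\<bar> \<le> M * \<bar>\<sigma> - \<sigma>'\<bar>) (at_right 0)"
proof -
  obtain \<eta>1 where \<eta>1: "\<eta>1 > 0" "eventually (\<lambda>t. \<forall>\<sigma>. \<bar>\<sigma> - \<sigma>0\<bar> < \<eta>1 \<longrightarrow>
            (Phi N p h t has_real_derivative Phi N p (partial N h) t \<sigma>) (at \<sigma>)) (at_right 0)"
    using deriv_rep[OF U hs c] by auto
  have hs': "smooth (Suc N) U (partial N h)" by (rule smooth_partial[OF hs]) simp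
  obtain \<eta>2 where \<eta>2: "\<eta>2 > 0" "eventually (\<lambda>t. \<forall>\<sigma>. \<bar>\<sigma> - \<sigma>0\<bar> < \<eta>2 \<longrightarrow> pair_pt N (\<lambda>i. rep_fermat (p i) t) \<sigma> \<in> U \<and>
     \<bar>Phi N p (partial N h) t \<sigma> - partial N h (pair_pt N (fstd_vec N p) \<sigma>0)\<bar> < 1) (at_right 0)"
    using near_rep[OF U smooth_cont[OF hs'] c, of 1] by auto
  define M where "M = \<bar>partial N h (pair_pt N (fstd_vec N p) \<sigma>0)\<bar> + 1"
  define \<eta> where "\<eta> = min \<eta>1 \<eta>2"
  have \<eta>pos: "\<eta> > 0" using \<eta>1 \<eta>2 by (simp add: \<eta>_def)
  have "eventually (\<lambda>t. \<forall>\<sigma> \<sigma>'. \<bar>\<sigma> - \<sigma>0\<bar> < \<eta> \<and> \<bar>\<sigma>' - \<sigma>0\<bar> < \<eta> \<longrightarrow>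
     \<bar>Phi N p h t \<sigma> - Phi N p h t \<sigma>'\<bar> \<le> M * \<bar>\<sigma> - \<sigma>'\<bar>) (at_right 0)"
  proof -
    show "eventually (\<lambda>t. \<forall>\<sigma> \<sigma>'. \<bar>\<sigma> - \<sigma>0\<bar> < \<eta> \<and> \<bar>\<sigma>' - \<sigma>0\<bar> < \<eta> \<longrightarrow>
     \<bar>Phi N p h t \<sigma> - Phi N p h t \<sigma>'\<bar> \<le> M * \<bar>\<sigma> - \<sigma>'\<bar>) (at_right 0)"
      using \<eta>1(2) \<eta>2(2)
    proof eventually_elim
      case (elim t)
      show ?case
      proof (intro allI impI)
        fix \<sigma> \<sigma>' assume s: "\<bar>\<sigma> - \<sigma>0\<bar> < \<eta> \<and> \<bar>\<sigma>' - \<sigma>0\<bar> < \<eta>"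
        show "\<bar>Phi N p h t \<sigma> - Phi N p h t \<sigma>'\<bar> \<le> M * \<bar>\<sigma> - \<sigma>'\<bar>"
        proof (rule mvt_bound[where f="Phi N p h t" and f'="Phi N p (partial N h) t"], intro allI impI conjI)
          fix z assume z: "min \<sigma> \<sigma>' \<le> z \<and> z \<le> max \<sigma> \<sigma>'"
          have zz: "\<bar>z - \<sigma>0\<bar> < \<eta>" using s z by (auto simp: min_def max_def split: if_splits)
          show "(Phi N p h t has_real_derivative Phi N p (partial N h) t z) (at z)"
            using elim(1) zz by (simp add: \<eta>_def)
          have "\<bar>Phi N p (partial N h) t z - partial N h (pair_pt N (fstd_vec N p) \<sigma>0)\<bar> < 1"
            using elim(2) zz by (simp add: \<eta>_def)
          thus "\<bar>Phi N p (partial N h) t z\<bar> \<le> M" by (simp add: M_def)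
        qed
      qed
    qed
  qed
  thus ?thesis using \<eta>pos by blast
qed

lemma Exp_rep:
  assumes U: "openN (Suc N) U" and hs: "smooth (Suc N) U h" and c: "pair_pt N (fstd_vec N p) \<sigma>0 \<in> U"
  shows "\<exists>\<delta>>0. \<exists>L. EXP (Phi N p h) (ball \<sigma>0 \<delta>) L"
proof -
  have pr: "\<forall>i<N. rep_fermat (p i) \<in> Rot \<and> rep_fermat (p i) 0 = fstd_vec N p i"
    by (simp add: rep_Rot fstd_vec_def fstd_def)
  from Exp_main[OF U c pr, of "{..<N}" h] hs
  obtain \<delta> L where \<delta>: "\<delta> > 0" "EXP (\<lambda>t \<sigma>. h (pair_pt N (mix (\<lambda>i. rep_fermat (p i)) (fstd_vec N p) {..<N} t) \<sigma>)) (ball \<sigma>0 \<delta>) L"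
    by auto
  have eq: "(\<lambda>t \<sigma>. h (pair_pt N (mix (\<lambda>i. rep_fermat (p i)) (fstd_vec N p) {..<N} t) \<sigma>)) = Phi N p h"
    by (intro ext) (simp add: Phi_def, rule arg_cong[of _ _ h], rule pair_pt_cong, simp add: mix_def)
  show ?thesis using \<delta> unfolding eq by blast
qed

lemma Rot_rep:
  assumes U: "openN (Suc N) U" and hs: "smooth (Suc N) U h" and c: "pair_pt N (fstd_vec N p) \<sigma>0 \<in> U"
    and x: "x \<in> Rot" "x 0 = \<sigma>0" "lo (\<lambda>t. x t - \<sigma>0)"
  shows "(\<lambda>t. Phi N p h t (x t)) \<in> Rot \<and> lo (\<lambda>t. Phi N p h t (x t) - Phi N p h t \<sigma>0)"
proof -
  obtain \<eta> M where \<eta>: "\<eta> > 0" "eventually (\<lambda>t. \<forall>\<sigma> \<sigma>'. \<bar>\<sigma> - \<sigma>0\<bar> < \<eta> \<and> \<bar>\<sigma>' - \<sigma>0\<bar> < \<eta> \<longrightarrow>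
     \<bar>Phi N p h t \<sigma> - Phi N p h t \<sigma>'\<bar> \<le> M * \<bar>\<sigma> - \<sigma>'\<bar>) (at_right 0)"
    using lip_rep[OF U hs c] by blast
  have xt: "(x \<longlongrightarrow> \<sigma>0) (at_right 0)" using Rot_tendsto[OF x(1)] x(2) by simp
  have "eventually (\<lambda>t. dist (x t) \<sigma>0 < \<eta>) (at_right 0)" by (rule tendstoD[OF xt \<eta>(1)])
  with \<eta>(2) have "eventually (\<lambda>t. \<bar>Phi N p h t (x t) - Phi N p h t \<sigma>0\<bar> \<le> \<bar>M * (x t - \<sigma>0)\<bar>) (at_right 0)"
  proof eventually_elim
    case (elim t)
    have "\<bar>Phi N p h t (x t) - Phi N p h t \<sigma>0\<bar> \<le> M * \<bar>x t - \<sigma>0\<bar>"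
      using elim \<eta>(1) by (simp add: dist_real_def)
    also have "\<dots> \<le> \<bar>M\<bar> * \<bar>x t - \<sigma>0\<bar>" by (intro mult_right_mono) auto
    also have "\<dots> = \<bar>M * (x t - \<sigma>0)\<bar>" by (simp add: abs_mult)
    finally show ?case .
  qed
  hence lo1: "lo (\<lambda>t. Phi N p h t (x t) - Phi N p h t \<sigma>0)"
    by (rule lo_cong_ev[OF lo_cmult[OF x(3)], rotated])
  obtain \<delta> L where L: "\<delta> > 0" "EXP (Phi N p h) (ball \<sigma>0 \<delta>) L" using Exp_rep[OF U hs c] by blast
  have lo2: "lo (\<lambda>t. Phi N p h t \<sigma>0 - pl (mapS L \<sigma>0) t)"
    using UO_lo[of "\<lambda>t \<sigma>. Phi N p h t \<sigma> - pev L t \<sigma>" "ball \<sigma>0 \<delta>" \<sigma>0] L unfolding EXP_def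
    by (simp add: pev_mapS)
  have nn: "nonneg (mapS L \<sigma>0)" using L(2) unfolding EXP_def nonneg_def mapS_def by auto
  have lo3: "lo (\<lambda>t. Phi N p h t (x t) - pl (mapS L \<sigma>0) t)"
    using lo_add[OF lo1 lo2] by simp
  have tl: "((\<lambda>t. Phi N p h t (x t)) \<longlongrightarrow> Phi N p h 0 (x 0)) (at_right 0)"
    using tendsto_rep[OF U smooth_cont[OF hs] c xt] by (simp add: Phi_0 x(2))
  have "(\<lambda>t. Phi N p h t (x t)) \<in> Rot" by (rule Rot_from[OF nn lo3]) (use tl in simp)
  thus ?thesis using lo1 by blast
qed


lemma cont_gsumF: "\<forall>p\<in>set L. continuous_on S (fst p) \<Longrightarrow> continuous_on S (gsumF L e)"
proof (induction L)
  case Nil thus ?case by (simp add: gsumF_def[abs_def])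
next
  case (Cons p L)
  have eq: "gsumF (p # L) e = (\<lambda>\<sigma>. (if snd p = e then fst p \<sigma> else 0) + gsumF L e \<sigma>)"
    by (rule ext) (simp add: gsumF_def)
  have c1: "continuous_on S (\<lambda>\<sigma>. if snd p = e then fst p \<sigma> else 0)" using Cons.prems by (cases "snd p = e") simp_all
  have c2: "continuous_on S (gsumF L e)" using Cons by auto
  show ?case unfolding eq by (rule continuous_on_add[OF c1 c2])
qed

lemma ball_interval_sub:
  assumes "(\<sigma>1::real) \<in> ball s0 \<delta>" "\<sigma>2 \<in> ball s0 \<delta>"
  shows "{\<sigma>1..\<sigma>2} \<subseteq> ball s0 (\<delta>::real)"
proof
  fix x assume x: "x \<in> {\<sigma>1..\<sigma>2}"
  have a: "\<bar>s0 - \<sigma>1\<bar> < \<delta>" "\<bar>s0 - \<sigma>2\<bar> < \<delta>" using assms by (simp_all add: dist_real_def)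
  have "\<bar>s0 - x\<bar> < \<delta>" using a x by (auto simp: abs_less_iff)
  thus "x \<in> ball s0 \<delta>" by (simp add: dist_real_def)
qed

lemma aux_half: "(A::real) \<le> (D - C)/2 \<Longrightarrow> B \<le> C + A \<Longrightarrow> C < D \<Longrightarrow> B < D"
proof -
  assume a: "A \<le> (D - C)/2" "B \<le> C + A" "C < D"
  have "2 * A \<le> D - C" using a(1) by (simp add: field_simps)
  thus "B < D" using a(2,3) by linarith
qed

lemma has_integral_pev:
  assumes "\<forall>p\<in>set L. continuous_on {a..b} (fst p)"
  shows "(pev L t has_integral pl (map (\<lambda>p. (integral {a..b} (fst p), snd p)) L) t) {a..b}"
  using assms
proof (induction L)
  case Nil
  have "pev [] t = (\<lambda>\<sigma>. 0)" by (rule ext) simp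
  thus ?case by simp
next
  case (Cons p L)
  have i1: "(fst p has_integral integral {a..b} (fst p)) {a..b}"
    using integrable_continuous_real[of a b "fst p"] Cons.prems by (simp add: has_integral_integrable_integral)
  have "((\<lambda>\<sigma>. fst p \<sigma> * t powr snd p + pev L t \<sigma>) has_integral
          (integral {a..b} (fst p) * t powr snd p + pl (map (\<lambda>p. (integral {a..b} (fst p), snd p)) L) t)) {a..b}"
    using Cons by (intro has_integral_add has_integral_mult_left i1) auto
  moreover have "pev (p # L) t = (\<lambda>\<sigma>. fst p \<sigma> * t powr snd p + pev L t \<sigma>)" by (rule ext) simp
  ultimately show ?case by simp
qed

lemma has_integral_gsumF:
  assumes "\<forall>p\<in>set L. continuous_on {a..b} (fst p)"
  shows "(gsumF L e has_integral gsum (map (\<lambda>p. (integral {a..b} (fst p), snd p)) L) e) {a..b}"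
  using assms
proof (induction L)
  case Nil
  have "gsumF [] e = (\<lambda>\<sigma>. 0)" by (rule ext) (simp add: gsumF_def)
  thus ?case by (simp add: gsum_def)
next
  case (Cons p L)
  have i1: "(fst p has_integral integral {a..b} (fst p)) {a..b}"
    using integrable_continuous_real[of a b "fst p"] Cons.prems by (simp add: has_integral_integrable_integral)
  have i2: "((\<lambda>\<sigma>. if snd p = e then fst p \<sigma> else 0) has_integral (if snd p = e then integral {a..b} (fst p) else 0)) {a..b}"
    using i1 by (cases "snd p = e") auto
  have eq: "gsumF (p # L) e = (\<lambda>\<sigma>. (if snd p = e then fst p \<sigma> else 0) + gsumF L e \<sigma>)"
    by (rule ext) (simp add: gsumF_def)
  have "(gsumF (p # L) e has_integral ((if snd p = e then integral {a..b} (fst p) else 0) +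
          gsum (map (\<lambda>p. (integral {a..b} (fst p), snd p)) L) e)) {a..b}"
    unfolding eq using Cons by (intro has_integral_add i2) auto
  moreover have "gsum (map (\<lambda>p. (integral {a..b} (fst p), snd p)) (p # L)) e =
     (if snd p = e then integral {a..b} (fst p) else 0) + gsum (map (\<lambda>p. (integral {a..b} (fst p), snd p)) L) e"
    by (simp add: gsum_Cons)
  ultimately show ?case by simp
qed

lemma Zlem:
  assumes exp: "EXP D' (ball \<sigma>0 \<delta>) L"
    and der: "eventually (\<lambda>t. \<forall>\<sigma>\<in>ball \<sigma>0 \<delta>. (D t has_real_derivative D' t \<sigma>) (at \<sigma>)) (at_right 0)"
    and z: "\<forall>\<sigma>\<in>ball \<sigma>0 \<delta>. lo (\<lambda>t. D t \<sigma> - w t)"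
  shows "\<forall>\<sigma>\<in>ball \<sigma>0 \<delta>. \<forall>e\<le>1. gsumF L e \<sigma> = 0"
proof -
  have contL: "\<forall>p\<in>set L. continuous_on (ball \<sigma>0 \<delta>) (fst p)" using exp by (simp add: EXP_def)
  have intzero: "integral {\<sigma>1..\<sigma>2} (gsumF L e) = 0"
    if s1: "\<sigma>1 \<in> ball \<sigma>0 \<delta>" and s2: "\<sigma>2 \<in> ball \<sigma>0 \<delta>" and le: "\<sigma>1 \<le> \<sigma>2" and e: "e \<le> 1" for \<sigma>1 \<sigma>2 e
  proof -
    have sub: "{\<sigma>1..\<sigma>2} \<subseteq> ball \<sigma>0 \<delta>" by (rule ball_interval_sub[OF s1 s2])
    have contI: "\<forall>p\<in>set L. continuous_on {\<sigma>1..\<sigma>2} (fst p)" using contL sub continuous_on_subset by blast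
    define IL where "IL = map (\<lambda>p. (integral {\<sigma>1..\<sigma>2} (fst p), snd p)) L"
    have hpev: "(pev L t has_integral pl IL t) {\<sigma>1..\<sigma>2}" for t unfolding IL_def by (rule has_integral_pev[OF contI])
    have UOr: "UO (\<lambda>t \<sigma>. D' t \<sigma> - pev L t \<sigma>) (ball \<sigma>0 \<delta>)" using exp by (simp add: EXP_def)
    have lo1: "lo (\<lambda>t. (D t \<sigma>2 - D t \<sigma>1) - pl IL t)" unfolding lo_def
    proof (intro allI impI)
      fix \<epsilon> :: real assume \<epsilon>: "\<epsilon> > 0"
      have "\<epsilon> / (\<sigma>2 - \<sigma>1 + 1) > 0" using \<epsilon> le by simp
      from UOD[OF UOr this] der
      show "eventually (\<lambda>t. \<bar>(D t \<sigma>2 - D t \<sigma>1) - pl IL t\<bar> \<le> \<epsilon> * t) (at_right 0)" using ev_pos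
      proof eventually_elim
        case (elim t)
        have ftc: "(D' t has_integral (D t \<sigma>2 - D t \<sigma>1)) {\<sigma>1..\<sigma>2}"
        proof (rule fundamental_theorem_of_calculus[OF le])
          fix x assume "x \<in> {\<sigma>1..\<sigma>2}"
          hence "x \<in> ball \<sigma>0 \<delta>" using sub by blast
          hence "(D t has_real_derivative D' t x) (at x)" using elim(2) by blast
          thus "(D t has_vector_derivative D' t x) (at x within {\<sigma>1..\<sigma>2})"
            by (simp add: has_real_derivative_iff_has_vector_derivative has_vector_derivative_at_within)
        qed
        have hi: "((\<lambda>\<sigma>. D' t \<sigma> - pev L t \<sigma>) has_integral ((D t \<sigma>2 - D t \<sigma>1) - pl IL t)) {\<sigma>1..\<sigma>2}"
          by (rule has_integral_diff[OF ftc hpev])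
        have "norm ((D t \<sigma>2 - D t \<sigma>1) - pl IL t) \<le> (\<epsilon> / (\<sigma>2 - \<sigma>1 + 1) * t) * Henstock_Kurzweil_Integration.content (cbox \<sigma>1 \<sigma>2)"
        proof (rule has_integral_bound)
          show "0 \<le> \<epsilon> / (\<sigma>2 - \<sigma>1 + 1) * t" using \<epsilon> le elim(3) by simp
          show "((\<lambda>\<sigma>. D' t \<sigma> - pev L t \<sigma>) has_integral ((D t \<sigma>2 - D t \<sigma>1) - pl IL t)) (cbox \<sigma>1 \<sigma>2)"
            using hi by simp
          fix x assume "x \<in> cbox \<sigma>1 \<sigma>2"
          hence "x \<in> {\<sigma>1..\<sigma>2}" by simp
          hence "x \<in> ball \<sigma>0 \<delta>" using sub by blast
          thus "norm (D' t x - pev L t x) \<le> \<epsilon> / (\<sigma>2 - \<sigma>1 + 1) * t" using elim(1) by simp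
        qed
        also have "\<dots> = \<epsilon> * t * ((\<sigma>2 - \<sigma>1) / (\<sigma>2 - \<sigma>1 + 1))" using le by (simp add: content_real)
        also have "\<dots> \<le> \<epsilon> * t * 1"
          using \<epsilon> elim(3) le by (intro mult_left_mono) auto
        finally show ?case by simp
      qed
    qed
    have lo2: "lo (\<lambda>t. D t \<sigma>2 - D t \<sigma>1)"
      using lo_diff[OF z[rule_format, OF s2] z[rule_format, OF s1]] by simp
    have "lo (\<lambda>t. pl IL t)" using lo_diff[OF lo2 lo1] by simp
    from grouping[OF this e] have "gsum IL e = 0" .
    moreover have "(gsumF L e has_integral gsum IL e) {\<sigma>1..\<sigma>2}" unfolding IL_def by (rule has_integral_gsumF[OF contI])
    ultimately show ?thesis by (simp add: integral_unique)
  qed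
  show ?thesis
  proof (intro ballI allI impI)
    fix \<sigma> e assume s: "\<sigma> \<in> ball \<sigma>0 \<delta>" and e: "(e::real) \<le> 1"
    define d where "d = (\<delta> - dist \<sigma>0 \<sigma>) / 2"
    have dpos: "d > 0" using s by (simp add: d_def)
    define a b where "a = \<sigma> - d" and "b = \<sigma> + d"
    have ab: "{a..b} \<subseteq> ball \<sigma>0 \<delta>"
    proof
      fix x assume x: "x \<in> {a..b}"
      have "\<bar>\<sigma> - x\<bar> \<le> d" using x unfolding a_def b_def by (simp add: abs_le_iff)
      moreover have "\<bar>\<sigma>0 - x\<bar> \<le> \<bar>\<sigma>0 - \<sigma>\<bar> + \<bar>\<sigma> - x\<bar>" using abs_triangle_ineq[of "\<sigma>0 - \<sigma>" "\<sigma> - x"] by simp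
      moreover have "\<bar>\<sigma>0 - \<sigma>\<bar> < \<delta>" using s by (simp add: dist_real_def)
      ultimately have "\<bar>\<sigma>0 - x\<bar> < \<delta>" unfolding d_def dist_real_def by (rule aux_half)
      thus "x \<in> ball \<sigma>0 \<delta>" by (simp add: dist_real_def)
    qed
    have "a \<in> {a..b}" "b \<in> {a..b}" using dpos by (auto simp: a_def b_def)
    hence aball: "a \<in> ball \<sigma>0 \<delta>" and bball: "b \<in> ball \<sigma>0 \<delta>" using ab by blast+
    have cH: "continuous_on {a..b} (gsumF L e)" using cont_gsumF[OF contL] ab continuous_on_subset by blast
    have D1: "((\<lambda>x. integral {a..x} (gsumF L e)) has_real_derivative gsumF L e \<sigma>) (at \<sigma> within {a..b})"
      by (rule integral_has_real_derivative[OF cH]) (use dpos in \<open>auto simp: a_def b_def\<close>)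
    have int: "\<sigma> \<in> interior {a..b}" using dpos by (simp add: a_def b_def)
    have D2: "((\<lambda>x. integral {a..x} (gsumF L e)) has_real_derivative gsumF L e \<sigma>) (at \<sigma>)"
      using D1 by (simp add: at_within_interior[OF int])
    have D3: "((\<lambda>x. 0) has_real_derivative gsumF L e \<sigma>) (at \<sigma>)"
    proof (rule has_field_derivative_transform_within_open[OF D2, of "{a<..<b}"])
      show "open {a<..<b}" by simp
      show "\<sigma> \<in> {a<..<b}" using dpos by (simp add: a_def b_def)
      fix x assume "x \<in> {a<..<b}"
      hence "x \<in> {a..b}" "a \<le> x" by auto
      hence "x \<in> ball \<sigma>0 \<delta>" "a \<le> x" using ab by blast+
      thus "integral {a..x} (gsumF L e) = 0" using intzero[OF aball _ _ e] by blast
    qed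
    show "gsumF L e \<sigma> = 0" using DERIV_unique[OF D3 DERIV_const] .
  qed
qed

lemma UO_from_points:
  assumes exp: "EXP D (ball s0 \<delta>) L" and K: "compact K" "K \<subseteq> ball s0 \<delta>"
    and T: "T \<subseteq> ball s0 \<delta>" "\<forall>\<tau>\<in>T. lo (\<lambda>t. D t \<tau>)"
    and approx: "\<forall>\<sigma>\<in>K. \<forall>\<epsilon>>0. \<exists>\<tau>\<in>T. \<bar>\<tau> - \<sigma>\<bar> < \<epsilon>"
  shows "UO D K"
proof (rule UO_grouped[OF exp K])
  show "\<forall>\<sigma>\<in>K. \<forall>e\<le>1. gsumF L e \<sigma> = 0"
  proof (intro ballI allI impI)
    fix \<sigma> e assume s: "\<sigma> \<in> K" and e: "(e::real) \<le> 1"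
    have zT: "gsumF L e \<tau> = 0" if "\<tau> \<in> T" for \<tau>
      using EXP_point_zero[OF exp _ _ e] T that by blast
    have cont: "continuous_on (ball s0 \<delta>) (gsumF L e)" using exp cont_gsumF by (simp add: EXP_def)
    have sb: "\<sigma> \<in> ball s0 \<delta>" using s K by blast
    show "gsumF L e \<sigma> = 0"
    proof (rule ccontr)
      assume ne: "gsumF L e \<sigma> \<noteq> 0"
      hence pos: "\<bar>gsumF L e \<sigma>\<bar> > 0" by simp
      from cont sb have "continuous (at \<sigma>) (gsumF L e)"
        by (simp add: continuous_on_eq_continuous_at)
      hence "(gsumF L e \<longlongrightarrow> gsumF L e \<sigma>) (at \<sigma>)" by (simp add: continuous_at)
      from tendstoD[OF this pos] obtain d where d: "d > 0"
        "\<forall>x. x \<noteq> \<sigma> \<and> dist x \<sigma> < d \<longrightarrow> dist (gsumF L e x) (gsumF L e \<sigma>) < \<bar>gsumF L e \<sigma>\<bar>"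
        unfolding eventually_at by blast
      obtain \<tau> where \<tau>: "\<tau> \<in> T" "\<bar>\<tau> - \<sigma>\<bar> < d" using approx s d(1) by blast
      show False
      proof (cases "\<tau> = \<sigma>")
        case True thus False using zT[OF \<tau>(1)] ne by simp
      next
        case False
        hence "dist (gsumF L e \<tau>) (gsumF L e \<sigma>) < \<bar>gsumF L e \<sigma>\<bar>" using d(2) \<tau>(2) by (simp add: dist_real_def)
        thus False using zT[OF \<tau>(1)] by (simp add: dist_real_def)
      qed
    qed
  qed
qed

lemma lo_sum: "finite I \<Longrightarrow> (\<forall>m\<in>I. lo (f m)) \<Longrightarrow> lo (\<lambda>t. \<Sum>m\<in>I. f m t)"
proof (induction I rule: finite_induct)
  case empty thus ?case by simp
next
  case (insert m I)
  thus ?case using lo_add[of "f m" "\<lambda>t. \<Sum>m\<in>I. f m t"] by simp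
qed

lemma lo_powr_bound: "c > 1 \<Longrightarrow> eventually (\<lambda>t. \<bar>f t\<bar> \<le> C * t powr c) (at_right 0) \<Longrightarrow> lo f"
proof -
  assume c: "c > 1" and ev: "eventually (\<lambda>t. \<bar>f t\<bar> \<le> C * t powr c) (at_right 0)"
  have "eventually (\<lambda>t. \<forall>\<sigma>\<in>{0::real}. \<bar>f t\<bar> \<le> C * t powr c) (at_right 0)" using ev by simp
  from UO_powr[OF c this] have "UO (\<lambda>t \<sigma>. f t) {0}" .
  from UO_lo[OF this] show "lo f" by simp
qed


lemma deriv_rep_all:
  assumes U: "openN (Suc N) U" and hs: "smooth (Suc N) U g" and c: "pair_pt N (fstd_vec N p) \<sigma>0 \<in> U"
  shows "\<exists>\<eta>>0. eventually (\<lambda>t. \<forall>m<n. \<forall>\<sigma>. \<bar>\<sigma> - \<sigma>0\<bar> < \<eta> \<longrightarrow>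
           (Phi N p ((partial N ^^ m) g) t has_real_derivative Phi N p ((partial N ^^ Suc m) g) t \<sigma>) (at \<sigma>)) (at_right 0)"
proof (induction n)
  case 0 show ?case by (intro exI[of _ 1]) auto
next
  case (Suc n)
  then obtain \<eta>1 where \<eta>1: "\<eta>1 > 0" "eventually (\<lambda>t. \<forall>m<n. \<forall>\<sigma>. \<bar>\<sigma> - \<sigma>0\<bar> < \<eta>1 \<longrightarrow>
           (Phi N p ((partial N ^^ m) g) t has_real_derivative Phi N p ((partial N ^^ Suc m) g) t \<sigma>) (at \<sigma>)) (at_right 0)"
    by blast
  have hs': "smooth (Suc N) U ((partial N ^^ n) g)" by (rule smooth_partial_pow[OF hs]) simp
  obtain \<eta>2 where \<eta>2: "\<eta>2 > 0" "eventually (\<lambda>t. \<forall>\<sigma>. \<bar>\<sigma> - \<sigma>0\<bar> < \<eta>2 \<longrightarrow>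
            (Phi N p ((partial N ^^ n) g) t has_real_derivative Phi N p (partial N ((partial N ^^ n) g)) t \<sigma>) (at \<sigma>)) (at_right 0)"
    using deriv_rep[OF U hs' c] by blast
  have "eventually (\<lambda>t. \<forall>m<Suc n. \<forall>\<sigma>. \<bar>\<sigma> - \<sigma>0\<bar> < min \<eta>1 \<eta>2 \<longrightarrow>
           (Phi N p ((partial N ^^ m) g) t has_real_derivative Phi N p ((partial N ^^ Suc m) g) t \<sigma>) (at \<sigma>)) (at_right 0)"
    using \<eta>1(2) \<eta>2(2)
  proof eventually_elim
    case (elim t)
    show ?case
    proof (intro allI impI)
      fix m \<sigma> assume m: "m < Suc n" and s: "\<bar>\<sigma> - \<sigma>0\<bar> < min \<eta>1 \<eta>2"
      show "(Phi N p ((partial N ^^ m) g) t has_real_derivative Phi N p ((partial N ^^ Suc m) g) t \<sigma>) (at \<sigma>)"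
      proof (cases "m < n")
        case True thus ?thesis using elim(1) s by simp
      next
        case False hence "m = n" using m by simp
        thus ?thesis using elim(2) s by simp
      qed
    qed
  qed
  thus ?case using \<eta>1(1) \<eta>2(1) by (intro exI[of _ "min \<eta>1 \<eta>2"]) simp
qed

lemma sum_split0: "n > 0 \<Longrightarrow> (\<Sum>m<n. (f::nat \<Rightarrow> real) m) = f 0 + (\<Sum>m<n. if m = 0 then 0 else f m)"
proof -
  assume n: "n > 0"
  have "(\<Sum>m<n. f m) = (\<Sum>m<n. (if m = 0 then f m else 0) + (if m = 0 then 0 else f m))"
    by (intro sum.cong) auto
  also have "\<dots> = (\<Sum>m<n. if m = 0 then f m else 0) + (\<Sum>m<n. if m = 0 then 0 else f m)"
    by (rule sum.distrib)
  also have "(\<Sum>m<n. if m = 0 then f m else 0) = (\<Sum>m<n. if m = 0 then f 0 else 0)"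
    by (intro sum.cong) auto
  also have "\<dots> = f 0" using n by (simp add: sum.delta)
  finally show ?thesis .
qed

lemma taylor_rep:
  assumes U: "openN (Suc N) U" and hs: "smooth (Suc N) U g" and c: "pair_pt N (fstd_vec N p) s0 \<in> U"
    and x: "x \<in> Rot" "x 0 = s0"
    and z: "\<forall>m. m \<ge> 1 \<longrightarrow> lo (\<lambda>t. Phi N p ((partial N ^^ m) g) t s0)"
  shows "lo (\<lambda>t. Phi N p g t (x t) - Phi N p g t s0)"
proof -
  obtain K a where Ka: "a > 0" "eventually (\<lambda>t. \<bar>x t - x 0\<bar> \<le> K * t powr a) (at_right 0)"
    using Rot_bound[OF x(1)] by blast
  define n where "n = nat \<lceil>1/a\<rceil> + 1"
  have n0: "n > 0" by (simp add: n_def)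
  have na: "a * real n > 1"
  proof -
    have "real (nat \<lceil>1/a\<rceil>) \<ge> 1/a" by linarith
    hence "real n > 1/a" by (simp add: n_def)
    hence "a * real n > a * (1/a)" using Ka(1) by (intro mult_strict_left_mono) auto
    thus ?thesis using Ka(1) by simp
  qed
  define gm where "gm m = (partial N ^^ m) g" for m
  define c0 where "c0 = pair_pt N (fstd_vec N p) s0"
  obtain \<eta> where \<eta>: "\<eta> > 0" "eventually (\<lambda>t. \<forall>m<n. \<forall>\<sigma>. \<bar>\<sigma> - s0\<bar> < \<eta> \<longrightarrow>
           (Phi N p (gm m) t has_real_derivative Phi N p (gm (Suc m)) t \<sigma>) (at \<sigma>)) (at_right 0)"
    using deriv_rep_all[OF U hs c, of n] unfolding gm_def by blast
  have hsn: "smooth (Suc N) U (gm n)" unfolding gm_def by (rule smooth_partial_pow[OF hs]) simp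
  obtain \<eta>' where \<eta>': "\<eta>' > 0" "eventually (\<lambda>t. \<forall>\<sigma>. \<bar>\<sigma> - s0\<bar> < \<eta>' \<longrightarrow> pair_pt N (\<lambda>i. rep_fermat (p i) t) \<sigma> \<in> U \<and>
     \<bar>Phi N p (gm n) t \<sigma> - gm n c0\<bar> < 1) (at_right 0)"
    using near_rep[OF U smooth_cont[OF hsn] c, of 1] unfolding c0_def by auto
  define \<eta>'' where "\<eta>'' = min 1 (min \<eta> \<eta>')"
  have \<eta>''pos: "\<eta>'' > 0" using \<eta> \<eta>' by (simp add: \<eta>''_def)
  have xt: "(x \<longlongrightarrow> s0) (at_right 0)" using Rot_tendsto[OF x(1)] x(2) by simp
  have evx: "eventually (\<lambda>t. \<bar>x t - s0\<bar> < \<eta>'') (at_right 0)"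
    using tendstoD[OF xt \<eta>''pos] by (simp add: dist_real_def)
  define S where "S t = (\<Sum>m<n. if m = 0 then 0 else Phi N p (gm m) t s0 / fact m * (x t - s0) ^ m)" for t
  have loS: "lo S" unfolding S_def
  proof (rule lo_sum, simp, intro ballI)
    fix m assume "m \<in> {..<n}"
    show "lo (\<lambda>t. if m = 0 then 0 else Phi N p (gm m) t s0 / fact m * (x t - s0) ^ m)"
    proof (cases "m = 0")
      case True thus ?thesis by simp
    next
      case False
      have lm: "lo (\<lambda>t. Phi N p (gm m) t s0)" using z False unfolding gm_def by simp
      have bd: "eventually (\<lambda>t. \<bar>(x t - s0) ^ m / fact m\<bar> \<le> 1) (at_right 0)"
        using evx
      proof eventually_elim
        case (elim t)
        have "\<bar>x t - s0\<bar> \<le> 1" using elim by (simp add: \<eta>''_def)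
        hence p1: "\<bar>x t - s0\<bar> ^ m \<le> 1" by (simp add: power_le_one)
        have "\<bar>(x t - s0) ^ m / fact m\<bar> = \<bar>x t - s0\<bar> ^ m / fact m" by (simp add: abs_divide power_abs)
        also have "\<dots> \<le> \<bar>x t - s0\<bar> ^ m / 1" by (rule divide_left_mono) auto
        also have "\<dots> = \<bar>x t - s0\<bar> ^ m" by simp
        finally show ?case using p1 by linarith
      qed
      from lo_mult_bounded[OF lm bd]
      show ?thesis using False by (simp add: algebra_simps)
    qed
  qed
  define C where "C = (\<bar>gm n c0\<bar> + 1) / fact n * K ^ n"
  define R where "R t = Phi N p g t (x t) - Phi N p g t s0 - S t" for t
  have Rb: "eventually (\<lambda>t. \<bar>R t\<bar> \<le> C * t powr (a * real n)) (at_right 0)"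
    using \<eta>(2) \<eta>'(2) evx Ka(2) ev_pos
  proof eventually_elim
    case (elim t)
    define diff where "diff m y = Phi N p (gm m) t y" for m y
    have D: "\<forall>m<n. \<forall>y. min s0 (x t) \<le> y \<and> y \<le> max s0 (x t) \<longrightarrow>
                 (diff m has_real_derivative diff (Suc m) y) (at y)"
    proof (intro allI impI)
      fix m y assume m: "m < n" and y: "min s0 (x t) \<le> y \<and> y \<le> max s0 (x t)"
      have "\<bar>y - s0\<bar> \<le> \<bar>x t - s0\<bar>" using y by (auto simp: min_def max_def split: if_splits)
      hence "\<bar>y - s0\<bar> < \<eta>" using elim(3) by (simp add: \<eta>''_def)
      thus "(diff m has_real_derivative diff (Suc m) y) (at y)"
        using elim(1) m unfolding diff_def by blast
    qed
    obtain \<xi> where \<xi>: "\<bar>\<xi> - s0\<bar> \<le> \<bar>x t - s0\<bar>"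
      "diff 0 (x t) = (\<Sum>m<n. diff m s0 / fact m * (x t - s0)^m) + diff n \<xi> / fact n * (x t - s0)^n"
      using taylor1[OF n0 D] by blast
    have gm0: "gm 0 = g" by (simp add: gm_def)
    have split: "(\<Sum>m<n. diff m s0 / fact m * (x t - s0)^m) = Phi N p g t s0 + S t"
      unfolding diff_def S_def using sum_split0[OF n0, of "\<lambda>m. Phi N p (gm m) t s0 / fact m * (x t - s0)^m"]
      by (simp add: gm0)
    have "R t = diff n \<xi> / fact n * (x t - s0)^n"
      using \<xi>(2) split unfolding R_def by (simp add: diff_def gm_def)
    also have "\<bar>\<dots>\<bar> = \<bar>diff n \<xi>\<bar> / fact n * \<bar>x t - s0\<bar> ^ n" by (simp add: abs_mult power_abs)
    also have "\<dots> \<le> (\<bar>gm n c0\<bar> + 1) / fact n * (K ^ n * t powr (a * real n))"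
    proof (intro mult_mono divide_right_mono)
      have "\<bar>\<xi> - s0\<bar> < \<eta>'" using \<xi>(1) elim(3) by (simp add: \<eta>''_def)
      hence "\<bar>diff n \<xi> - gm n c0\<bar> < 1" using elim(2) by (simp add: diff_def)
      thus "\<bar>diff n \<xi>\<bar> \<le> \<bar>gm n c0\<bar> + 1" by linarith
      show "\<bar>x t - s0\<bar> ^ n \<le> K ^ n * t powr (a * real n)"
        by (rule powr_pow_le) (use elim(4) x(2) elim(5) in auto)
    qed auto
    also have "\<dots> = C * t powr (a * real n)" by (simp add: C_def)
    finally show ?case .
  qed
  have loR: "lo R" by (rule lo_powr_bound[OF na Rb])
  have "lo (\<lambda>t. S t + R t)" by (rule lo_add[OF loS loR])
  thus ?thesis by (simp add: R_def)
qed


lemma approx_int: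
  assumes "A < B" "A \<le> ereal s0" "ereal s0 \<le> B" "\<epsilon> > 0"
  shows "\<exists>\<tau>. A < ereal \<tau> \<and> ereal \<tau> < B \<and> \<bar>\<tau> - s0\<bar> < \<epsilon>"
proof (cases "ereal s0 < B")
  case True
  obtain z where z: "ereal s0 < ereal z" "ereal z < B" using ereal_dense2[OF True] by blast
  define \<tau> where "\<tau> = min z (s0 + \<epsilon>/2)"
  have "s0 < \<tau>" using z(1) assms(4) by (simp add: \<tau>_def)
  hence "ereal s0 < ereal \<tau>" by simp
  hence "A < ereal \<tau>" using assms(2) by (rule order_le_less_trans[rotated])
  moreover have "ereal \<tau> < B"
  proof -
    have "\<tau> \<le> z" by (simp add: \<tau>_def)
    hence "ereal \<tau> \<le> ereal z" by simp
    thus ?thesis using z(2) by (rule order_le_less_trans)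
  qed
  moreover have "\<bar>\<tau> - s0\<bar> < \<epsilon>" using \<open>s0 < \<tau>\<close> assms(4) by (simp add: \<tau>_def)
  ultimately show ?thesis by blast
next
  case False
  hence eq: "ereal s0 = B" using assms(3) by simp
  hence "A < ereal s0" using assms(1) by simp
  then obtain z where z: "A < ereal z" "ereal z < ereal s0" using ereal_dense2 by blast
  define \<tau> where "\<tau> = max z (s0 - \<epsilon>/2)"
  have "\<tau> < s0" using z(2) assms(4) by (simp add: \<tau>_def)
  hence "ereal \<tau> < ereal s0" by simp
  hence "ereal \<tau> < B" using eq by simp
  moreover have "A < ereal \<tau>"
  proof -
    have "z \<le> \<tau>" by (simp add: \<tau>_def)
    hence "ereal z \<le> ereal \<tau>" by simp
    with z(1) show ?thesis by (rule order_less_le_trans)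
  qed
  moreover have "\<bar>\<tau> - s0\<bar> < \<epsilon>" using \<open>\<tau> < s0\<close> assms(4) by (simp add: \<tau>_def)
  ultimately show ?thesis by blast
qed

lemma LR:
  assumes "local_repr S f x V N P p g"
  shows "openN (Suc N) (prod_dom N P V)" "smooth (Suc N) (prod_dom N P V) g"
    "\<And>\<sigma>. \<sigma> \<in> V \<Longrightarrow> pair_pt N (fstd_vec N p) \<sigma> \<in> prod_dom N P V" "open V" "fstd x \<in> V"
    "\<And>y. y \<in> S \<Longrightarrow> fstd y \<in> V \<Longrightarrow> f y = abs_fermat (\<lambda>t. Phi N p g t (rep_fermat y t))"
  using assms unfolding local_repr_def smoothN_def smooth_def prod_dom_def fext_fun_def Phi_def by auto

lemma cst_Rot_rep:
  assumes U: "openN (Suc N) U" and hs: "smooth (Suc N) U h" and c: "pair_pt N (fstd_vec N p) \<sigma> \<in> U"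
  shows "(\<lambda>t. Phi N p h t (rep_fermat (cst \<sigma>) t)) \<in> Rot \<and>
         lo (\<lambda>t. Phi N p h t (rep_fermat (cst \<sigma>) t) - Phi N p h t \<sigma>)"
proof (rule Rot_rep[OF U hs c])
  show "rep_fermat (cst \<sigma>) \<in> Rot" by (rule rep_Rot)
  show "rep_fermat (cst \<sigma>) 0 = \<sigma>" using fstd_cst[of \<sigma>] by (simp add: fstd_def)
  show "lo (\<lambda>t. rep_fermat (cst \<sigma>) t - \<sigma>)" by (rule rep_cst_lo)
qed

locale L7 =
  fixes lc rc :: bool and a b :: fext and f :: "fermat \<Rightarrow> fermat"
  assumes AB: "fext_std a < fext_std b"
    and sm: "fsmooth (finterval lc a b rc) f"
    and hd: "\<forall>x\<in>finterval_int a b. fderiv (finterval lc a b rc) f x = fzero"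
begin

abbreviation "J \<equiv> finterval lc a b rc"
definition IntS :: "real set" where "IntS = {\<sigma>. fext_std a < ereal \<sigma> \<and> ereal \<sigma> < fext_std b}"

lemma open_Int: "open IntS"
proof -
  have "IntS = ereal -` {fext_std a <..< fext_std b}" by (auto simp: IntS_def)
  thus ?thesis by (simp add: open_ereal_vimage)
qed

lemma Int_J: "\<sigma> \<in> IntS \<Longrightarrow> cst \<sigma> \<in> J"
  by (rule cst_in_J) (auto simp: IntS_def)

lemma Int_int: "\<sigma> \<in> IntS \<Longrightarrow> cst \<sigma> \<in> finterval_int a b"
  by (auto simp: IntS_def finterval_int_def)

lemma rep_ex: "x \<in> J \<Longrightarrow> \<exists>V N P p g. local_repr J f x V N P p g"
  using sm by (auto simp: fsmooth_def)

lemma M1: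
  assumes R: "local_repr J f x V N P p g" and sV: "\<sigma> \<in> V" and sI: "\<sigma> \<in> IntS"
  shows "lo (\<lambda>t. Phi N p (partial N g) t \<sigma>)"
proof -
  note R1 = LR[OF R]
  define cs where "cs = cst \<sigma>"
  have csJ: "cs \<in> J" using Int_J[OF sI] by (simp add: cs_def)
  have ex: "\<exists>d. \<exists>V N P p g. local_repr J f cs V N P p g \<and> d = fext_fun N (partial N g) p cs"
    using rep_ex[OF csJ] by blast
  obtain V' N' P' p' g' where R': "local_repr J f cs V' N' P' p' g'"
    and fd: "fderiv J f cs = fext_fun N' (partial N' g') p' cs"
    using someI_ex[OF ex] unfolding fderiv_def by blast
  note R2 = LR[OF R']
  have sV': "\<sigma> \<in> V'" using R2(5) by (simp add: cs_def)
  have fz: "fext_fun N' (partial N' g') p' cs = fzero" using hd fd Int_int[OF sI] by (simp add: cs_def)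
  have hs2: "smooth (Suc N') (prod_dom N' P' V') (partial N' g')" by (rule smooth_partial[OF R2(2)]) simp
  have hs1: "smooth (Suc N) (prod_dom N P V) (partial N g)" by (rule smooth_partial[OF R1(2)]) simp
  from cst_Rot_rep[OF R2(1) hs2 R2(3)[OF sV']]
  have r2: "(\<lambda>t. Phi N' p' (partial N' g') t (rep_fermat cs t)) \<in> Rot"
    "lo (\<lambda>t. Phi N' p' (partial N' g') t (rep_fermat cs t) - Phi N' p' (partial N' g') t \<sigma>)"
    by (simp_all add: cs_def)
  have "abs_fermat (\<lambda>t. Phi N' p' (partial N' g') t (rep_fermat cs t)) = abs_fermat (\<lambda>t. 0)"
    using fz by (simp add: fext_fun_def Phi_def fzero_def)
  from abs_eqD[OF r2(1) const_Rot this]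
  have "lo (\<lambda>t. Phi N' p' (partial N' g') t (rep_fermat cs t))" by simp
  from lo_diff[OF this r2(2)] have lo2: "lo (\<lambda>t. Phi N' p' (partial N' g') t \<sigma>)" by simp
  have "open (V \<inter> V' \<inter> IntS)" using R1(4) R2(4) open_Int by auto
  then obtain \<delta>0 where \<delta>0: "\<delta>0 > 0" "ball \<sigma> \<delta>0 \<subseteq> V \<inter> V' \<inter> IntS"
    using sV sV' sI open_contains_ball by blast
  obtain \<delta>1 L1 where L1: "\<delta>1 > 0" "EXP (Phi N p (partial N g)) (ball \<sigma> \<delta>1) L1"
    using Exp_rep[OF R1(1) hs1 R1(3)[OF sV]] by blast
  obtain \<delta>2 L2 where L2: "\<delta>2 > 0" "EXP (Phi N' p' (partial N' g')) (ball \<sigma> \<delta>2) L2"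
    using Exp_rep[OF R2(1) hs2 R2(3)[OF sV']] by blast
  obtain \<eta>1 where \<eta>1: "\<eta>1 > 0" "eventually (\<lambda>t. \<forall>\<tau>. \<bar>\<tau> - \<sigma>\<bar> < \<eta>1 \<longrightarrow>
            (Phi N p g t has_real_derivative Phi N p (partial N g) t \<tau>) (at \<tau>)) (at_right 0)"
    using deriv_rep[OF R1(1) R1(2) R1(3)[OF sV]] by blast
  obtain \<eta>2 where \<eta>2: "\<eta>2 > 0" "eventually (\<lambda>t. \<forall>\<tau>. \<bar>\<tau> - \<sigma>\<bar> < \<eta>2 \<longrightarrow>
            (Phi N' p' g' t has_real_derivative Phi N' p' (partial N' g') t \<tau>) (at \<tau>)) (at_right 0)"
    using deriv_rep[OF R2(1) R2(2) R2(3)[OF sV']] by blast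
  define \<delta> where "\<delta> = min (min \<delta>0 \<delta>1) (min \<delta>2 (min \<eta>1 \<eta>2))"
  have \<delta>pos: "\<delta> > 0" using \<delta>0 L1 L2 \<eta>1 \<eta>2 by (simp add: \<delta>_def)
  have bs: "ball \<sigma> \<delta> \<subseteq> ball \<sigma> \<delta>1" "ball \<sigma> \<delta> \<subseteq> ball \<sigma> \<delta>2" "ball \<sigma> \<delta> \<subseteq> V \<inter> V' \<inter> IntS"
    using \<delta>0(2) by (auto simp: \<delta>_def)
  have bd: "\<bar>\<tau> - \<sigma>\<bar> < \<eta>1" "\<bar>\<tau> - \<sigma>\<bar> < \<eta>2" if "\<tau> \<in> ball \<sigma> \<delta>" for \<tau>
    using that by (auto simp: \<delta>_def dist_real_def abs_minus_commute)
  have exp: "EXP (\<lambda>t \<tau>. Phi N p (partial N g) t \<tau> - Phi N' p' (partial N' g') t \<tau>) (ball \<sigma> \<delta>) (L1 @ negL L2)"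
    by (rule EXP_diff[OF EXP_subset[OF L1(2) bs(1)] EXP_subset[OF L2(2) bs(2)]])
  have der: "eventually (\<lambda>t. \<forall>\<tau>\<in>ball \<sigma> \<delta>. ((\<lambda>\<tau>. Phi N p g t \<tau> - Phi N' p' g' t \<tau>) has_real_derivative
               (Phi N p (partial N g) t \<tau> - Phi N' p' (partial N' g') t \<tau>)) (at \<tau>)) (at_right 0)"
    using \<eta>1(2) \<eta>2(2)
  proof eventually_elim
    case (elim t)
    show ?case
    proof
      fix \<tau> assume "\<tau> \<in> ball \<sigma> \<delta>"
      from bd[OF this] elim show "((\<lambda>\<tau>. Phi N p g t \<tau> - Phi N' p' g' t \<tau>) has_real_derivative
               (Phi N p (partial N g) t \<tau> - Phi N' p' (partial N' g') t \<tau>)) (at \<tau>)"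
        by (intro DERIV_diff) auto
    qed
  qed
  have z: "\<forall>\<tau>\<in>ball \<sigma> \<delta>. lo (\<lambda>t. (Phi N p g t \<tau> - Phi N' p' g' t \<tau>) - 0)"
  proof
    fix \<tau> assume "\<tau> \<in> ball \<sigma> \<delta>"
    hence \<tau>: "\<tau> \<in> V" "\<tau> \<in> V'" "\<tau> \<in> IntS" using bs(3) by auto
    have tJ: "cst \<tau> \<in> J" by (rule Int_J[OF \<tau>(3)])
    from cst_Rot_rep[OF R1(1) R1(2) R1(3)[OF \<tau>(1)]]
    have a1: "(\<lambda>t. Phi N p g t (rep_fermat (cst \<tau>) t)) \<in> Rot"
      "lo (\<lambda>t. Phi N p g t (rep_fermat (cst \<tau>) t) - Phi N p g t \<tau>)" by auto
    from cst_Rot_rep[OF R2(1) R2(2) R2(3)[OF \<tau>(2)]]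
    have a2: "(\<lambda>t. Phi N' p' g' t (rep_fermat (cst \<tau>) t)) \<in> Rot"
      "lo (\<lambda>t. Phi N' p' g' t (rep_fermat (cst \<tau>) t) - Phi N' p' g' t \<tau>)" by auto
    have "f (cst \<tau>) = abs_fermat (\<lambda>t. Phi N p g t (rep_fermat (cst \<tau>) t))" using R1(6)[OF tJ] \<tau> by simp
    moreover have "f (cst \<tau>) = abs_fermat (\<lambda>t. Phi N' p' g' t (rep_fermat (cst \<tau>) t))" using R2(6)[OF tJ] \<tau> by simp
    ultimately have "lo (\<lambda>t. Phi N p g t (rep_fermat (cst \<tau>) t) - Phi N' p' g' t (rep_fermat (cst \<tau>) t))"
      using abs_eqD[OF a1(1) a2(1)] by simp
    from lo_add[OF lo_diff[OF this a1(2)] a2(2)]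
    show "lo (\<lambda>t. (Phi N p g t \<tau> - Phi N' p' g' t \<tau>) - 0)" by (simp add: algebra_simps)
  qed
  from Zlem[OF exp der z]
  have gz: "\<forall>\<tau>\<in>ball \<sigma> \<delta>. \<forall>e\<le>1. gsumF (L1 @ negL L2) e \<tau> = 0" .
  have "UO (\<lambda>t \<tau>. Phi N p (partial N g) t \<tau> - Phi N' p' (partial N' g') t \<tau>) {\<sigma>}"
    by (rule UO_grouped[OF exp]) (use gz \<delta>pos in auto)
  from UO_lo[OF this] have "lo (\<lambda>t. Phi N p (partial N g) t \<sigma> - Phi N' p' (partial N' g') t \<sigma>)" by simp
  from lo_add[OF this lo2] show ?thesis by simp
qed

end


context L7 begin

lemma M1b:
  assumes R: "local_repr J f x V N P p g"
  shows "\<forall>\<sigma>. \<sigma> \<in> V \<and> \<sigma> \<in> IntS \<longrightarrow> lo (\<lambda>t. Phi N p ((partial N ^^ Suc k) g) t \<sigma>)"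
proof (induction k)
  case 0 thus ?case using M1[OF R] by simp
next
  case (Suc k)
  note R1 = LR[OF R]
  show ?case
  proof (intro allI impI)
    fix \<sigma> assume s: "\<sigma> \<in> V \<and> \<sigma> \<in> IntS"
    have "open (V \<inter> IntS)" using R1(4) open_Int by auto
    then obtain \<delta>0 where \<delta>0: "\<delta>0 > 0" "ball \<sigma> \<delta>0 \<subseteq> V \<inter> IntS"
      using s open_contains_ball by blast
    define hk where "hk = (partial N ^^ Suc k) g"
    have hks: "smooth (Suc N) (prod_dom N P V) hk" unfolding hk_def by (rule smooth_partial_pow[OF R1(2)]) simp
    have hks': "smooth (Suc N) (prod_dom N P V) (partial N hk)" by (rule smooth_partial[OF hks]) simp
    obtain \<delta>1 L where L: "\<delta>1 > 0" "EXP (Phi N p (partial N hk)) (ball \<sigma> \<delta>1) L"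
      using Exp_rep[OF R1(1) hks' R1(3)] s by blast
    obtain \<eta> where \<eta>: "\<eta> > 0" "eventually (\<lambda>t. \<forall>\<tau>. \<bar>\<tau> - \<sigma>\<bar> < \<eta> \<longrightarrow>
            (Phi N p hk t has_real_derivative Phi N p (partial N hk) t \<tau>) (at \<tau>)) (at_right 0)"
      using deriv_rep[OF R1(1) hks R1(3)] s by blast
    define \<delta> where "\<delta> = min \<delta>0 (min \<delta>1 \<eta>)"
    have \<delta>pos: "\<delta> > 0" using \<delta>0 L \<eta> by (simp add: \<delta>_def)
    have bs: "ball \<sigma> \<delta> \<subseteq> ball \<sigma> \<delta>1" "ball \<sigma> \<delta> \<subseteq> V \<inter> IntS" using \<delta>0(2) by (auto simp: \<delta>_def)
    have exp: "EXP (Phi N p (partial N hk)) (ball \<sigma> \<delta>) L" by (rule EXP_subset[OF L(2) bs(1)])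
    have der: "eventually (\<lambda>t. \<forall>\<tau>\<in>ball \<sigma> \<delta>. (Phi N p hk t has_real_derivative Phi N p (partial N hk) t \<tau>) (at \<tau>)) (at_right 0)"
      using \<eta>(2)
    proof eventually_elim
      case (elim t)
      show ?case
      proof
        fix \<tau> assume "\<tau> \<in> ball \<sigma> \<delta>"
        hence "\<bar>\<tau> - \<sigma>\<bar> < \<eta>" by (auto simp: \<delta>_def dist_real_def abs_minus_commute)
        thus "(Phi N p hk t has_real_derivative Phi N p (partial N hk) t \<tau>) (at \<tau>)" using elim by blast
      qed
    qed
    have z: "\<forall>\<tau>\<in>ball \<sigma> \<delta>. lo (\<lambda>t. Phi N p hk t \<tau> - 0)"
      using Suc bs(2) unfolding hk_def by auto
    from Zlem[OF exp der z]
    have gz: "\<forall>\<tau>\<in>ball \<sigma> \<delta>. \<forall>e\<le>1. gsumF L e \<tau> = 0" .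
    have "UO (Phi N p (partial N hk)) {\<sigma>}"
      by (rule UO_grouped[OF exp]) (use gz \<delta>pos in auto)
    from UO_lo[OF this] show "lo (\<lambda>t. Phi N p ((partial N ^^ Suc (Suc k)) g) t \<sigma>)"
      by (simp add: hk_def)
  qed
qed

lemma M2:
  assumes R: "local_repr J f x V N P p g" and sV: "s0 \<in> V"
    and sA: "fext_std a \<le> ereal s0" and sB: "ereal s0 \<le> fext_std b"
  shows "lo (\<lambda>t. Phi N p ((partial N ^^ Suc k) g) t s0)"
proof -
  note R1 = LR[OF R]
  define h where "h = (partial N ^^ Suc k) g"
  have hs: "smooth (Suc N) (prod_dom N P V) h" unfolding h_def by (rule smooth_partial_pow[OF R1(2)]) simp
  obtain \<delta>1 L where L: "\<delta>1 > 0" "EXP (Phi N p h) (ball s0 \<delta>1) L"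
    using Exp_rep[OF R1(1) hs R1(3)[OF sV]] by blast
  obtain \<delta>0 where \<delta>0: "\<delta>0 > 0" "ball s0 \<delta>0 \<subseteq> V" using R1(4) sV open_contains_ball by blast
  define \<delta> where "\<delta> = min \<delta>0 \<delta>1"
  have \<delta>pos: "\<delta> > 0" using \<delta>0 L by (simp add: \<delta>_def)
  have exp: "EXP (Phi N p h) (ball s0 \<delta>) L" by (rule EXP_subset[OF L(2)]) (auto simp: \<delta>_def)
  have "UO (Phi N p h) {s0}"
  proof (rule UO_from_points[OF exp, of "{s0}" "ball s0 \<delta> \<inter> IntS"])
    show "compact {s0}" by simp
    show "{s0} \<subseteq> ball s0 \<delta>" using \<delta>pos by simp
    show "ball s0 \<delta> \<inter> IntS \<subseteq> ball s0 \<delta>" by blast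
    show "\<forall>\<tau>\<in>ball s0 \<delta> \<inter> IntS. lo (\<lambda>t. Phi N p h t \<tau>)"
    proof
      fix \<tau> assume "\<tau> \<in> ball s0 \<delta> \<inter> IntS"
      hence "\<tau> \<in> V" "\<tau> \<in> IntS" using \<delta>0(2) by (auto simp: \<delta>_def)
      thus "lo (\<lambda>t. Phi N p h t \<tau>)" using M1b[OF R] unfolding h_def by blast
    qed
    show "\<forall>\<sigma>\<in>{s0}. \<forall>\<epsilon>>0. \<exists>\<tau>\<in>ball s0 \<delta> \<inter> IntS. \<bar>\<tau> - \<sigma>\<bar> < \<epsilon>"
    proof (intro ballI allI impI)
      fix \<sigma> \<epsilon> assume "\<sigma> \<in> {s0}" and e: "(\<epsilon>::real) > 0"
      hence \<sigma>: "\<sigma> = s0" by simp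
      obtain \<tau> where \<tau>: "fext_std a < ereal \<tau>" "ereal \<tau> < fext_std b" "\<bar>\<tau> - s0\<bar> < min \<epsilon> \<delta>"
        using approx_int[OF AB sA sB, of "min \<epsilon> \<delta>"] e \<delta>pos by auto
      have "\<tau> \<in> ball s0 \<delta> \<inter> IntS" using \<tau> by (auto simp: IntS_def dist_real_def abs_minus_commute)
      moreover have "\<bar>\<tau> - \<sigma>\<bar> < \<epsilon>" using \<tau>(3) \<sigma> by simp
      ultimately show "\<exists>\<tau>\<in>ball s0 \<delta> \<inter> IntS. \<bar>\<tau> - \<sigma>\<bar> < \<epsilon>" by blast
    qed
  qed
  from UO_lo[OF this] show ?thesis by (simp add: h_def)
qed

end


context L7 begin

lemma M3:
  assumes R: "local_repr J f x V N P p g" and xJ: "x \<in> J"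
  shows "\<exists>\<delta>>0. \<forall>\<sigma>1. \<sigma>1 \<in> IntS \<and> \<bar>\<sigma>1 - fstd x\<bar> < \<delta> \<longrightarrow>
           \<sigma>1 \<in> V \<and> lo (\<lambda>t. Phi N p g t (rep_fermat x t) - Phi N p g t \<sigma>1)"
proof -
  note R1 = LR[OF R]
  define s0 where "s0 = fstd x"
  have sV: "s0 \<in> V" using R1(5) by (simp add: s0_def)
  have sA: "fext_std a \<le> ereal s0" and sB: "ereal s0 \<le> fext_std b" using J_std[OF xJ] by (simp_all add: s0_def)
  have lo1: "lo (\<lambda>t. Phi N p g t (rep_fermat x t) - Phi N p g t s0)"
  proof (rule taylor_rep[OF R1(1) R1(2) R1(3)[OF sV] rep_Rot])
    show "rep_fermat x 0 = s0" by (simp add: s0_def fstd_def)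
    show "\<forall>m\<ge>1. lo (\<lambda>t. Phi N p ((partial N ^^ m) g) t s0)"
    proof (intro allI impI)
      fix m :: nat assume "m \<ge> 1"
      then obtain k where "m = Suc k" by (cases m) auto
      thus "lo (\<lambda>t. Phi N p ((partial N ^^ m) g) t s0)" using M2[OF R sV sA sB, of k] by simp
    qed
  qed
  define h1 where "h1 = partial N g"
  have h1s: "smooth (Suc N) (prod_dom N P V) h1" unfolding h1_def by (rule smooth_partial[OF R1(2)]) simp
  obtain \<delta>1 L where L: "\<delta>1 > 0" "EXP (Phi N p h1) (ball s0 \<delta>1) L"
    using Exp_rep[OF R1(1) h1s R1(3)[OF sV]] by blast
  obtain \<delta>0 where \<delta>0: "\<delta>0 > 0" "ball s0 \<delta>0 \<subseteq> V" using R1(4) sV open_contains_ball by blast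
  obtain \<eta> where \<eta>: "\<eta> > 0" "eventually (\<lambda>t. \<forall>\<tau>. \<bar>\<tau> - s0\<bar> < \<eta> \<longrightarrow>
            (Phi N p g t has_real_derivative Phi N p (partial N g) t \<tau>) (at \<tau>)) (at_right 0)"
    using deriv_rep[OF R1(1) R1(2) R1(3)[OF sV]] by blast
  define \<delta>E where "\<delta>E = min \<delta>0 \<delta>1"
  have \<delta>Epos: "\<delta>E > 0" using \<delta>0 L by (simp add: \<delta>E_def)
  have expE: "EXP (Phi N p h1) (ball s0 \<delta>E) L" by (rule EXP_subset[OF L(2)]) (auto simp: \<delta>E_def)
  have ballV: "ball s0 \<delta>E \<subseteq> V" using \<delta>0(2) by (auto simp: \<delta>E_def)
  define \<delta> where "\<delta> = min (\<delta>E / 2) \<eta>"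
  have \<delta>pos: "\<delta> > 0" using \<delta>Epos \<eta> by (simp add: \<delta>_def)
  have main: "\<sigma>1 \<in> V \<and> lo (\<lambda>t. Phi N p g t (rep_fermat x t) - Phi N p g t \<sigma>1)"
    if s1: "\<sigma>1 \<in> IntS" "\<bar>\<sigma>1 - s0\<bar> < \<delta>" for \<sigma>1
  proof -
    have s1b: "\<bar>\<sigma>1 - s0\<bar> < \<delta>E / 2" "\<bar>\<sigma>1 - s0\<bar> < \<eta>" using s1(2) by (auto simp: \<delta>_def)
    have s1V: "\<sigma>1 \<in> V" using ballV s1b \<delta>Epos by (auto simp: dist_real_def abs_minus_commute)
    define K where "K = {min s0 \<sigma>1 .. max s0 \<sigma>1}"
    have Kdist: "\<bar>y - s0\<bar> \<le> \<bar>\<sigma>1 - s0\<bar>" if "y \<in> K" for y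
      using that by (auto simp: K_def min_def max_def split: if_splits)
    have KB: "K \<subseteq> ball s0 \<delta>E"
    proof
      fix y assume "y \<in> K"
      hence "\<bar>y - s0\<bar> < \<delta>E" using Kdist s1b \<delta>Epos by fastforce
      thus "y \<in> ball s0 \<delta>E" by (simp add: dist_real_def abs_minus_commute)
    qed
    have s1A: "fext_std a < ereal \<sigma>1" and s1Bd: "ereal \<sigma>1 < fext_std b" using s1(1) by (auto simp: IntS_def)
    have Kab: "fext_std a \<le> ereal y \<and> ereal y \<le> fext_std b" if "y \<in> K" for y
    proof -
      have y: "min s0 \<sigma>1 \<le> y" "y \<le> max s0 \<sigma>1" using that by (auto simp: K_def)
      show ?thesis
      proof (cases "s0 \<le> \<sigma>1")
        case True
        hence "s0 \<le> y" "y \<le> \<sigma>1" using y by (auto simp: min_def max_def)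
        hence e: "ereal s0 \<le> ereal y" "ereal y \<le> ereal \<sigma>1" by simp_all
        have "fext_std a \<le> ereal y" using order_trans[OF sA e(1)] .
        moreover have "ereal y \<le> fext_std b" using order_trans[OF e(2) less_imp_le[OF s1Bd]] .
        ultimately show ?thesis by simp
      next
        case False
        hence "\<sigma>1 \<le> y" "y \<le> s0" using y by (auto simp: min_def max_def)
        hence e: "ereal \<sigma>1 \<le> ereal y" "ereal y \<le> ereal s0" by simp_all
        have "fext_std a \<le> ereal y" using order_trans[OF less_imp_le[OF s1A] e(1)] .
        moreover have "ereal y \<le> fext_std b" using order_trans[OF e(2) sB] .
        ultimately show ?thesis by simp
      qed
    qed
    have UOK: "UO (Phi N p h1) K"
    proof (rule UO_from_points[OF expE, of K "ball s0 \<delta>E \<inter> IntS"])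
      show "compact K" by (simp add: K_def)
      show "K \<subseteq> ball s0 \<delta>E" by (rule KB)
      show "ball s0 \<delta>E \<inter> IntS \<subseteq> ball s0 \<delta>E" by blast
      show "\<forall>\<tau>\<in>ball s0 \<delta>E \<inter> IntS. lo (\<lambda>t. Phi N p h1 t \<tau>)"
      proof
        fix \<tau> assume "\<tau> \<in> ball s0 \<delta>E \<inter> IntS"
        hence "\<tau> \<in> V" "\<tau> \<in> IntS" using ballV by auto
        thus "lo (\<lambda>t. Phi N p h1 t \<tau>)" using M1b[OF R, of 0] unfolding h1_def by simp
      qed
      show "\<forall>y\<in>K. \<forall>\<epsilon>>0. \<exists>\<tau>\<in>ball s0 \<delta>E \<inter> IntS. \<bar>\<tau> - y\<bar> < \<epsilon>"
      proof (intro ballI allI impI)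
        fix y \<epsilon> assume y: "y \<in> K" and e: "(\<epsilon>::real) > 0"
        have "min \<epsilon> (\<delta>E/2) > 0" using e \<delta>Epos by simp
        then obtain \<tau> where \<tau>: "fext_std a < ereal \<tau>" "ereal \<tau> < fext_std b" "\<bar>\<tau> - y\<bar> < min \<epsilon> (\<delta>E/2)"
          using approx_int[OF AB, of y] Kab[OF y] by blast
        have "\<bar>\<tau> - s0\<bar> \<le> \<bar>\<tau> - y\<bar> + \<bar>y - s0\<bar>" by linarith
        also have "\<dots> < \<delta>E/2 + \<delta>E/2" using \<tau>(3) Kdist[OF y] s1b(1) by linarith
        finally have "\<bar>\<tau> - s0\<bar> < \<delta>E" by simp
        hence "\<tau> \<in> ball s0 \<delta>E \<inter> IntS" using \<tau> by (auto simp: IntS_def dist_real_def abs_minus_commute)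
        moreover have "\<bar>\<tau> - y\<bar> < \<epsilon>" using \<tau>(3) by simp
        ultimately show "\<exists>\<tau>\<in>ball s0 \<delta>E \<inter> IntS. \<bar>\<tau> - y\<bar> < \<epsilon>" by blast
      qed
    qed
    have lo2: "lo (\<lambda>t. Phi N p g t \<sigma>1 - Phi N p g t s0)" unfolding lo_def
    proof (intro allI impI)
      fix e :: real assume e: "e > 0"
      define e' where "e' = e / (\<bar>\<sigma>1 - s0\<bar> + 1)"
      have e': "e' > 0" using e by (simp add: e'_def add_pos_nonneg)
      from UOD[OF UOK e'] \<eta>(2) ev_pos
      show "eventually (\<lambda>t. \<bar>Phi N p g t \<sigma>1 - Phi N p g t s0\<bar> \<le> e * t) (at_right 0)"
      proof eventually_elim
        case (elim t)
        have "\<bar>Phi N p g t \<sigma>1 - Phi N p g t s0\<bar> \<le> (e' * t) * \<bar>\<sigma>1 - s0\<bar>"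
        proof (rule mvt_bound[where f="Phi N p g t" and f'="Phi N p (partial N g) t"], intro allI impI conjI)
          fix z assume z: "min \<sigma>1 s0 \<le> z \<and> z \<le> max \<sigma>1 s0"
          have zK: "z \<in> K" using z by (simp add: K_def min.commute max.commute)
          have "\<bar>z - s0\<bar> < \<eta>" using Kdist[OF zK] s1b(2) by linarith
          thus "(Phi N p g t has_real_derivative Phi N p (partial N g) t z) (at z)" using elim(2) by blast
          show "\<bar>Phi N p (partial N g) t z\<bar> \<le> e' * t" using elim(1) zK unfolding h1_def by blast
        qed
        also have "\<dots> = e * t * (\<bar>\<sigma>1 - s0\<bar> / (\<bar>\<sigma>1 - s0\<bar> + 1))" by (simp add: e'_def)
        also have "\<dots> \<le> e * t * 1" using e elim(3) by (intro mult_left_mono) auto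
        finally show ?case by simp
      qed
    qed
    have "lo (\<lambda>t. (Phi N p g t (rep_fermat x t) - Phi N p g t s0) - (Phi N p g t \<sigma>1 - Phi N p g t s0))"
      by (rule lo_diff[OF lo1 lo2])
    thus ?thesis using s1V by simp
  qed
  show ?thesis using main \<delta>pos unfolding s0_def by blast
qed

lemma connected_Int: "connected IntS"
proof -
  have "is_interval IntS" unfolding is_interval_1
  proof (intro ballI allI impI)
    fix u v w assume u: "u \<in> IntS" and v: "v \<in> IntS" and w: "u \<le> w \<and> w \<le> v"
    have 1: "fext_std a < ereal u" "ereal v < fext_std b" using u v by (auto simp: IntS_def)
    have 2: "ereal u \<le> ereal w" "ereal w \<le> ereal v" using w by auto
    have "fext_std a < ereal w" by (rule order_less_le_trans[OF 1(1) 2(1)])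
    moreover have "ereal w < fext_std b" by (rule order_le_less_trans[OF 2(2) 1(2)])
    ultimately show "w \<in> IntS" unfolding IntS_def by simp
  qed
  thus ?thesis by (rule is_interval_connected)
qed

lemma main: "\<exists>c. \<forall>x\<in>J. f x = c"
proof -
  obtain \<sigma>s where "fext_std a < ereal \<sigma>s" "ereal \<sigma>s < fext_std b" using ereal_dense2[OF AB] by blast
  hence \<sigma>s: "\<sigma>s \<in> IntS" by (simp add: IntS_def)
  define c where "c = f (cst \<sigma>s)"
  have loc: "\<forall>\<sigma>\<in>IntS. eventually (\<lambda>\<sigma>'. f (cst \<sigma>) = f (cst \<sigma>')) (at \<sigma> within IntS)"
  proof
    fix \<sigma> assume s: "\<sigma> \<in> IntS"
    have sJ: "cst \<sigma> \<in> J" by (rule Int_J[OF s])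
    obtain V N P p g where R: "local_repr J f (cst \<sigma>) V N P p g" using rep_ex[OF sJ] by blast
    note R1 = LR[OF R]
    have sV: "\<sigma> \<in> V" using R1(5) by simp
    obtain \<delta> where \<delta>: "\<delta> > 0" "\<forall>\<sigma>1. \<sigma>1 \<in> IntS \<and> \<bar>\<sigma>1 - \<sigma>\<bar> < \<delta> \<longrightarrow>
           \<sigma>1 \<in> V \<and> lo (\<lambda>t. Phi N p g t (rep_fermat (cst \<sigma>) t) - Phi N p g t \<sigma>1)"
      using M3[OF R sJ] by auto
    show "eventually (\<lambda>\<sigma>'. f (cst \<sigma>) = f (cst \<sigma>')) (at \<sigma> within IntS)"
      unfolding eventually_at
    proof (intro exI[of _ \<delta>] conjI ballI impI)
      show "\<delta> > 0" by fact
      fix \<sigma>' assume s': "\<sigma>' \<in> IntS" and d: "\<sigma>' \<noteq> \<sigma> \<and> dist \<sigma>' \<sigma> < \<delta>"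
      have h: "\<sigma>' \<in> V" "lo (\<lambda>t. Phi N p g t (rep_fermat (cst \<sigma>) t) - Phi N p g t \<sigma>')"
        using \<delta>(2) s' d by (auto simp: dist_real_def)
      from cst_Rot_rep[OF R1(1) R1(2) R1(3)[OF h(1)]]
      have F': "(\<lambda>t. Phi N p g t (rep_fermat (cst \<sigma>') t)) \<in> Rot"
        "lo (\<lambda>t. Phi N p g t (rep_fermat (cst \<sigma>') t) - Phi N p g t \<sigma>')" by auto
      from cst_Rot_rep[OF R1(1) R1(2) R1(3)[OF sV]]
      have F: "(\<lambda>t. Phi N p g t (rep_fermat (cst \<sigma>) t)) \<in> Rot" by auto
      have "lo (\<lambda>t. Phi N p g t (rep_fermat (cst \<sigma>) t) - Phi N p g t (rep_fermat (cst \<sigma>') t))"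
        using lo_diff[OF h(2) F'(2)] by simp
      from abs_eqI[OF F F'(1) this]
      have eq: "abs_fermat (\<lambda>t. Phi N p g t (rep_fermat (cst \<sigma>) t)) = abs_fermat (\<lambda>t. Phi N p g t (rep_fermat (cst \<sigma>') t))" .
      have "f (cst \<sigma>) = abs_fermat (\<lambda>t. Phi N p g t (rep_fermat (cst \<sigma>) t))" using R1(6)[OF sJ] sV by simp
      moreover have "f (cst \<sigma>') = abs_fermat (\<lambda>t. Phi N p g t (rep_fermat (cst \<sigma>') t))"
        using R1(6)[OF Int_J[OF s']] h(1) by simp
      ultimately show "f (cst \<sigma>) = f (cst \<sigma>')" using eq by simp
    qed
  qed
  have const: "f (cst \<sigma>) = c" if "\<sigma> \<in> IntS" for \<sigma>
    using connected_local_const[OF connected_Int \<sigma>s that loc] by (simp add: c_def)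
  show ?thesis
  proof (intro exI[of _ c] ballI)
    fix x assume xJ: "x \<in> J"
    obtain V N P p g where R: "local_repr J f x V N P p g" using rep_ex[OF xJ] by blast
    note R1 = LR[OF R]
    obtain \<delta> where \<delta>: "\<delta> > 0" "\<forall>\<sigma>1. \<sigma>1 \<in> IntS \<and> \<bar>\<sigma>1 - fstd x\<bar> < \<delta> \<longrightarrow>
           \<sigma>1 \<in> V \<and> lo (\<lambda>t. Phi N p g t (rep_fermat x t) - Phi N p g t \<sigma>1)"
      using M3[OF R xJ] by auto
    have xs: "fext_std a \<le> ereal (fstd x)" "ereal (fstd x) \<le> fext_std b" using J_std[OF xJ] by auto
    obtain \<sigma>1 where s1: "fext_std a < ereal \<sigma>1" "ereal \<sigma>1 < fext_std b" "\<bar>\<sigma>1 - fstd x\<bar> < \<delta>"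
      using approx_int[OF AB xs \<delta>(1)] by blast
    have s1I: "\<sigma>1 \<in> IntS" using s1 by (simp add: IntS_def)
    have h: "\<sigma>1 \<in> V" "lo (\<lambda>t. Phi N p g t (rep_fermat x t) - Phi N p g t \<sigma>1)" using \<delta>(2) s1I s1(3) by auto
    from cst_Rot_rep[OF R1(1) R1(2) R1(3)[OF h(1)]]
    have F1: "(\<lambda>t. Phi N p g t (rep_fermat (cst \<sigma>1) t)) \<in> Rot"
      "lo (\<lambda>t. Phi N p g t (rep_fermat (cst \<sigma>1) t) - Phi N p g t \<sigma>1)" by auto
    define X where "X t = Phi N p g t (rep_fermat x t)" for t
    define F where "F t = Phi N p g t (rep_fermat (cst \<sigma>1) t)" for t
    have loXF: "lo (\<lambda>t. X t - F t)" using lo_diff[OF h(2) F1(2)] by (simp add: X_def F_def)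
    have FR: "F \<in> Rot" using F1(1) by (simp add: F_def[abs_def])
    have X0: "(X \<longlongrightarrow> X 0) (at_right 0)"
    proof -
      have "(X \<longlongrightarrow> g (pair_pt N (fstd_vec N p) (fstd x))) (at_right 0)"
        unfolding X_def[abs_def] by (rule tendsto_rep[OF R1(1) smooth_cont[OF R1(2)] R1(3)[OF R1(5)] rep_tendsto])
      moreover have "X 0 = g (pair_pt N (fstd_vec N p) (fstd x))" by (simp add: X_def Phi_0 fstd_def)
      ultimately show ?thesis by simp
    qed
    have "((\<lambda>t. X t - F t) \<longlongrightarrow> X 0 - F 0) (at_right 0)"
      by (rule tendsto_diff[OF X0 Rot_tendsto[OF FR]])
    from lim_unique_right[OF this lo_tendsto[OF loXF]] have "X 0 = F 0" by simp
    from Rot_perturb[OF FR this loXF] have XR: "X \<in> Rot" .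
    have "f x = abs_fermat X" using R1(6)[OF xJ R1(5)] by (simp add: X_def[abs_def])
    also have "\<dots> = abs_fermat F" by (rule abs_eqI[OF XR FR loXF])
    also have "\<dots> = f (cst \<sigma>1)" using R1(6)[OF Int_J[OF s1I]] h(1) by (simp add: F_def[abs_def])
    also have "\<dots> = c" by (rule const[OF s1I])
    finally show "f x = c" .
  qed
qed

end

theorem theorem7:
  fixes lc rc :: bool and a b :: fext and f :: "fermat \<Rightarrow> fermat"
  assumes "fext_le a b"
    and "fext_std a < fext_std b"
    and "fsmooth (finterval lc a b rc) f"
    and "\<forall>x\<in>finterval_int a b. fderiv (finterval lc a b rc) f x = fzero"
  shows "\<exists>c. \<forall>x\<in>finterval lc a b rc. f x = c"
proof -
  interpret L7 lc rc a b f using assms(2-4) by unfold_locales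
  show ?thesis by (rule main)
qed


end
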